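(* Let ${}^*\mathbb{C}$, ${}^*\mathbb{R}$ be the ultrapowers and $\rho=\langle R_\varphi\rangle$ as in the context. Then: (i) for $(A_\varphi)\in\mathbb{C}^{\mathcal{D}_0}$, $(A_\varphi)\in\mathcal{M}(\mathbb{C}^{\mathcal{D}_0})$ if and only if $\langle A_\varphi\rangle\in\mathcal{M}_\rho({}^*\mathbb{C})$; (ii) the map $\widehat{A_\varphi}\mapsto\widehat{\langle A_\varphi\rangle}$ is a well-defined field isomorphism from $\widehat{\mathbb{C}^{\mathcal{D}_0}}$ onto ${}^\rho\mathbb{C}$, restricting to an isomorphism of $\widehat{\mathbb{R}^{\mathcal{D}_0}}$ onto ${}^\rho\mathbb{R}$, and it preserves the valuation, the ultra-norm and the ultra-metric; (iii) the order topology and the metric topology on $\widehat{\mathbb{C}^{\mathcal{D}_0}}$ coincide.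
   Context: Fix $\mathcal{D}_0=\mathcal{D}(\mathbb{R}^d)$. For $\varphi\in\mathcal{D}_0$ let $R_\varphi=\sup\{\|x\|:\varphi(x)\neq0\}$ if $\varphi\neq0$, $R_0=1$. For $n\in\mathbb{N}$, $\mathcal{D}_n$ is the set of $\varphi\in\mathcal{D}_0$ that are real-valued, even, with $R_\varphi\le1/n$, $\int\varphi=1$, $\int x^\alpha\varphi(x)dx=0$ for $1\le|\alpha|\le n$, $\int|\varphi|\le1+1/n$, and $\sup_x|\partial^\alpha\varphi(x)|\le R_\varphi^{-2(|\alpha|+d)}$ for $|\alpha|\le n$. $\mathcal{U}$ is a fixed free ultrafilter on $\mathcal{D}_0$ containing every $\mathcal{D}_n$ and $\mathfrak c^+$-good ($\mathfrak c=\mathrm{card}\,\mathbb{R}$); "$P(\varphi)$ a.e." means $\{\varphi:P(\varphi)\}\in\mathcal{U}$. Asymptotic numbers: $\mathcal{M}(\mathbb{C}^{\mathcal{D}_0})$ = nets with $|A_\varphi|\le R_\varphi^{-m}$ a.e. for some $m\in\mathbb{N}$; $\mathcal{N}(\mathbb{C}^{\mathcal{D}_0})$ = nets with $|A_\varphi|<R_\varphi^p$ a.e. for all $p\in\mathbb{N}$; $\widehat{\mathbb{C}^{\mathcal{D}_0}}=\mathcal{M}/\mathcal{N}$, $\widehat{\mathbb{R}^{\mathcal{D}_0}}$ the classes of real-valued nets, ordered by: nonzero $\widehat{A_\varphi}>0$ iff $A_\varphi>0$ a.e.; $|x+iy|=\sqrt{x^2+y^2}$; $z\approx0$ if $|z|<1/n$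 for all $n$; $\widehat\rho$ = class of $(R_\varphi)$; valuation $v(0)=\infty$, $v(z)=\sup\{q\in\mathbb{Q}: z/\widehat\rho^{\,q}\approx0\}$; ultra-norm $|z|_v=e^{-v(z)}$; ultra-metric $d(a,b)=|a-b|_v$. The order topology on $\widehat{\mathbb{C}^{\mathcal{D}_0}}$ is the product topology from the order topology of $\widehat{\mathbb{R}^{\mathcal{D}_0}}$ under $\widehat{\mathbb{C}^{\mathcal{D}_0}}=\widehat{\mathbb{R}^{\mathcal{D}_0}}+i\widehat{\mathbb{R}^{\mathcal{D}_0}}$; the metric topology is that of $d$. Ultrapower: ${}^*\mathbb{R}=\mathbb{R}^{\mathcal{D}_0}/\!\sim$, where $(A_\varphi)\sim(B_\varphi)$ iff $A_\varphi=B_\varphi$ a.e.; $\langle A_\varphi\rangle$ denotes the class; operations pointwise; $\langle A_\varphi\rangle>0$ iff $A_\varphi>0$ a.e.; similarly ${}^*\mathbb{C}=\mathbb{C}^{\mathcal{D}_0}/\!\sim$ with $|\langle A_\varphi\rangle|=\langle|A_\varphi|\rangle$; $\mathbb{R}\subset{}^*\mathbb{R}$ via constant nets. $\rho=\langle R_\varphi\rangle$ (a positive infinitesimal). Robinson field: $\mathcal{M}_\rho({}^*\mathbb{C})=\{\zeta\in{}^*\mathbb{C}: |\zeta|\le\rho^{-m}\text{ for some } m\in\mathbb{N}\}$, $\mathcal{N}_\rho({}^*\mathbb{C})=\{\zeta: |\zeta|<\rho^n\text{ for all }n\in\mathbb{N}\}$, ${}^\rho\mathbb{C}=\mathcal{M}_\rho/\mathcal{N}_\rho$,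 $\widehat\zeta$ the class; ${}^\rho\mathbb{R}$ the classes of elements of ${}^*\mathbb{R}$. Valuation on ${}^\rho\mathbb{C}$: $v(0)=\infty$, $v(\widehat\zeta)=\mathrm{st}(\ln|\zeta|/\ln\rho)$ for $\widehat\zeta\neq0$, where $\ln$ acts componentwise on nets and $\mathrm{st}$ is the standard part (the unique real number infinitely close to a finite element of ${}^*\mathbb{R}$); $|z|_v=e^{-v(z)}$, $d_v(a,b)=|a-b|_v$. *)

theory Defs
  imports "HOL-Analysis.Analysis" "HOL-Algebra.QuotRing"
begin

text \<open>R^d is modelled by a Euclidean space type 'a (d = DIM('a)).
  Multi-indices alpha are represented as lists of basis vectors;
  |alpha| is the length of the list.\<close>

definition pdir :: "'a::euclidean_space \<Rightarrow> ('a \<Rightarrow> complex) \<Rightarrow> 'a \<Rightarrow> complex" where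
  "pdir e g x = vector_derivative (\<lambda>t::real. g (x + t *\<^sub>R e)) (at 0)"

fun pderivs :: "'a::euclidean_space list \<Rightarrow> ('a \<Rightarrow> complex) \<Rightarrow> 'a \<Rightarrow> complex" where
  "pderivs [] f = f"
| "pderivs (e # es) f = pdir e (pderivs es f)"

definition smooth_fn :: "('a::euclidean_space \<Rightarrow> complex) \<Rightarrow> bool" where
  "smooth_fn f \<longleftrightarrow> (\<forall>es. set es \<subseteq> Basis \<longrightarrow>
      continuous_on UNIV (pderivs es f) \<and>
      (\<forall>e\<in>Basis. \<forall>x. ((\<lambda>t::real. pderivs es f (x + t *\<^sub>R e))
                        has_vector_derivative pderivs (e # es) f x) (at 0)))"

definition test_fns :: "('a::euclidean_space \<Rightarrow> complex) set" where
  "test_fns = {\<phi>. smooth_fn \<phi> \<and> compact (closure {x. \<phi> x \<noteq> 0})}"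

definition Rphi :: "('a::euclidean_space \<Rightarrow> complex) \<Rightarrow> real" where
  "Rphi \<phi> = (if \<phi> = (\<lambda>_. 0) then 1 else Sup {norm x | x. \<phi> x \<noteq> 0})"

definition Dn :: "nat \<Rightarrow> ('a::euclidean_space \<Rightarrow> complex) set" where
  "Dn n = {\<phi> \<in> test_fns.
      (\<forall>x. \<phi> x \<in> \<real>) \<and> (\<forall>x. \<phi> (- x) = \<phi> x) \<and>
      Rphi \<phi> \<le> 1 / real n \<and>
      integral UNIV \<phi> = 1 \<and>
      (\<forall>es. set es \<subseteq> Basis \<and> 1 \<le> length es \<and> length es \<le> n \<longrightarrow>
         integral UNIV (\<lambda>x. (\<Prod>e\<leftarrow>es. complex_of_real (x \<bullet> e)) * \<phi> x) = 0) \<and>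
      integral UNIV (\<lambda>x. cmod (\<phi> x)) \<le> 1 + 1 / real n \<and>
      (\<forall>es. set es \<subseteq> Basis \<and> length es \<le> n \<longrightarrow>
         (\<forall>x. cmod (pderivs es \<phi> x) \<le> Rphi \<phi> powr (- real (2 * (length es + DIM('a))))))}"

definition ultrafilter_on :: "'i set \<Rightarrow> 'i set set \<Rightarrow> bool" where
  "ultrafilter_on I U \<longleftrightarrow> U \<subseteq> Pow I \<and> I \<in> U \<and> {} \<notin> U \<and>
     (\<forall>A\<in>U. \<forall>B\<in>U. A \<inter> B \<in> U) \<and>
     (\<forall>A\<in>U. \<forall>B. A \<subseteq> B \<and> B \<subseteq> I \<longrightarrow> B \<in> U) \<and>
     (\<forall>A. A \<subseteq> I \<longrightarrow> A \<in> U \<or> I - A \<in> U)"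

definition free_ultrafilter_on :: "'i set \<Rightarrow> 'i set set \<Rightarrow> bool" where
  "free_ultrafilter_on I U \<longleftrightarrow> ultrafilter_on I U \<and> \<Inter> U = {}"

text \<open>c^+-good (Keisler): for every cardinal lambda < c^+, i.e. lambda \<le> c, realised as a
  subset X of the reals, every anti-monotone f from the finite subsets of X into U has a
  multiplicative refinement g.\<close>
definition cplus_good :: "'i set set \<Rightarrow> bool" where
  "cplus_good U \<longleftrightarrow> (\<forall>(X::real set) f.
     (\<forall>s. finite s \<and> s \<subseteq> X \<longrightarrow> f s \<in> U) \<and>
     (\<forall>s t. finite t \<and> t \<subseteq> X \<and> s \<subseteq> t \<longrightarrow> f t \<subseteq> f s) \<longrightarrow>
     (\<exists>g. (\<forall>s. finite s \<and> s \<subseteq> X \<longrightarrow> g s \<in> U \<and> g s \<subseteq> f s) \<and>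
          (\<forall>s t. finite s \<and> s \<subseteq> X \<and> finite t \<and> t \<subseteq> X \<longrightarrow> g (s \<union> t) = g s \<inter> g t)))"

text \<open>Nets indexed by D_0; only values on D_0 = test_fns matter.\<close>
type_synonym 'a net = "('a \<Rightarrow> complex) \<Rightarrow> complex"

definition ae :: "('a::euclidean_space \<Rightarrow> complex) set set \<Rightarrow> (('a \<Rightarrow> complex) \<Rightarrow> bool) \<Rightarrow> bool" where
  "ae U P \<longleftrightarrow> {\<phi> \<in> test_fns. P \<phi>} \<in> U"

definition realnet :: "'a::euclidean_space net \<Rightarrow> bool" where
  "realnet A \<longleftrightarrow> (\<forall>\<phi>\<in>test_fns. A \<phi> \<in> \<real>)"

definition rep :: "'b set \<Rightarrow> 'b" where
  "rep X = (SOME A. A \<in> X)"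

definition moderate :: "('a::euclidean_space \<Rightarrow> complex) set set \<Rightarrow> 'a net set" where
  "moderate U = {A. \<exists>m::nat. ae U (\<lambda>\<phi>. cmod (A \<phi>) \<le> inverse (Rphi \<phi> ^ m))}"

definition negligible :: "('a::euclidean_space \<Rightarrow> complex) set set \<Rightarrow> 'a net set" where
  "negligible U = {A. \<forall>p::nat. ae U (\<lambda>\<phi>. cmod (A \<phi>) < Rphi \<phi> ^ p)}"

definition asym_cls :: "('a::euclidean_space \<Rightarrow> complex) set set \<Rightarrow> 'a net \<Rightarrow> 'a net set" where
  "asym_cls U A = {B \<in> moderate U. (\<lambda>\<phi>. A \<phi> - B \<phi>) \<in> negligible U}"

definition AsymC :: "('a::euclidean_space \<Rightarrow> complex) set set \<Rightarrow> 'a net set set" where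
  "AsymC U = asym_cls U ` moderate U"

definition AsymR :: "('a::euclidean_space \<Rightarrow> complex) set set \<Rightarrow> 'a net set set" where
  "AsymR U = asym_cls U ` (moderate U \<inter> {A. realnet A})"

definition asym_ring :: "('a::euclidean_space \<Rightarrow> complex) set set \<Rightarrow> 'a net set ring" where
  "asym_ring U = \<lparr>carrier = AsymC U,
     mult = (\<lambda>X Y. asym_cls U (\<lambda>\<phi>. rep X \<phi> * rep Y \<phi>)),
     one = asym_cls U (\<lambda>_. 1),
     zero = asym_cls U (\<lambda>_. 0),
     add = (\<lambda>X Y. asym_cls U (\<lambda>\<phi>. rep X \<phi> + rep Y \<phi>))\<rparr>"

definition asym_minus :: "('a::euclidean_space \<Rightarrow> complex) set set \<Rightarrow> 'a net set \<Rightarrow> 'a net set \<Rightarrow> 'a net set" where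
  "asym_minus U X Y = asym_cls U (\<lambda>\<phi>. rep X \<phi> - rep Y \<phi>)"

definition asym_const :: "('a::euclidean_space \<Rightarrow> complex) set set \<Rightarrow> complex \<Rightarrow> 'a net set" where
  "asym_const U c = asym_cls U (\<lambda>_. c)"

definition asym_pos :: "('a::euclidean_space \<Rightarrow> complex) set set \<Rightarrow> 'a net set \<Rightarrow> bool" where
  "asym_pos U X \<longleftrightarrow> X \<noteq> asym_const U 0 \<and>
     (\<exists>A\<in>X. realnet A \<and> ae U (\<lambda>\<phi>. Re (A \<phi>) > 0))"

definition asym_less :: "('a::euclidean_space \<Rightarrow> complex) set set \<Rightarrow> 'a net set \<Rightarrow> 'a net set \<Rightarrow> bool" where
  "asym_less U X Y \<longleftrightarrow> asym_pos U (asym_minus U Y X)"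

definition asym_abs :: "('a::euclidean_space \<Rightarrow> complex) set set \<Rightarrow> 'a net set \<Rightarrow> 'a net set" where
  "asym_abs U X = asym_cls U (\<lambda>\<phi>. complex_of_real
      (sqrt ((Re (rep X \<phi>))\<^sup>2 + (Im (rep X \<phi>))\<^sup>2)))"

definition asym_re :: "('a::euclidean_space \<Rightarrow> complex) set set \<Rightarrow> 'a net set \<Rightarrow> 'a net set" where
  "asym_re U X = asym_cls U (\<lambda>\<phi>. complex_of_real (Re (rep X \<phi>)))"

definition asym_im :: "('a::euclidean_space \<Rightarrow> complex) set set \<Rightarrow> 'a net set \<Rightarrow> 'a net set" where
  "asym_im U X = asym_cls U (\<lambda>\<phi>. complex_of_real (Im (rep X \<phi>)))"

definition asym_approx0 :: "('a::euclidean_space \<Rightarrow> complex) set set \<Rightarrow> 'a net set \<Rightarrow> bool" where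
  "asym_approx0 U z \<longleftrightarrow> (\<forall>n::nat. n \<ge> 1 \<longrightarrow>
      asym_less U (asym_abs U z) (asym_const U (complex_of_real (1 / real n))))"

text \<open>rho-hat to a rational power q is the class of (R_phi^q); z / rho^q is taken
  representative-wise.\<close>
definition asym_val :: "('a::euclidean_space \<Rightarrow> complex) set set \<Rightarrow> 'a net set \<Rightarrow> ereal" where
  "asym_val U z = (if z = asym_const U 0 then \<infinity> else
      Sup {ereal (real_of_rat q) | q.
             asym_approx0 U (asym_cls U (\<lambda>\<phi>. rep z \<phi> / complex_of_real (Rphi \<phi> powr real_of_rat q)))})"

definition unorm :: "ereal \<Rightarrow> real" where
  "unorm v = (if v = \<infinity> then 0 else exp (- real_of_ereal v))"

definition asym_norm :: "('a::euclidean_space \<Rightarrow> complex) set set \<Rightarrow> 'a net set \<Rightarrow> real" where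
  "asym_norm U z = unorm (asym_val U z)"

definition asym_dist :: "('a::euclidean_space \<Rightarrow> complex) set set \<Rightarrow> 'a net set \<Rightarrow> 'a net set \<Rightarrow> real" where
  "asym_dist U a b = asym_norm U (asym_minus U a b)"

definition ord_top_R :: "('a::euclidean_space \<Rightarrow> complex) set set \<Rightarrow> 'a net set topology" where
  "ord_top_R U = topology_generated_by
     ({{x \<in> AsymR U. asym_less U a x} | a. a \<in> AsymR U} \<union>
      {{x \<in> AsymR U. asym_less U x b} | b. b \<in> AsymR U})"

text \<open>Order topology on the complex asymptotic numbers: the product topology transported
  along C-hat = R-hat + i R-hat, i.e. z corresponds to (Re z, Im z).\<close>
definition ord_top_C :: "('a::euclidean_space \<Rightarrow> complex) set set \<Rightarrow> 'a net set topology" where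
  "ord_top_C U = pullback_topology (AsymC U) (\<lambda>z. (asym_re U z, asym_im U z))
                    (prod_topology (ord_top_R U) (ord_top_R U))"

definition metric_top_C :: "('a::euclidean_space \<Rightarrow> complex) set set \<Rightarrow> 'a net set topology" where
  "metric_top_C U = Metric_space.mtopology (AsymC U) (asym_dist U)"

definition star_cls :: "('a::euclidean_space \<Rightarrow> complex) set set \<Rightarrow> 'a net \<Rightarrow> 'a net set" where
  "star_cls U A = {B. ae U (\<lambda>\<phi>. A \<phi> = B \<phi>)}"

definition StarC :: "('a::euclidean_space \<Rightarrow> complex) set set \<Rightarrow> 'a net set set" where
  "StarC U = range (star_cls U)"

definition StarR :: "('a::euclidean_space \<Rightarrow> complex) set set \<Rightarrow> 'a net set set" where
  "StarR U = star_cls U ` {A. realnet A}"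

definition star_lift1 :: "('a::euclidean_space \<Rightarrow> complex) set set \<Rightarrow> (complex \<Rightarrow> complex) \<Rightarrow> 'a net set \<Rightarrow> 'a net set" where
  "star_lift1 U f X = star_cls U (\<lambda>\<phi>. f (rep X \<phi>))"

definition star_lift2 :: "('a::euclidean_space \<Rightarrow> complex) set set \<Rightarrow> (complex \<Rightarrow> complex \<Rightarrow> complex) \<Rightarrow> 'a net set \<Rightarrow> 'a net set \<Rightarrow> 'a net set" where
  "star_lift2 U f X Y = star_cls U (\<lambda>\<phi>. f (rep X \<phi>) (rep Y \<phi>))"

definition star_const :: "('a::euclidean_space \<Rightarrow> complex) set set \<Rightarrow> complex \<Rightarrow> 'a net set" where
  "star_const U c = star_cls U (\<lambda>_. c)"

definition star_abs :: "('a::euclidean_space \<Rightarrow> complex) set set \<Rightarrow> 'a net set \<Rightarrow> 'a net set" where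
  "star_abs U X = star_lift1 U (\<lambda>z. complex_of_real (cmod z)) X"

definition star_less :: "('a::euclidean_space \<Rightarrow> complex) set set \<Rightarrow> 'a net set \<Rightarrow> 'a net set \<Rightarrow> bool" where
  "star_less U X Y \<longleftrightarrow> ae U (\<lambda>\<phi>. Re (rep X \<phi>) < Re (rep Y \<phi>))"

definition star_le :: "('a::euclidean_space \<Rightarrow> complex) set set \<Rightarrow> 'a net set \<Rightarrow> 'a net set \<Rightarrow> bool" where
  "star_le U X Y \<longleftrightarrow> star_less U X Y \<or> X = Y"

definition star_rho :: "('a::euclidean_space \<Rightarrow> complex) set set \<Rightarrow> 'a net set" where
  "star_rho U = star_cls U (\<lambda>\<phi>. complex_of_real (Rphi \<phi>))"

definition M_rho :: "('a::euclidean_space \<Rightarrow> complex) set set \<Rightarrow> 'a net set set" where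
  "M_rho U = {\<zeta> \<in> StarC U. \<exists>m::nat.
      star_le U (star_abs U \<zeta>) (star_lift1 U inverse (star_lift1 U (\<lambda>z. z ^ m) (star_rho U)))}"

definition N_rho :: "('a::euclidean_space \<Rightarrow> complex) set set \<Rightarrow> 'a net set set" where
  "N_rho U = {\<zeta> \<in> StarC U. \<forall>n::nat.
      star_less U (star_abs U \<zeta>) (star_lift1 U (\<lambda>z. z ^ n) (star_rho U))}"

definition rob_cls :: "('a::euclidean_space \<Rightarrow> complex) set set \<Rightarrow> 'a net set \<Rightarrow> 'a net set set" where
  "rob_cls U \<zeta> = {\<eta> \<in> M_rho U. star_lift2 U (-) \<zeta> \<eta> \<in> N_rho U}"

definition RobC :: "('a::euclidean_space \<Rightarrow> complex) set set \<Rightarrow> 'a net set set set" where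
  "RobC U = rob_cls U ` M_rho U"

definition RobR :: "('a::euclidean_space \<Rightarrow> complex) set set \<Rightarrow> 'a net set set set" where
  "RobR U = rob_cls U ` (M_rho U \<inter> StarR U)"

definition rob_ring :: "('a::euclidean_space \<Rightarrow> complex) set set \<Rightarrow> 'a net set set ring" where
  "rob_ring U = \<lparr>carrier = RobC U,
     mult = (\<lambda>X Y. rob_cls U (star_lift2 U (*) (rep X) (rep Y))),
     one = rob_cls U (star_const U 1),
     zero = rob_cls U (star_const U 0),
     add = (\<lambda>X Y. rob_cls U (star_lift2 U (+) (rep X) (rep Y)))\<rparr>"

definition rob_minus :: "('a::euclidean_space \<Rightarrow> complex) set set \<Rightarrow> 'a net set set \<Rightarrow> 'a net set set \<Rightarrow> 'a net set set" where
  "rob_minus U X Y = rob_cls U (star_lift2 U (-) (rep X) (rep Y))"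

definition star_st :: "('a::euclidean_space \<Rightarrow> complex) set set \<Rightarrow> 'a net set \<Rightarrow> real" where
  "star_st U \<xi> = (THE r::real. \<forall>n::nat. n \<ge> 1 \<longrightarrow>
      star_less U (star_abs U (star_lift2 U (-) \<xi> (star_const U (complex_of_real r))))
                  (star_const U (complex_of_real (1 / real n))))"

definition star_ln :: "('a::euclidean_space \<Rightarrow> complex) set set \<Rightarrow> 'a net set \<Rightarrow> 'a net set" where
  "star_ln U X = star_lift1 U (\<lambda>z. complex_of_real (ln (Re z))) X"

definition rob_val :: "('a::euclidean_space \<Rightarrow> complex) set set \<Rightarrow> 'a net set set \<Rightarrow> ereal" where
  "rob_val U X = (if X = rob_cls U (star_const U 0) then \<infinity> else
      ereal (star_st U (star_lift2 U (/) (star_ln U (star_abs U (rep X))) (star_ln U (star_rho U)))))"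

definition rob_norm :: "('a::euclidean_space \<Rightarrow> complex) set set \<Rightarrow> 'a net set set \<Rightarrow> real" where
  "rob_norm U X = unorm (rob_val U X)"

definition rob_dist :: "('a::euclidean_space \<Rightarrow> complex) set set \<Rightarrow> 'a net set set \<Rightarrow> 'a net set set \<Rightarrow> real" where
  "rob_dist U X Y = rob_norm U (rob_minus U X Y)"

definition Phi :: "('a::euclidean_space \<Rightarrow> complex) set set \<Rightarrow> 'a net set \<Rightarrow> 'a net set set" where
  "Phi U X = rob_cls U (star_cls U (rep X))"

end

theory Submission imports Defs begin

locale setting =
  fixes U :: "('a::euclidean_space \<Rightarrow> complex) set set"
  assumes uf: "ultrafilter_on test_fns U"
    and Dn_in: "\<And>n::nat. n \<ge> 1 \<Longrightarrow> Dn n \<in> U"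
begin

abbreviation "T \<equiv> (test_fns :: ('a \<Rightarrow> complex) set)"
abbreviation "AEU \<equiv> ae U"
abbreviation "R \<equiv> (Rphi :: ('a \<Rightarrow> complex) \<Rightarrow> real)"

lemma ae_iff: "AEU P \<longleftrightarrow> {\<phi> \<in> T. P \<phi>} \<in> U" by (simp add: ae_def)

lemma aeI: "(\<And>\<phi>. \<phi> \<in> T \<Longrightarrow> P \<phi>) \<Longrightarrow> AEU P"
proof -
  assume "\<And>\<phi>. \<phi> \<in> T \<Longrightarrow> P \<phi>"
  then have "{\<phi> \<in> T. P \<phi>} = T" by auto
  then show ?thesis using uf by (simp add: ae_def ultrafilter_on_def)
qed

lemma ae_mono: "AEU P \<Longrightarrow> (\<And>\<phi>. \<phi> \<in> T \<Longrightarrow> P \<phi> \<Longrightarrow> Q \<phi>) \<Longrightarrow> AEU Q"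
proof -
  assume a: "AEU P" and b: "\<And>\<phi>. \<phi> \<in> T \<Longrightarrow> P \<phi> \<Longrightarrow> Q \<phi>"
  have "{\<phi> \<in> T. P \<phi>} \<subseteq> {\<phi> \<in> T. Q \<phi>}" using b by auto
  then show ?thesis using a uf unfolding ae_def ultrafilter_on_def by blast
qed

lemma ae_conj: "AEU P \<Longrightarrow> AEU Q \<Longrightarrow> AEU (\<lambda>\<phi>. P \<phi> \<and> Q \<phi>)"
proof -
  assume "AEU P" "AEU Q"
  then have "{\<phi> \<in> T. P \<phi>} \<inter> {\<phi> \<in> T. Q \<phi>} \<in> U" using uf unfolding ae_def ultrafilter_on_def by blast
  moreover have "{\<phi> \<in> T. P \<phi>} \<inter> {\<phi> \<in> T. Q \<phi>} = {\<phi> \<in> T. P \<phi> \<and> Q \<phi>}" by auto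
  ultimately show ?thesis by (simp add: ae_def)
qed

lemma ae_mp2: "AEU P \<Longrightarrow> AEU Q \<Longrightarrow> (\<And>\<phi>. \<phi> \<in> T \<Longrightarrow> P \<phi> \<Longrightarrow> Q \<phi> \<Longrightarrow> S \<phi>) \<Longrightarrow> AEU S"
proof -
  assume a: "AEU P" "AEU Q" and b: "\<And>\<phi>. \<phi> \<in> T \<Longrightarrow> P \<phi> \<Longrightarrow> Q \<phi> \<Longrightarrow> S \<phi>"
  show ?thesis by (rule ae_mono[OF ae_conj[OF a]]) (use b in auto)
qed

lemma ae_mp3: "AEU P \<Longrightarrow> AEU Q \<Longrightarrow> AEU W \<Longrightarrow> (\<And>\<phi>. \<phi> \<in> T \<Longrightarrow> P \<phi> \<Longrightarrow> Q \<phi> \<Longrightarrow> W \<phi> \<Longrightarrow> S \<phi>) \<Longrightarrow> AEU S"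
proof -
  assume a: "AEU P" "AEU Q" "AEU W" and b: "\<And>\<phi>. \<phi> \<in> T \<Longrightarrow> P \<phi> \<Longrightarrow> Q \<phi> \<Longrightarrow> W \<phi> \<Longrightarrow> S \<phi>"
  show ?thesis by (rule ae_mono[OF ae_conj[OF ae_conj[OF a(1,2)] a(3)]]) (use b in auto)
qed

lemma ae_mp4: "AEU P \<Longrightarrow> AEU Q \<Longrightarrow> AEU W \<Longrightarrow> AEU V \<Longrightarrow> (\<And>\<phi>. \<phi> \<in> T \<Longrightarrow> P \<phi> \<Longrightarrow> Q \<phi> \<Longrightarrow> W \<phi> \<Longrightarrow> V \<phi> \<Longrightarrow> S \<phi>) \<Longrightarrow> AEU S"
proof -
  assume a: "AEU P" "AEU Q" "AEU W" "AEU V" and b: "\<And>\<phi>. \<phi> \<in> T \<Longrightarrow> P \<phi> \<Longrightarrow> Q \<phi> \<Longrightarrow> W \<phi> \<Longrightarrow> V \<phi> \<Longrightarrow> S \<phi>"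
  show ?thesis by (rule ae_mono[OF ae_conj[OF ae_conj[OF ae_conj[OF a(1,2)] a(3)] a(4)]]) (use b in auto)
qed

lemma ae_False: "\<not> AEU (\<lambda>_. False)"
  using uf by (simp add: ae_def ultrafilter_on_def)

lemma ae_contr: "AEU P \<Longrightarrow> AEU (\<lambda>\<phi>. \<not> P \<phi>) \<Longrightarrow> False"
proof -
  assume a: "AEU P" "AEU (\<lambda>\<phi>. \<not> P \<phi>)"
  have "AEU (\<lambda>_. False)" by (rule ae_mp2[OF a]) auto
  then show False using ae_False by simp
qed

lemma ae_not: "\<not> AEU P \<Longrightarrow> AEU (\<lambda>\<phi>. \<not> P \<phi>)"
proof -
  assume a: "\<not> AEU P"
  have "{\<phi> \<in> T. P \<phi>} \<subseteq> T" by auto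
  then have "{\<phi> \<in> T. P \<phi>} \<in> U \<or> T - {\<phi> \<in> T. P \<phi>} \<in> U" using uf unfolding ultrafilter_on_def by blast
  moreover have "T - {\<phi> \<in> T. P \<phi>} = {\<phi> \<in> T. \<not> P \<phi>}" by auto
  ultimately show ?thesis using a by (auto simp: ae_def)
qed


lemma Rphi_pos_Dn: assumes "\<phi> \<in> Dn 1" shows "0 < R \<phi>"
proof -
  note D = assms[unfolded Dn_def mem_Collect_eq]
  have T: "\<phi> \<in> T" using D by (elim conjE) assumption
  have int1: "integral UNIV \<phi> = 1" using D by (elim conjE) assumption
  have bd0: "\<forall>es. set es \<subseteq> Basis \<and> length es \<le> 1 \<longrightarrow>
         (\<forall>x. cmod (pderivs es \<phi> x) \<le> R \<phi> powr (- real (2 * (length es + DIM('a)))))"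
    using D by (elim conjE) assumption
  have bd: "\<And>x. cmod (\<phi> x) \<le> R \<phi> powr (- real (2 * (0 + DIM('a))))"
    using bd0[rule_format, of "[]"] by simp
  have nz: "\<phi> \<noteq> (\<lambda>_. 0)" using int1 by auto
  then obtain x0 where x0: "\<phi> x0 \<noteq> 0" by auto
  have Req: "R \<phi> = Sup {norm x | x. \<phi> x \<noteq> 0}" using nz by (simp add: Rphi_def)
  have "compact (closure {x. \<phi> x \<noteq> 0})" using T by (simp add: test_fns_def)
  then have "bounded (closure {x. \<phi> x \<noteq> 0})" by (rule compact_imp_bounded)
  then have "bounded {x. \<phi> x \<noteq> 0}" by (rule bounded_subset) (rule closure_subset)
  then obtain B where B: "\<And>x. \<phi> x \<noteq> 0 \<Longrightarrow> norm x \<le> B" unfolding bounded_iff by auto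
  have bdd: "bdd_above {norm x | x. \<phi> x \<noteq> 0}" by (rule bdd_aboveI[of _ B]) (use B in blast)
  have mem: "norm x0 \<in> {norm x | x. \<phi> x \<noteq> 0}" using x0 by blast
  have "norm x0 \<le> R \<phi>" unfolding Req by (rule cSup_upper[OF mem bdd])
  then have ge: "0 \<le> R \<phi>" by (meson norm_ge_zero order_trans)
  show ?thesis
  proof (rule ccontr)
    assume "\<not> 0 < R \<phi>"
    then have "R \<phi> = 0" using ge by auto
    then have "cmod (\<phi> x0) \<le> 0" using bd[of x0] by simp
    then show False using x0 by simp
  qed
qed

lemma Dn_facts: assumes "\<phi> \<in> Dn n" shows "\<phi> \<in> T" "R \<phi> \<le> 1 / real n"
  using assms[unfolded Dn_def, THEN CollectD, THEN conjunct1]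
    assms[unfolded Dn_def, THEN CollectD, THEN conjunct2, THEN conjunct2, THEN conjunct2, THEN conjunct1]
  by auto

lemma ae_R: assumes "n \<ge> 1" shows "AEU (\<lambda>\<phi>. 0 < R \<phi> \<and> R \<phi> \<le> 1 / real n)"
proof -
  have a: "Dn n \<in> U" "Dn 1 \<in> U" using Dn_in assms by auto
  have "Dn n \<inter> Dn 1 \<in> U" using a uf unfolding ultrafilter_on_def by blast
  moreover have "Dn n \<inter> Dn 1 \<subseteq> {\<phi> \<in> T. 0 < R \<phi> \<and> R \<phi> \<le> 1 / real n}"
  proof
    fix \<phi> :: "'a \<Rightarrow> complex" assume "\<phi> \<in> Dn n \<inter> Dn 1"
    then show "\<phi> \<in> {\<phi> \<in> T. 0 < R \<phi> \<and> R \<phi> \<le> 1 / real n}"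
      using Rphi_pos_Dn[of \<phi>] Dn_facts[of \<phi> n] by auto
  qed
  moreover have "{\<phi> \<in> T. 0 < R \<phi> \<and> R \<phi> \<le> 1 / real n} \<subseteq> T" by auto
  ultimately show ?thesis using uf unfolding ae_def ultrafilter_on_def by blast
qed

lemma ae_R2: "AEU (\<lambda>\<phi>. 0 < R \<phi> \<and> R \<phi> \<le> 1 / 2)"
  using ae_R[of 2] by simp


lemma ae_R2': "AEU (\<lambda>\<phi>. 0 < R \<phi> \<and> R \<phi> \<le> 1)"
  by (rule ae_mono[OF ae_R2]) auto

abbreviation "Mo \<equiv> moderate U"
abbreviation "Ne \<equiv> negligible U"
abbreviation "cls \<equiv> asym_cls U"

lemma mod_iff: "A \<in> Mo \<longleftrightarrow> (\<exists>m. AEU (\<lambda>\<phi>. cmod (A \<phi>) \<le> inverse (R \<phi> ^ m)))"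
  by (simp add: moderate_def)

lemma neg_iff: "A \<in> Ne \<longleftrightarrow> (\<forall>p. AEU (\<lambda>\<phi>. cmod (A \<phi>) < R \<phi> ^ p))"
  by (simp add: negligible_def)

end

lemma pw_inv_mono: "0 < (r::real) \<Longrightarrow> r \<le> 1 \<Longrightarrow> m \<le> n \<Longrightarrow> inverse (r ^ m) \<le> inverse (r ^ n)"
  by (simp add: power_decreasing le_imp_inverse_le)

lemma pw_2k: "0 < (r::real) \<Longrightarrow> r \<le> 1/2 \<Longrightarrow> 2 ^ k \<le> inverse (r ^ k)"
proof -
  assume r: "0 < r" "r \<le> 1/2"
  have "r ^ k \<le> (1/2) ^ k" using r by (simp add: power_mono)
  then have "inverse ((1/2::real) ^ k) \<le> inverse (r ^ k)" using r by (simp add: le_imp_inverse_le)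
  then show ?thesis by (simp add: power_inverse[symmetric] power_one_over)
qed

lemma pw_small: "0 < (r::real) \<Longrightarrow> r \<le> 1 / real n \<Longrightarrow> n \<ge> 1 \<Longrightarrow> C \<le> real n - 1 \<Longrightarrow> C * r ^ Suc p < r ^ p"
proof -
  assume a: "0 < r" "r \<le> 1 / real n" "n \<ge> 1" "C \<le> real n - 1"
  have "C * r \<le> max C 0 * r" using a by (simp add: mult_right_mono)
  also have "\<dots> \<le> max C 0 * (1 / real n)" using a by (intro mult_left_mono) auto
  also have "\<dots> < 1" using a by (auto simp: field_simps)
  finally have "C * r < 1" .
  then have "C * r * r ^ p < 1 * r ^ p" using a by (intro mult_strict_right_mono) auto
  then show ?thesis by (simp add: mult.assoc)
qed

context setting begin

lemma modI: assumes "AEU (\<lambda>\<phi>. cmod (A \<phi>) \<le> C * inverse (R \<phi> ^ m))" shows "A \<in> Mo"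
proof -
  obtain k where k: "C < 2 ^ k" using real_arch_pow[of 2 C] by auto
  have "AEU (\<lambda>\<phi>. cmod (A \<phi>) \<le> inverse (R \<phi> ^ (k + m)))"
  proof (rule ae_mp2[OF assms ae_R2])
    fix \<phi> assume a: "cmod (A \<phi>) \<le> C * inverse (R \<phi> ^ m)" "0 < R \<phi> \<and> R \<phi> \<le> 1 / 2"
    have "C * inverse (R \<phi> ^ m) \<le> 2 ^ k * inverse (R \<phi> ^ m)"
      using k a by (intro mult_right_mono) auto
    also have "\<dots> \<le> inverse (R \<phi> ^ k) * inverse (R \<phi> ^ m)"
      using a pw_2k[of "R \<phi>" k] by (intro mult_right_mono) auto
    also have "\<dots> = inverse (R \<phi> ^ (k + m))" by (simp add: power_add)
    finally show "cmod (A \<phi>) \<le> inverse (R \<phi> ^ (k + m))" using a by simp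
  qed
  then show ?thesis unfolding mod_iff by blast
qed

lemma negI: assumes "\<And>p. \<exists>C. AEU (\<lambda>\<phi>. cmod (A \<phi>) \<le> C * R \<phi> ^ Suc p)" shows "A \<in> Ne"
  unfolding neg_iff
proof
  fix p
  obtain C where C: "AEU (\<lambda>\<phi>. cmod (A \<phi>) \<le> C * R \<phi> ^ Suc p)" using assms by blast
  define n where "n = nat \<lceil>max C 0\<rceil> + 1"
  have n: "n \<ge> 1" "C \<le> real n - 1" unfolding n_def by (auto simp: of_nat_nat) linarith
  show "AEU (\<lambda>\<phi>. cmod (A \<phi>) < R \<phi> ^ p)"
  proof (rule ae_mp2[OF C ae_R[OF n(1)]])
    fix \<phi> assume "cmod (A \<phi>) \<le> C * R \<phi> ^ Suc p" "0 < R \<phi> \<and> R \<phi> \<le> 1 / real n"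
    moreover have "C * R \<phi> ^ Suc p < R \<phi> ^ p" by (rule pw_small) (use n \<open>0 < R \<phi> \<and> R \<phi> \<le> 1 / real n\<close> in auto)
    ultimately show "cmod (A \<phi>) < R \<phi> ^ p" by linarith
  qed
qed

lemma neg_ae0: "AEU (\<lambda>\<phi>. A \<phi> = 0) \<Longrightarrow> A \<in> Ne"
proof -
  assume a: "AEU (\<lambda>\<phi>. A \<phi> = 0)"
  show ?thesis
  proof (rule negI)
    fix p
    have "AEU (\<lambda>\<phi>. cmod (A \<phi>) \<le> 0 * R \<phi> ^ Suc p)" by (rule ae_mono[OF a]) simp
    then show "\<exists>C. AEU (\<lambda>\<phi>. cmod (A \<phi>) \<le> C * R \<phi> ^ Suc p)" by blast
  qed
qed

lemma neg_mod: "A \<in> Ne \<Longrightarrow> A \<in> Mo"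
proof -
  assume "A \<in> Ne"
  then have "AEU (\<lambda>\<phi>. cmod (A \<phi>) < R \<phi> ^ 0)" unfolding neg_iff by blast
  then have "AEU (\<lambda>\<phi>. cmod (A \<phi>) \<le> inverse (R \<phi> ^ 0))" by (rule ae_mono) simp
  then show ?thesis unfolding mod_iff by blast
qed

lemma mod_const: "(\<lambda>_. c) \<in> Mo"
  by (rule modI[of _ "cmod c" 0]) (rule aeI, simp)

lemma mod_bound2: "A1 \<in> Mo \<Longrightarrow> A2 \<in> Mo \<Longrightarrow> AEU (\<lambda>\<phi>. cmod (B \<phi>) \<le> cmod (A1 \<phi>) + cmod (A2 \<phi>)) \<Longrightarrow> B \<in> Mo"
proof -
  assume a: "A1 \<in> Mo" "A2 \<in> Mo" and b: "AEU (\<lambda>\<phi>. cmod (B \<phi>) \<le> cmod (A1 \<phi>) + cmod (A2 \<phi>))"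
  obtain m1 m2 where m: "AEU (\<lambda>\<phi>. cmod (A1 \<phi>) \<le> inverse (R \<phi> ^ m1))" "AEU (\<lambda>\<phi>. cmod (A2 \<phi>) \<le> inverse (R \<phi> ^ m2))"
    using a unfolding mod_iff by blast
  have "AEU (\<lambda>\<phi>. cmod (B \<phi>) \<le> 2 * inverse (R \<phi> ^ (m1 + m2)))"
  proof (rule ae_mp4[OF m b ae_R2'])
    fix \<phi> assume c: "cmod (A1 \<phi>) \<le> inverse (R \<phi> ^ m1)" "cmod (A2 \<phi>) \<le> inverse (R \<phi> ^ m2)"
      "cmod (B \<phi>) \<le> cmod (A1 \<phi>) + cmod (A2 \<phi>)" "0 < R \<phi> \<and> R \<phi> \<le> 1"
    have "inverse (R \<phi> ^ m1) \<le> inverse (R \<phi> ^ (m1 + m2))" "inverse (R \<phi> ^ m2) \<le> inverse (R \<phi> ^ (m1 + m2))"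
      using pw_inv_mono[of "R \<phi>" m1 "m1+m2"] pw_inv_mono[of "R \<phi>" m2 "m1+m2"] c(4) by auto
    then show "cmod (B \<phi>) \<le> 2 * inverse (R \<phi> ^ (m1 + m2))" using c by linarith
  qed
  then show ?thesis by (rule modI)
qed

lemma mod_bound: "A \<in> Mo \<Longrightarrow> AEU (\<lambda>\<phi>. cmod (B \<phi>) \<le> cmod (A \<phi>)) \<Longrightarrow> B \<in> Mo"
proof -
  assume a: "A \<in> Mo" "AEU (\<lambda>\<phi>. cmod (B \<phi>) \<le> cmod (A \<phi>))"
  have "AEU (\<lambda>\<phi>. cmod (B \<phi>) \<le> cmod (A \<phi>) + cmod (A \<phi>))" by (rule ae_mono[OF a(2)]) (smt (verit) norm_ge_zero)
  then show ?thesis using mod_bound2[OF a(1) a(1)] by blast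
qed

lemma mod_add: "A \<in> Mo \<Longrightarrow> B \<in> Mo \<Longrightarrow> (\<lambda>\<phi>. A \<phi> + B \<phi>) \<in> Mo"
  by (erule (1) mod_bound2) (rule aeI, rule norm_triangle_ineq)

lemma mod_diff: "A \<in> Mo \<Longrightarrow> B \<in> Mo \<Longrightarrow> (\<lambda>\<phi>. A \<phi> - B \<phi>) \<in> Mo"
  by (erule (1) mod_bound2) (rule aeI, rule norm_triangle_ineq4)

lemma mod_mult: "A \<in> Mo \<Longrightarrow> B \<in> Mo \<Longrightarrow> (\<lambda>\<phi>. A \<phi> * B \<phi>) \<in> Mo"
proof -
  assume a: "A \<in> Mo" "B \<in> Mo"
  obtain m1 m2 where m: "AEU (\<lambda>\<phi>. cmod (A \<phi>) \<le> inverse (R \<phi> ^ m1))" "AEU (\<lambda>\<phi>. cmod (B \<phi>) \<le> inverse (R \<phi> ^ m2))"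
    using a unfolding mod_iff by blast
  have "AEU (\<lambda>\<phi>. cmod (A \<phi> * B \<phi>) \<le> 1 * inverse (R \<phi> ^ (m1 + m2)))"
  proof (rule ae_mp3[OF m ae_R2'])
    fix \<phi> assume c: "cmod (A \<phi>) \<le> inverse (R \<phi> ^ m1)" "cmod (B \<phi>) \<le> inverse (R \<phi> ^ m2)" "0 < R \<phi> \<and> R \<phi> \<le> 1"
    have "cmod (A \<phi> * B \<phi>) \<le> inverse (R \<phi> ^ m1) * inverse (R \<phi> ^ m2)"
      unfolding norm_mult using c by (intro mult_mono) auto
    then show "cmod (A \<phi> * B \<phi>) \<le> 1 * inverse (R \<phi> ^ (m1 + m2))" by (simp add: power_add)
  qed
  then show ?thesis by (rule modI)
qed

lemma neg_bound2: "A1 \<in> Ne \<Longrightarrow> A2 \<in> Ne \<Longrightarrow> AEU (\<lambda>\<phi>. cmod (B \<phi>) \<le> cmod (A1 \<phi>) + cmod (A2 \<phi>)) \<Longrightarrow> B \<in> Ne"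
proof (rule negI)
  fix p
  assume a: "A1 \<in> Ne" "A2 \<in> Ne" and b: "AEU (\<lambda>\<phi>. cmod (B \<phi>) \<le> cmod (A1 \<phi>) + cmod (A2 \<phi>))"
  have m: "AEU (\<lambda>\<phi>. cmod (A1 \<phi>) < R \<phi> ^ Suc p)" "AEU (\<lambda>\<phi>. cmod (A2 \<phi>) < R \<phi> ^ Suc p)"
    using a unfolding neg_iff by blast+
  have "AEU (\<lambda>\<phi>. cmod (B \<phi>) \<le> 2 * R \<phi> ^ Suc p)"
    by (rule ae_mp3[OF m b]) auto
  then show "\<exists>C. AEU (\<lambda>\<phi>. cmod (B \<phi>) \<le> C * R \<phi> ^ Suc p)" by blast
qed

lemma neg_bound: "A \<in> Ne \<Longrightarrow> AEU (\<lambda>\<phi>. cmod (B \<phi>) \<le> cmod (A \<phi>)) \<Longrightarrow> B \<in> Ne"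
proof -
  assume a: "A \<in> Ne" "AEU (\<lambda>\<phi>. cmod (B \<phi>) \<le> cmod (A \<phi>))"
  have "AEU (\<lambda>\<phi>. cmod (B \<phi>) \<le> cmod (A \<phi>) + cmod (A \<phi>))" by (rule ae_mono[OF a(2)]) (smt (verit) norm_ge_zero)
  then show ?thesis using neg_bound2[OF a(1) a(1)] by blast
qed

lemma neg_add: "A \<in> Ne \<Longrightarrow> B \<in> Ne \<Longrightarrow> (\<lambda>\<phi>. A \<phi> + B \<phi>) \<in> Ne"
  by (erule (1) neg_bound2) (rule aeI, rule norm_triangle_ineq)

lemma neg_diff: "A \<in> Ne \<Longrightarrow> B \<in> Ne \<Longrightarrow> (\<lambda>\<phi>. A \<phi> - B \<phi>) \<in> Ne"
  by (erule (1) neg_bound2) (rule aeI, rule norm_triangle_ineq4)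

lemma neg_0: "(\<lambda>_. 0) \<in> Ne"
  by (rule neg_ae0) (rule aeI, simp)

lemma neg_mult: "A \<in> Mo \<Longrightarrow> B \<in> Ne \<Longrightarrow> (\<lambda>\<phi>. A \<phi> * B \<phi>) \<in> Ne"
proof (rule negI)
  fix p
  assume a: "A \<in> Mo" "B \<in> Ne"
  obtain m where m: "AEU (\<lambda>\<phi>. cmod (A \<phi>) \<le> inverse (R \<phi> ^ m))" using a unfolding mod_iff by blast
  have n: "AEU (\<lambda>\<phi>. cmod (B \<phi>) < R \<phi> ^ (Suc p + m))" using a unfolding neg_iff by blast
  have "AEU (\<lambda>\<phi>. cmod (A \<phi> * B \<phi>) \<le> 1 * R \<phi> ^ Suc p)"
  proof (rule ae_mp3[OF m n ae_R2'])
    fix \<phi> assume c: "cmod (A \<phi>) \<le> inverse (R \<phi> ^ m)" "cmod (B \<phi>) < R \<phi> ^ (Suc p + m)" "0 < R \<phi> \<and> R \<phi> \<le> 1"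
    have "cmod (A \<phi> * B \<phi>) \<le> inverse (R \<phi> ^ m) * R \<phi> ^ (Suc p + m)"
      unfolding norm_mult using c by (intro mult_mono) auto
    also have "\<dots> = R \<phi> ^ Suc p" using c by (simp add: power_add)
    finally show "cmod (A \<phi> * B \<phi>) \<le> 1 * R \<phi> ^ Suc p" by simp
  qed
  then show "\<exists>C. AEU (\<lambda>\<phi>. cmod (A \<phi> * B \<phi>) \<le> C * R \<phi> ^ Suc p)" by blast
qed

lemma neg_mult': "A \<in> Ne \<Longrightarrow> B \<in> Mo \<Longrightarrow> (\<lambda>\<phi>. A \<phi> * B \<phi>) \<in> Ne"
  using neg_mult[of B A] by (simp add: mult.commute)

lemma neg_uminus: "A \<in> Ne \<Longrightarrow> (\<lambda>\<phi>. - A \<phi>) \<in> Ne"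
  by (erule neg_bound) (rule aeI, simp)

lemma mod_uminus: "A \<in> Mo \<Longrightarrow> (\<lambda>\<phi>. - A \<phi>) \<in> Mo"
  by (erule mod_bound) (rule aeI, simp)


end

context setting begin

lemma neg_cong: "A \<in> Ne \<Longrightarrow> (\<And>\<phi>. B \<phi> = A \<phi>) \<Longrightarrow> B \<in> Ne"
proof -
  assume "A \<in> Ne" "\<And>\<phi>. B \<phi> = A \<phi>"
  then have "B = A" by (intro ext) auto
  then show ?thesis using \<open>A \<in> Ne\<close> by simp
qed

lemma mod_cong: "A \<in> Mo \<Longrightarrow> (\<And>\<phi>. B \<phi> = A \<phi>) \<Longrightarrow> B \<in> Mo"
proof -
  assume "A \<in> Mo" "\<And>\<phi>. B \<phi> = A \<phi>"
  then have "B = A" by (intro ext) auto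
  then show ?thesis using \<open>A \<in> Mo\<close> by simp
qed

lemma mem_cls: "B \<in> cls A \<longleftrightarrow> B \<in> Mo \<and> (\<lambda>\<phi>. A \<phi> - B \<phi>) \<in> Ne"
  by (simp add: asym_cls_def)

lemma cls_self: "A \<in> Mo \<Longrightarrow> A \<in> cls A"
  unfolding mem_cls using neg_0 by (auto intro: neg_cong)

lemma neg_swap: "(\<lambda>\<phi>. A \<phi> - B \<phi>) \<in> Ne \<Longrightarrow> (\<lambda>\<phi>. B \<phi> - A \<phi>) \<in> Ne"
  by (drule neg_uminus) (erule neg_cong, simp)

lemma neg_trans: "(\<lambda>\<phi>. A \<phi> - B \<phi>) \<in> Ne \<Longrightarrow> (\<lambda>\<phi>. B \<phi> - C \<phi>) \<in> Ne \<Longrightarrow> (\<lambda>\<phi>. A \<phi> - C \<phi>) \<in> Ne"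
  by (drule (1) neg_add) (erule neg_cong, simp)

lemma cls_eqI: assumes "(\<lambda>\<phi>. A \<phi> - B \<phi>) \<in> Ne" shows "cls A = cls B"
proof -
  have "C \<in> cls A \<longleftrightarrow> C \<in> cls B" for C
    using neg_trans[OF neg_swap[OF assms], of C] neg_trans[OF assms, of C] unfolding mem_cls by blast
  then show ?thesis by blast
qed

lemma cls_eq_iff: "A \<in> Mo \<Longrightarrow> B \<in> Mo \<Longrightarrow> cls A = cls B \<longleftrightarrow> (\<lambda>\<phi>. A \<phi> - B \<phi>) \<in> Ne"
proof
  assume a: "A \<in> Mo" "B \<in> Mo" "cls A = cls B"
  then have "A \<in> cls B" using cls_self by blast
  then show "(\<lambda>\<phi>. A \<phi> - B \<phi>) \<in> Ne" unfolding mem_cls using neg_swap by blast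
next
  assume "(\<lambda>\<phi>. A \<phi> - B \<phi>) \<in> Ne"
  then show "cls A = cls B" by (rule cls_eqI)
qed

lemma cls_empty: "A \<notin> Mo \<Longrightarrow> cls A = {}"
proof (rule ccontr)
  assume a: "A \<notin> Mo" "cls A \<noteq> {}"
  then obtain B where "B \<in> cls A" by blast
  then have "B \<in> Mo" "(\<lambda>\<phi>. A \<phi> - B \<phi>) \<in> Mo" unfolding mem_cls using neg_mod by auto
  then have "(\<lambda>\<phi>. B \<phi> + (A \<phi> - B \<phi>)) \<in> Mo" by (rule mod_add)
  then have "A \<in> Mo" by (rule mod_cong) simp
  then show False using a by blast
qed

lemma rep_cls: assumes "A \<in> Mo" shows "rep (cls A) \<in> cls A"
  unfolding rep_def by (rule someI[of _ A]) (rule cls_self[OF assms])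

lemma rep_mod: "A \<in> Mo \<Longrightarrow> rep (cls A) \<in> Mo"
  using rep_cls mem_cls by blast

lemma rep_neg: "A \<in> Mo \<Longrightarrow> (\<lambda>\<phi>. A \<phi> - rep (cls A) \<phi>) \<in> Ne"
  using rep_cls mem_cls by blast

lemma rep_neg': "A \<in> Mo \<Longrightarrow> (\<lambda>\<phi>. rep (cls A) \<phi> - A \<phi>) \<in> Ne"
  using rep_neg neg_swap by blast

lemma cls_rep: "A \<in> Mo \<Longrightarrow> cls (rep (cls A)) = cls A"
proof -
  assume a: "A \<in> Mo"
  have "cls (\<lambda>\<phi>. rep (cls A) \<phi>) = cls A" by (rule cls_eqI[OF rep_neg'[OF a]])
  then show ?thesis by simp
qed

lemma AsymC_E: "X \<in> AsymC U \<Longrightarrow> (\<And>A. A \<in> Mo \<Longrightarrow> X = cls A \<Longrightarrow> P) \<Longrightarrow> P"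
  unfolding AsymC_def by blast

lemma AsymC_I: "A \<in> Mo \<Longrightarrow> cls A \<in> AsymC U"
  unfolding AsymC_def by blast

lemma AR_simps [simp]:
  "carrier (asym_ring U) = AsymC U"
  "zero (asym_ring U) = cls (\<lambda>_. 0)"
  "one (asym_ring U) = cls (\<lambda>_. 1)"
  by (simp_all add: asym_ring_def)

lemma add_cls: "A \<in> Mo \<Longrightarrow> B \<in> Mo \<Longrightarrow> add (asym_ring U) (cls A) (cls B) = cls (\<lambda>\<phi>. A \<phi> + B \<phi>)"
proof -
  assume a: "A \<in> Mo" "B \<in> Mo"
  have "cls (\<lambda>\<phi>. rep (cls A) \<phi> + rep (cls B) \<phi>) = cls (\<lambda>\<phi>. A \<phi> + B \<phi>)"
  proof (rule cls_eqI)
    show "(\<lambda>\<phi>. rep (cls A) \<phi> + rep (cls B) \<phi> - (A \<phi> + B \<phi>)) \<in> Ne"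
      using neg_add[OF rep_neg'[OF a(1)] rep_neg'[OF a(2)]] by (rule neg_cong) simp
  qed
  then show ?thesis by (simp add: asym_ring_def)
qed

lemma mult_cls: "A \<in> Mo \<Longrightarrow> B \<in> Mo \<Longrightarrow> mult (asym_ring U) (cls A) (cls B) = cls (\<lambda>\<phi>. A \<phi> * B \<phi>)"
proof -
  assume a: "A \<in> Mo" "B \<in> Mo"
  have "cls (\<lambda>\<phi>. rep (cls A) \<phi> * rep (cls B) \<phi>) = cls (\<lambda>\<phi>. A \<phi> * B \<phi>)"
  proof (rule cls_eqI)
    have "(\<lambda>\<phi>. rep (cls A) \<phi> * (rep (cls B) \<phi> - B \<phi>) + (rep (cls A) \<phi> - A \<phi>) * B \<phi>) \<in> Ne"
      by (intro neg_add neg_mult neg_mult' rep_mod rep_neg' a)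
    then show "(\<lambda>\<phi>. rep (cls A) \<phi> * rep (cls B) \<phi> - A \<phi> * B \<phi>) \<in> Ne"
      by (rule neg_cong) (simp add: algebra_simps)
  qed
  then show ?thesis by (simp add: asym_ring_def)
qed

lemma minus_cls: "A \<in> Mo \<Longrightarrow> B \<in> Mo \<Longrightarrow> asym_minus U (cls A) (cls B) = cls (\<lambda>\<phi>. A \<phi> - B \<phi>)"
proof -
  assume a: "A \<in> Mo" "B \<in> Mo"
  have "cls (\<lambda>\<phi>. rep (cls A) \<phi> - rep (cls B) \<phi>) = cls (\<lambda>\<phi>. A \<phi> - B \<phi>)"
  proof (rule cls_eqI)
    show "(\<lambda>\<phi>. rep (cls A) \<phi> - rep (cls B) \<phi> - (A \<phi> - B \<phi>)) \<in> Ne"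
      using neg_diff[OF rep_neg'[OF a(1)] rep_neg'[OF a(2)]] by (rule neg_cong) simp
  qed
  then show ?thesis by (simp add: asym_minus_def)
qed

lemma cls_zero_iff: "A \<in> Mo \<Longrightarrow> cls A = cls (\<lambda>_. 0) \<longleftrightarrow> A \<in> Ne"
proof -
  assume a: "A \<in> Mo"
  have "cls A = cls (\<lambda>_. 0) \<longleftrightarrow> (\<lambda>\<phi>. A \<phi> - 0) \<in> Ne" by (rule cls_eq_iff[OF a mod_const])
  then show ?thesis by simp
qed

lemma nonneg_bound: "A \<notin> Ne \<Longrightarrow> \<exists>p. AEU (\<lambda>\<phi>. R \<phi> ^ p \<le> cmod (A \<phi>))"
proof -
  assume "A \<notin> Ne"
  then obtain p where "\<not> AEU (\<lambda>\<phi>. cmod (A \<phi>) < R \<phi> ^ p)" unfolding neg_iff by blast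
  then have "AEU (\<lambda>\<phi>. \<not> cmod (A \<phi>) < R \<phi> ^ p)" by (rule ae_not)
  then have "AEU (\<lambda>\<phi>. R \<phi> ^ p \<le> cmod (A \<phi>))" by (rule ae_mono) simp
  then show ?thesis by blast
qed

lemma field_asym: "field (asym_ring U)"
proof -
  have mods: "\<And>A B. A \<in> Mo \<Longrightarrow> B \<in> Mo \<Longrightarrow> (\<lambda>\<phi>. A \<phi> + B \<phi>) \<in> Mo"
    "\<And>A B. A \<in> Mo \<Longrightarrow> B \<in> Mo \<Longrightarrow> (\<lambda>\<phi>. A \<phi> * B \<phi>) \<in> Mo"
    by (rule mod_add mod_mult; assumption)+
  note ops = add_cls mult_cls AsymC_I mod_const mods
  have ag: "abelian_group (asym_ring U)"
  proof (rule abelian_groupI)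
    fix x y z assume xyz: "x \<in> carrier (asym_ring U)" "y \<in> carrier (asym_ring U)" "z \<in> carrier (asym_ring U)"
    then obtain A B C where abc: "A \<in> Mo" "B \<in> Mo" "C \<in> Mo" "x = cls A" "y = cls B" "z = cls C"
      by (auto elim!: AsymC_E)
    show "x \<oplus>\<^bsub>asym_ring U\<^esub> y \<oplus>\<^bsub>asym_ring U\<^esub> z = x \<oplus>\<^bsub>asym_ring U\<^esub> (y \<oplus>\<^bsub>asym_ring U\<^esub> z)"
      using abc by (simp add: ops add.assoc)
  next
    fix x y assume xy: "x \<in> carrier (asym_ring U)" "y \<in> carrier (asym_ring U)"
    then obtain A B where abc: "A \<in> Mo" "B \<in> Mo" "x = cls A" "y = cls B"
      by (auto elim!: AsymC_E)
    show "x \<oplus>\<^bsub>asym_ring U\<^esub> y \<in> carrier (asym_ring U)" using abc by (simp add: ops)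
    show "x \<oplus>\<^bsub>asym_ring U\<^esub> y = y \<oplus>\<^bsub>asym_ring U\<^esub> x" using abc by (simp add: ops add.commute)
  next
    show "\<zero>\<^bsub>asym_ring U\<^esub> \<in> carrier (asym_ring U)" by (simp add: ops)
  next
    fix x assume "x \<in> carrier (asym_ring U)"
    then obtain A where abc: "A \<in> Mo" "x = cls A" by (auto elim!: AsymC_E)
    show "\<zero>\<^bsub>asym_ring U\<^esub> \<oplus>\<^bsub>asym_ring U\<^esub> x = x" using abc by (simp add: ops)
    have m: "(\<lambda>\<phi>. - A \<phi>) \<in> Mo" by (rule mod_uminus[OF abc(1)])
    have "cls (\<lambda>\<phi>. - A \<phi>) \<oplus>\<^bsub>asym_ring U\<^esub> x = \<zero>\<^bsub>asym_ring U\<^esub>" using abc m by (simp add: ops)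
    then show "\<exists>y\<in>carrier (asym_ring U). y \<oplus>\<^bsub>asym_ring U\<^esub> x = \<zero>\<^bsub>asym_ring U\<^esub>"
      using m by (auto simp: ops)
  qed
  have cm: "comm_monoid (asym_ring U)"
  proof (rule comm_monoidI)
    fix x y z assume xyz: "x \<in> carrier (asym_ring U)" "y \<in> carrier (asym_ring U)" "z \<in> carrier (asym_ring U)"
    then obtain A B C where abc: "A \<in> Mo" "B \<in> Mo" "C \<in> Mo" "x = cls A" "y = cls B" "z = cls C"
      by (auto elim!: AsymC_E)
    show "x \<otimes>\<^bsub>asym_ring U\<^esub> y \<otimes>\<^bsub>asym_ring U\<^esub> z = x \<otimes>\<^bsub>asym_ring U\<^esub> (y \<otimes>\<^bsub>asym_ring U\<^esub> z)"
      using abc by (simp add: ops mult.assoc)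
  next
    fix x y assume xy: "x \<in> carrier (asym_ring U)" "y \<in> carrier (asym_ring U)"
    then obtain A B where abc: "A \<in> Mo" "B \<in> Mo" "x = cls A" "y = cls B"
      by (auto elim!: AsymC_E)
    show "x \<otimes>\<^bsub>asym_ring U\<^esub> y \<in> carrier (asym_ring U)" using abc by (simp add: ops)
    show "x \<otimes>\<^bsub>asym_ring U\<^esub> y = y \<otimes>\<^bsub>asym_ring U\<^esub> x" using abc by (simp add: ops mult.commute)
  next
    show "\<one>\<^bsub>asym_ring U\<^esub> \<in> carrier (asym_ring U)" by (simp add: ops)
  next
    fix x assume "x \<in> carrier (asym_ring U)"
    then obtain A where abc: "A \<in> Mo" "x = cls A" by (auto elim!: AsymC_E)
    show "\<one>\<^bsub>asym_ring U\<^esub> \<otimes>\<^bsub>asym_ring U\<^esub> x = x" using abc by (simp add: ops)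
  qed
  have cr: "cring (asym_ring U)"
  proof (rule cringI[OF ag cm])
    fix x y z assume xyz: "x \<in> carrier (asym_ring U)" "y \<in> carrier (asym_ring U)" "z \<in> carrier (asym_ring U)"
    then obtain A B C where abc: "A \<in> Mo" "B \<in> Mo" "C \<in> Mo" "x = cls A" "y = cls B" "z = cls C"
      by (auto elim!: AsymC_E)
    show "(x \<oplus>\<^bsub>asym_ring U\<^esub> y) \<otimes>\<^bsub>asym_ring U\<^esub> z = x \<otimes>\<^bsub>asym_ring U\<^esub> z \<oplus>\<^bsub>asym_ring U\<^esub> y \<otimes>\<^bsub>asym_ring U\<^esub> z"
      using abc by (simp add: ops distrib_right)
  qed
  show ?thesis
  proof (rule cring.cring_fieldI2[OF cr])
    have "(\<lambda>\<phi>. (0::complex) - 1) \<notin> Ne"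
    proof
      assume "(\<lambda>\<phi>. (0::complex) - 1) \<in> Ne"
      then have "AEU (\<lambda>\<phi>. cmod ((0::complex) - 1) < R \<phi> ^ 0)" unfolding neg_iff by blast
      then have "AEU (\<lambda>_. False)" by (rule ae_mono) simp
      then show False using ae_False by blast
    qed
    then show "\<zero>\<^bsub>asym_ring U\<^esub> \<noteq> \<one>\<^bsub>asym_ring U\<^esub>" using cls_eq_iff[OF mod_const mod_const] by simp
  next
    fix a assume a: "a \<in> carrier (asym_ring U)" "a \<noteq> \<zero>\<^bsub>asym_ring U\<^esub>"
    then obtain A where A: "A \<in> Mo" "a = cls A" by (auto elim!: AsymC_E)
    then have "A \<notin> Ne" using a cls_zero_iff by auto
    then obtain p where p: "AEU (\<lambda>\<phi>. R \<phi> ^ p \<le> cmod (A \<phi>))" using nonneg_bound by blast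
    define B where "B = (\<lambda>\<phi>. inverse (A \<phi>))"
    have Bm: "B \<in> Mo"
    proof (rule modI[of _ 1 p])
      show "AEU (\<lambda>\<phi>. cmod (B \<phi>) \<le> 1 * inverse (R \<phi> ^ p))"
      proof (rule ae_mp2[OF p ae_R2'])
        fix \<phi> assume c: "R \<phi> ^ p \<le> cmod (A \<phi>)" "0 < R \<phi> \<and> R \<phi> \<le> 1"
        have "0 < R \<phi> ^ p" using c by simp
        then show "cmod (B \<phi>) \<le> 1 * inverse (R \<phi> ^ p)" unfolding B_def norm_inverse
          using c by (simp add: le_imp_inverse_le)
      qed
    qed
    have "(\<lambda>\<phi>. A \<phi> * B \<phi> - 1) \<in> Ne"
    proof (rule neg_ae0)
      show "AEU (\<lambda>\<phi>. A \<phi> * B \<phi> - 1 = 0)"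
      proof (rule ae_mp2[OF p ae_R2'])
        fix \<phi> assume c: "R \<phi> ^ p \<le> cmod (A \<phi>)" "0 < R \<phi> \<and> R \<phi> \<le> 1"
        have "0 < R \<phi> ^ p" using c by simp
        then have "0 < cmod (A \<phi>)" using c(1) by linarith
        then have "A \<phi> \<noteq> 0" by auto
        then show "A \<phi> * B \<phi> - 1 = 0" unfolding B_def by simp
      qed
    qed
    then have "cls (\<lambda>\<phi>. A \<phi> * B \<phi>) = cls (\<lambda>_. 1)" by (rule cls_eqI)
    then show "\<exists>b\<in>carrier (asym_ring U). a \<otimes>\<^bsub>asym_ring U\<^esub> b = \<one>\<^bsub>asym_ring U\<^esub>"
      using A Bm by (intro bexI[of _ "cls B"]) (simp_all add: ops)
  qed
qed


end

context setting begin

abbreviation "sc \<equiv> star_cls U"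

lemma mem_star: "B \<in> sc A \<longleftrightarrow> AEU (\<lambda>\<phi>. A \<phi> = B \<phi>)"
  by (simp add: star_cls_def)

lemma star_self: "A \<in> sc A"
  unfolding mem_star by (rule aeI) simp

lemma star_eq_iff: "sc A = sc B \<longleftrightarrow> AEU (\<lambda>\<phi>. A \<phi> = B \<phi>)"
proof
  assume "sc A = sc B"
  then have "B \<in> sc A" using star_self[of B] by simp
  then show "AEU (\<lambda>\<phi>. A \<phi> = B \<phi>)" unfolding mem_star .
next
  assume a: "AEU (\<lambda>\<phi>. A \<phi> = B \<phi>)"
  have "C \<in> sc A \<longleftrightarrow> C \<in> sc B" for C
  proof
    assume "C \<in> sc A" then have c: "AEU (\<lambda>\<phi>. A \<phi> = C \<phi>)" unfolding mem_star .
    show "C \<in> sc B" unfolding mem_star by (rule ae_mp2[OF a c]) simp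
  next
    assume "C \<in> sc B" then have c: "AEU (\<lambda>\<phi>. B \<phi> = C \<phi>)" unfolding mem_star .
    show "C \<in> sc A" unfolding mem_star by (rule ae_mp2[OF a c]) simp
  qed
  then show "sc A = sc B" by blast
qed

lemma rep_star: "AEU (\<lambda>\<phi>. A \<phi> = rep (sc A) \<phi>)"
proof -
  have "rep (sc A) \<in> sc A" unfolding rep_def by (rule someI[of _ A]) (rule star_self)
  then show ?thesis unfolding mem_star .
qed

lemma lift1_star: "star_lift1 U f (sc A) = sc (\<lambda>\<phi>. f (A \<phi>))"
  unfolding star_lift1_def star_eq_iff by (rule ae_mono[OF rep_star[of A]]) simp

lemma lift2_star: "star_lift2 U f (sc A) (sc B) = sc (\<lambda>\<phi>. f (A \<phi>) (B \<phi>))"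
  unfolding star_lift2_def star_eq_iff by (rule ae_mp2[OF rep_star[of A] rep_star[of B]]) simp

lemma less_star: "star_less U (sc A) (sc B) \<longleftrightarrow> AEU (\<lambda>\<phi>. Re (A \<phi>) < Re (B \<phi>))"
proof -
  have "star_less U (sc A) (sc B) \<longleftrightarrow> AEU (\<lambda>\<phi>. Re (rep (sc A) \<phi>) < Re (rep (sc B) \<phi>))"
    by (simp add: star_less_def)
  also have "\<dots> \<longleftrightarrow> AEU (\<lambda>\<phi>. Re (A \<phi>) < Re (B \<phi>))"
  proof
    assume "AEU (\<lambda>\<phi>. Re (rep (sc A) \<phi>) < Re (rep (sc B) \<phi>))"
    then show "AEU (\<lambda>\<phi>. Re (A \<phi>) < Re (B \<phi>))" by (rule ae_mp3[OF _ rep_star[of A] rep_star[of B]]) simp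
  next
    assume "AEU (\<lambda>\<phi>. Re (A \<phi>) < Re (B \<phi>))"
    then show "AEU (\<lambda>\<phi>. Re (rep (sc A) \<phi>) < Re (rep (sc B) \<phi>))" by (rule ae_mp3[OF _ rep_star[of A] rep_star[of B]]) simp
  qed
  finally show ?thesis .
qed

lemma ae_lt_eq_le: "(AEU (\<lambda>\<phi>. (f \<phi>::real) < g \<phi>) \<or> AEU (\<lambda>\<phi>. f \<phi> = g \<phi>)) \<longleftrightarrow> AEU (\<lambda>\<phi>. f \<phi> \<le> g \<phi>)"
proof
  assume "AEU (\<lambda>\<phi>. f \<phi> < g \<phi>) \<or> AEU (\<lambda>\<phi>. f \<phi> = g \<phi>)"
  then show "AEU (\<lambda>\<phi>. f \<phi> \<le> g \<phi>)" by (auto elim!: ae_mono)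
next
  assume a: "AEU (\<lambda>\<phi>. f \<phi> \<le> g \<phi>)"
  show "AEU (\<lambda>\<phi>. f \<phi> < g \<phi>) \<or> AEU (\<lambda>\<phi>. f \<phi> = g \<phi>)"
  proof (cases "AEU (\<lambda>\<phi>. f \<phi> < g \<phi>)")
    case False
    then have "AEU (\<lambda>\<phi>. \<not> f \<phi> < g \<phi>)" by (rule ae_not)
    then have "AEU (\<lambda>\<phi>. f \<phi> = g \<phi>)" by (rule ae_mp2[OF a]) simp
    then show ?thesis by blast
  qed simp
qed

lemma star_rho_eq: "star_rho U = sc (\<lambda>\<phi>. complex_of_real (R \<phi>))"
  by (simp add: star_rho_def)

lemma less_star_real: "star_less U (sc (\<lambda>\<phi>. complex_of_real (f \<phi>))) (sc (\<lambda>\<phi>. complex_of_real (g \<phi>))) \<longleftrightarrow> AEU (\<lambda>\<phi>. f \<phi> < g \<phi>)"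
  unfolding less_star by simp

lemma le_star_real: "star_le U (sc (\<lambda>\<phi>. complex_of_real (f \<phi>))) (sc (\<lambda>\<phi>. complex_of_real (g \<phi>))) \<longleftrightarrow> AEU (\<lambda>\<phi>. f \<phi> \<le> g \<phi>)"
  unfolding star_le_def less_star_real star_eq_iff of_real_eq_iff ae_lt_eq_le ..

lemma abs_star: "star_abs U (sc A) = sc (\<lambda>\<phi>. complex_of_real (cmod (A \<phi>)))"
  unfolding star_abs_def lift1_star ..

lemma rho_pow_star: "star_lift1 U (\<lambda>z. z ^ m) (star_rho U) = sc (\<lambda>\<phi>. complex_of_real (R \<phi> ^ m))"
  unfolding star_rho_eq lift1_star by simp

lemma rho_invpow_star: "star_lift1 U inverse (star_lift1 U (\<lambda>z. z ^ m) (star_rho U)) = sc (\<lambda>\<phi>. complex_of_real (inverse (R \<phi> ^ m)))"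
  unfolding rho_pow_star lift1_star by simp

lemma M_rho_iff: "sc A \<in> M_rho U \<longleftrightarrow> A \<in> Mo"
  unfolding M_rho_def mem_Collect_eq abs_star rho_invpow_star le_star_real mod_iff StarC_def by simp

lemma N_rho_iff: "sc A \<in> N_rho U \<longleftrightarrow> A \<in> Ne"
  unfolding N_rho_def mem_Collect_eq abs_star rho_pow_star less_star_real neg_iff StarC_def by simp

lemma M_rho_E: "\<eta> \<in> M_rho U \<Longrightarrow> (\<And>B. B \<in> Mo \<Longrightarrow> \<eta> = sc B \<Longrightarrow> P) \<Longrightarrow> P"
proof -
  assume a: "\<eta> \<in> M_rho U" "\<And>B. B \<in> Mo \<Longrightarrow> \<eta> = sc B \<Longrightarrow> P"
  then have "\<eta> \<in> StarC U" by (simp add: M_rho_def)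
  then obtain B where "\<eta> = sc B" by (auto simp: StarC_def)
  then show P using a M_rho_iff by auto
qed

lemma mem_rob: "\<eta> \<in> rob_cls U \<zeta> \<longleftrightarrow> \<eta> \<in> M_rho U \<and> star_lift2 U (-) \<zeta> \<eta> \<in> N_rho U"
  unfolding rob_cls_def by (rule mem_Collect_eq)

lemma rob_star: "rob_cls U (sc A) = sc ` cls A"
proof (intro Set.set_eqI iffI)
  fix \<eta> assume "\<eta> \<in> rob_cls U (sc A)"
  then have a: "\<eta> \<in> M_rho U" "star_lift2 U (-) (sc A) \<eta> \<in> N_rho U" unfolding mem_rob by blast+
  obtain B where B: "B \<in> Mo" "\<eta> = sc B" using a(1) by (rule M_rho_E)
  have "sc (\<lambda>\<phi>. A \<phi> - B \<phi>) \<in> N_rho U" using a(2) unfolding B(2) lift2_star .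
  then have "(\<lambda>\<phi>. A \<phi> - B \<phi>) \<in> Ne" unfolding N_rho_iff .
  then have "B \<in> cls A" unfolding mem_cls using B(1) by blast
  then show "\<eta> \<in> sc ` cls A" unfolding B(2) by (rule imageI)
next
  fix \<eta> assume "\<eta> \<in> sc ` cls A"
  then obtain B where B: "B \<in> cls A" "\<eta> = sc B" by blast
  then have B': "B \<in> Mo" "(\<lambda>\<phi>. A \<phi> - B \<phi>) \<in> Ne" unfolding mem_cls by blast+
  have "sc B \<in> M_rho U" unfolding M_rho_iff by (rule B'(1))
  moreover have "star_lift2 U (-) (sc A) (sc B) \<in> N_rho U" unfolding lift2_star N_rho_iff by (rule B'(2))
  ultimately show "\<eta> \<in> rob_cls U (sc A)" unfolding mem_rob B(2) by blast
qed

lemma mem_cls_eq: "A' \<in> cls A \<Longrightarrow> cls A' = cls A"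
  unfolding mem_cls by (rule cls_eqI, rule neg_swap) blast

lemma Phi_cls: "A \<in> Mo \<Longrightarrow> Phi U (cls A) = sc ` cls A"
  unfolding Phi_def rob_star by (simp add: cls_rep)

lemma rep_Phi: assumes "A \<in> Mo" obtains A' where "A' \<in> cls A" "rep (sc ` cls A) = sc A'"
proof -
  have "rep (sc ` cls A) \<in> sc ` cls A" unfolding rep_def by (rule someI[of _ "sc A"]) (use cls_self[OF assms] in blast)
  then show ?thesis using that by blast
qed

lemma Phi_inj: "A \<in> Mo \<Longrightarrow> B \<in> Mo \<Longrightarrow> sc ` cls A = sc ` cls B \<Longrightarrow> cls A = cls B"
proof -
  assume a: "A \<in> Mo" "B \<in> Mo" "sc ` cls A = sc ` cls B"
  then have "sc A \<in> sc ` cls B" using cls_self by blast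
  then obtain B' where B': "B' \<in> cls B" "sc A = sc B'" by blast
  then have "(\<lambda>\<phi>. A \<phi> - B' \<phi>) \<in> Ne" unfolding star_eq_iff by (intro neg_ae0) (rule ae_mono, auto)
  moreover have "(\<lambda>\<phi>. B' \<phi> - B \<phi>) \<in> Ne" using B' unfolding mem_cls using neg_swap by blast
  ultimately show ?thesis by (intro cls_eqI) (rule neg_trans)
qed

lemma rob_op:
  assumes "A \<in> Mo" "B \<in> Mo"
    and opcls: "\<And>A B. A \<in> Mo \<Longrightarrow> B \<in> Mo \<Longrightarrow> F (cls A) (cls B) = cls (\<lambda>\<phi>. f (A \<phi>) (B \<phi>))"
  shows "rob_cls U (star_lift2 U f (rep (sc ` cls A)) (rep (sc ` cls B))) = sc ` cls (\<lambda>\<phi>. f (A \<phi>) (B \<phi>))"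
proof -
  obtain A' where A': "A' \<in> cls A" "rep (sc ` cls A) = sc A'" using rep_Phi[OF assms(1)] by blast
  obtain B' where B': "B' \<in> cls B" "rep (sc ` cls B) = sc B'" using rep_Phi[OF assms(2)] by blast
  have m: "A' \<in> Mo" "B' \<in> Mo" using A' B' by (auto simp: mem_cls)
  have "cls (\<lambda>\<phi>. f (A' \<phi>) (B' \<phi>)) = F (cls A') (cls B')" using opcls[OF m] by simp
  also have "\<dots> = F (cls A) (cls B)" using mem_cls_eq A' B' by simp
  also have "\<dots> = cls (\<lambda>\<phi>. f (A \<phi>) (B \<phi>))" using opcls[OF assms(1,2)] .
  finally show ?thesis using A' B' by (simp add: lift2_star rob_star)
qed

lemma RobC_eq: "RobC U = Phi U ` AsymC U"
proof (intro Set.set_eqI iffI)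
  fix x assume "x \<in> RobC U"
  then obtain \<eta> where "\<eta> \<in> M_rho U" "x = rob_cls U \<eta>" by (auto simp: RobC_def)
  then obtain B where "B \<in> Mo" "x = rob_cls U (sc B)" by (auto elim: M_rho_E)
  then show "x \<in> Phi U ` AsymC U" using Phi_cls AsymC_I rob_star by (metis image_eqI)
next
  fix x assume "x \<in> Phi U ` AsymC U"
  then obtain B where "B \<in> Mo" "x = Phi U (cls B)" by (auto elim!: AsymC_E)
  then show "x \<in> RobC U" unfolding RobC_def using Phi_cls M_rho_iff rob_star by (metis image_eqI)
qed

lemma AsymR_E: "X \<in> AsymR U \<Longrightarrow> (\<And>A. A \<in> Mo \<Longrightarrow> realnet A \<Longrightarrow> X = cls A \<Longrightarrow> P) \<Longrightarrow> P"
  unfolding AsymR_def by blast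

lemma RobR_eq: "RobR U = Phi U ` AsymR U"
proof (intro Set.set_eqI iffI)
  fix x assume "x \<in> RobR U"
  then obtain \<eta> where "\<eta> \<in> M_rho U" "\<eta> \<in> StarR U" "x = rob_cls U \<eta>" by (auto simp: RobR_def)
  then obtain B where "B \<in> Mo" "realnet B" "x = rob_cls U (sc B)" by (auto simp: StarR_def M_rho_iff)
  then show "x \<in> Phi U ` AsymR U" unfolding AsymR_def using Phi_cls rob_star by (metis IntI image_eqI mem_Collect_eq)
next
  fix x assume "x \<in> Phi U ` AsymR U"
  then obtain B where "B \<in> Mo" "realnet B" "x = Phi U (cls B)" by (auto elim!: AsymR_E)
  then show "x \<in> RobR U" unfolding RobR_def StarR_def using Phi_cls M_rho_iff rob_star
    by (metis IntI image_eqI mem_Collect_eq)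
qed

lemma inj_Phi: "inj_on (Phi U) (AsymC U)"
proof
  fix x y assume "x \<in> AsymC U" "y \<in> AsymC U" "Phi U x = Phi U y"
  then obtain A B where "A \<in> Mo" "B \<in> Mo" "x = cls A" "y = cls B" "sc ` cls A = sc ` cls B"
    by (auto elim!: AsymC_E simp: Phi_cls)
  then show "x = y" using Phi_inj by blast
qed

lemma AsymR_sub: "AsymR U \<subseteq> AsymC U"
  unfolding AsymR_def AsymC_def by auto

lemma Phi_iso: "Phi U \<in> ring_iso (asym_ring U) (rob_ring U)"
proof (rule ring_iso_memI)
  fix x assume "x \<in> carrier (asym_ring U)"
  then show "Phi U x \<in> carrier (rob_ring U)" by (simp add: rob_ring_def RobC_eq)
next
  fix x y assume "x \<in> carrier (asym_ring U)" "y \<in> carrier (asym_ring U)"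
  then obtain A B where ab: "A \<in> Mo" "B \<in> Mo" "x = cls A" "y = cls B" by (auto elim!: AsymC_E)
  show "Phi U (x \<otimes>\<^bsub>asym_ring U\<^esub> y) = Phi U x \<otimes>\<^bsub>rob_ring U\<^esub> Phi U y"
    using ab rob_op[where F = "mult (asym_ring U)" and f = "(*)", OF ab(1,2) mult_cls] by (simp add: mult_cls Phi_cls mod_mult rob_ring_def)
  show "Phi U (x \<oplus>\<^bsub>asym_ring U\<^esub> y) = Phi U x \<oplus>\<^bsub>rob_ring U\<^esub> Phi U y"
    using ab rob_op[where F = "add (asym_ring U)" and f = "(+)", OF ab(1,2) add_cls] by (simp add: add_cls Phi_cls mod_add rob_ring_def)
next
  show "Phi U \<one>\<^bsub>asym_ring U\<^esub> = \<one>\<^bsub>rob_ring U\<^esub>"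
    by (simp add: Phi_cls mod_const rob_ring_def star_const_def rob_star)
next
  show "bij_betw (Phi U) (carrier (asym_ring U)) (carrier (rob_ring U))"
    by (simp add: rob_ring_def RobC_eq bij_betw_def inj_Phi)
qed

lemma field_rob: "field (rob_ring U)"
proof -
  have "field (rob_ring U \<lparr>zero := Phi U \<zero>\<^bsub>asym_ring U\<^esub>\<rparr>)"
    by (rule field.ring_iso_imp_img_field[OF field_asym Phi_iso])
  moreover have "Phi U \<zero>\<^bsub>asym_ring U\<^esub> = \<zero>\<^bsub>rob_ring U\<^esub>"
    by (simp add: Phi_cls mod_const rob_ring_def star_const_def rob_star)
  ultimately show ?thesis by simp
qed


end

lemma pw_half: "0 < (r::real) \<Longrightarrow> r \<le> 1/2 \<Longrightarrow> r ^ Suc p \<le> r ^ p / 2"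
proof -
  assume a: "0 < r" "r \<le> 1/2"
  have "r * r ^ p \<le> 1/2 * r ^ p" using a by (intro mult_right_mono) auto
  then show ?thesis by simp
qed

context setting begin

definition ppos :: "(('a \<Rightarrow> complex) \<Rightarrow> real) \<Rightarrow> bool" where
  "ppos D \<longleftrightarrow> (\<exists>p. AEU (\<lambda>\<phi>. R \<phi> ^ p < D \<phi>))"

lemma ppos_mono: "ppos D \<Longrightarrow> AEU (\<lambda>\<phi>. D \<phi> \<le> D' \<phi>) \<Longrightarrow> ppos D'"
proof -
  assume a: "ppos D" "AEU (\<lambda>\<phi>. D \<phi> \<le> D' \<phi>)"
  then obtain p where p: "AEU (\<lambda>\<phi>. R \<phi> ^ p < D \<phi>)" unfolding ppos_def by blast
  have "AEU (\<lambda>\<phi>. R \<phi> ^ p < D' \<phi>)" by (rule ae_mp2[OF p a(2)]) auto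
  then show ?thesis unfolding ppos_def by blast
qed

lemma ppos_neg: assumes "ppos D" "N \<in> Ne" "AEU (\<lambda>\<phi>. \<bar>D' \<phi> - D \<phi>\<bar> \<le> cmod (N \<phi>))" shows "ppos D'"
proof -
  obtain p where p: "AEU (\<lambda>\<phi>. R \<phi> ^ p < D \<phi>)" using assms(1) unfolding ppos_def by blast
  have n: "AEU (\<lambda>\<phi>. cmod (N \<phi>) < R \<phi> ^ Suc p)" using assms(2) unfolding neg_iff by blast
  have "AEU (\<lambda>\<phi>. R \<phi> ^ Suc p < D' \<phi>)"
  proof (rule ae_mp4[OF p n assms(3) ae_R2])
    fix \<phi> assume c: "R \<phi> ^ p < D \<phi>" "cmod (N \<phi>) < R \<phi> ^ Suc p" "\<bar>D' \<phi> - D \<phi>\<bar> \<le> cmod (N \<phi>)"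
      "0 < R \<phi> \<and> R \<phi> \<le> 1 / 2"
    have "R \<phi> ^ Suc p \<le> R \<phi> ^ p / 2" using c(4) pw_half by blast
    then show "R \<phi> ^ Suc p < D' \<phi>" using c by linarith
  qed
  then show ?thesis unfolding ppos_def by blast
qed

lemma ppos_min: assumes "ppos D1" "ppos D2" shows "ppos (\<lambda>\<phi>. min (D1 \<phi>) (D2 \<phi>))"
proof -
  obtain p1 p2 where p: "AEU (\<lambda>\<phi>. R \<phi> ^ p1 < D1 \<phi>)" "AEU (\<lambda>\<phi>. R \<phi> ^ p2 < D2 \<phi>)"
    using assms unfolding ppos_def by blast
  have "AEU (\<lambda>\<phi>. R \<phi> ^ (p1 + p2) < min (D1 \<phi>) (D2 \<phi>))"
  proof (rule ae_mp3[OF p ae_R2'])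
    fix \<phi> assume c: "R \<phi> ^ p1 < D1 \<phi>" "R \<phi> ^ p2 < D2 \<phi>" "0 < R \<phi> \<and> R \<phi> \<le> 1"
    have "R \<phi> ^ (p1 + p2) \<le> R \<phi> ^ p1" "R \<phi> ^ (p1 + p2) \<le> R \<phi> ^ p2"
      using c(3) by (auto intro!: power_decreasing)
    then show "R \<phi> ^ (p1 + p2) < min (D1 \<phi>) (D2 \<phi>)" using c by auto
  qed
  then show ?thesis unfolding ppos_def by blast
qed

lemma ppos_pos: "ppos D \<Longrightarrow> AEU (\<lambda>\<phi>. 0 < D \<phi>)"
proof -
  assume "ppos D"
  then obtain p where p: "AEU (\<lambda>\<phi>. R \<phi> ^ p < D \<phi>)" unfolding ppos_def by blast
  show ?thesis by (rule ae_mp2[OF p ae_R2]) (auto intro: less_trans[OF zero_less_power])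
qed

lemma ppos_notneg: assumes "ppos D" "AEU (\<lambda>\<phi>. D \<phi> \<le> cmod (C \<phi>))" shows "C \<notin> Ne"
proof
  assume "C \<in> Ne"
  obtain p where p: "AEU (\<lambda>\<phi>. R \<phi> ^ p < D \<phi>)" using assms(1) unfolding ppos_def by blast
  have n: "AEU (\<lambda>\<phi>. cmod (C \<phi>) < R \<phi> ^ p)" using \<open>C \<in> Ne\<close> unfolding neg_iff by blast
  have "AEU (\<lambda>_. False)" by (rule ae_mp3[OF p n assms(2)]) auto
  then show False using ae_False by blast
qed

lemma realnet_Im: "realnet A \<Longrightarrow> \<phi> \<in> T \<Longrightarrow> Im (A \<phi>) = 0"
  unfolding realnet_def complex_is_Real_iff by blast

lemma asym_const0: "asym_const U 0 = cls (\<lambda>_. 0)"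
  by (simp add: asym_const_def)

lemma pos_cls: assumes C: "C \<in> Mo"
  shows "asym_pos U (cls C) \<longleftrightarrow> (\<lambda>\<phi>. complex_of_real (Im (C \<phi>))) \<in> Ne \<and> ppos (\<lambda>\<phi>. Re (C \<phi>))"
proof
  assume a: "asym_pos U (cls C)"
  then have nz: "cls C \<noteq> cls (\<lambda>_. 0)" and ex: "\<exists>A\<in>cls C. realnet A \<and> AEU (\<lambda>\<phi>. Re (A \<phi>) > 0)"
    unfolding asym_pos_def asym_const0 by blast+
  then obtain A where A: "A \<in> cls C" "realnet A" "AEU (\<lambda>\<phi>. Re (A \<phi>) > 0)" by blast
  have Am: "A \<in> Mo" and CA: "(\<lambda>\<phi>. C \<phi> - A \<phi>) \<in> Ne" using A(1) unfolding mem_cls by blast+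
  have "C \<notin> Ne" using nz cls_zero_iff[OF C] by blast
  have "A \<notin> Ne"
  proof
    assume "A \<in> Ne"
    then have "(\<lambda>\<phi>. (C \<phi> - A \<phi>) + A \<phi>) \<in> Ne" using CA by (intro neg_add)
    then have "C \<in> Ne" by (rule neg_cong) simp
    then show False using \<open>C \<notin> Ne\<close> by blast
  qed
  then obtain p where p: "AEU (\<lambda>\<phi>. R \<phi> ^ p \<le> cmod (A \<phi>))" using nonneg_bound by blast
  have "AEU (\<lambda>\<phi>. R \<phi> ^ Suc p < Re (A \<phi>))"
  proof (rule ae_mp3[OF p A(3) ae_R2])
    fix \<phi> assume c: "\<phi> \<in> T" "R \<phi> ^ p \<le> cmod (A \<phi>)" "Re (A \<phi>) > 0" "0 < R \<phi> \<and> R \<phi> \<le> 1 / 2"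
    have "Im (A \<phi>) = 0" using realnet_Im[OF A(2) c(1)] .
    then have "cmod (A \<phi>) = Re (A \<phi>)" using c(3) by (simp add: norm_complex_def)
    moreover have "R \<phi> ^ Suc p \<le> R \<phi> ^ p / 2" using c(4) pw_half by blast
    moreover have "0 < R \<phi> ^ p" using c(4) by simp
    ultimately show "R \<phi> ^ Suc p < Re (A \<phi>)" using c(2) by linarith
  qed
  then have pA: "ppos (\<lambda>\<phi>. Re (A \<phi>))" unfolding ppos_def by blast
  show "(\<lambda>\<phi>. complex_of_real (Im (C \<phi>))) \<in> Ne \<and> ppos (\<lambda>\<phi>. Re (C \<phi>))"
  proof
    show "(\<lambda>\<phi>. complex_of_real (Im (C \<phi>))) \<in> Ne"
    proof (rule neg_bound[OF CA])
      show "AEU (\<lambda>\<phi>. cmod (complex_of_real (Im (C \<phi>))) \<le> cmod (C \<phi> - A \<phi>))"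
      proof (rule aeI)
        fix \<phi> assume "\<phi> \<in> T"
        then have "Im (A \<phi>) = 0" using realnet_Im[OF A(2)] by blast
        then show "cmod (complex_of_real (Im (C \<phi>))) \<le> cmod (C \<phi> - A \<phi>)"
          using abs_Im_le_cmod[of "C \<phi> - A \<phi>"] by simp
      qed
    qed
    show "ppos (\<lambda>\<phi>. Re (C \<phi>))"
    proof (rule ppos_neg[OF pA CA])
      show "AEU (\<lambda>\<phi>. \<bar>Re (C \<phi>) - Re (A \<phi>)\<bar> \<le> cmod (C \<phi> - A \<phi>))"
        by (rule aeI) (metis abs_Re_le_cmod minus_complex.sel(1))
    qed
  qed
next
  assume a: "(\<lambda>\<phi>. complex_of_real (Im (C \<phi>))) \<in> Ne \<and> ppos (\<lambda>\<phi>. Re (C \<phi>))"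
  define D where "D = (\<lambda>\<phi>. complex_of_real (Re (C \<phi>)))"
  have Dm: "D \<in> Mo" unfolding D_def by (rule mod_bound[OF C]) (rule aeI, simp add: abs_Re_le_cmod)
  have "(\<lambda>\<phi>. C \<phi> - D \<phi>) \<in> Ne"
  proof (rule neg_bound[of "\<lambda>\<phi>. complex_of_real (Im (C \<phi>))"])
    show "(\<lambda>\<phi>. complex_of_real (Im (C \<phi>))) \<in> Ne" using a by blast
    show "AEU (\<lambda>\<phi>. cmod (C \<phi> - D \<phi>) \<le> cmod (complex_of_real (Im (C \<phi>))))"
    proof (rule aeI)
      fix \<phi>
      have "C \<phi> - D \<phi> = Complex 0 (Im (C \<phi>))" unfolding D_def by (simp add: complex_eq_iff)
      then show "cmod (C \<phi> - D \<phi>) \<le> cmod (complex_of_real (Im (C \<phi>)))" by (simp add: norm_complex_def)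
    qed
  qed
  then have DC: "D \<in> cls C" unfolding mem_cls using Dm by blast
  have rD: "realnet D" unfolding realnet_def D_def by simp
  have pD: "AEU (\<lambda>\<phi>. Re (D \<phi>) > 0)" unfolding D_def using ppos_pos[of "\<lambda>\<phi>. Re (C \<phi>)"] a by simp
  have "C \<notin> Ne" by (rule ppos_notneg[of "\<lambda>\<phi>. Re (C \<phi>)"]) (use a in \<open>auto intro: aeI complex_Re_le_cmod\<close>)
  then have "cls C \<noteq> cls (\<lambda>_. 0)" using cls_zero_iff[OF C] by blast
  then show "asym_pos U (cls C)" unfolding asym_pos_def asym_const0 using DC rD pD by blast
qed

lemma less_cls: assumes "A \<in> Mo" "B \<in> Mo"
  shows "asym_less U (cls A) (cls B) \<longleftrightarrow>
     (\<lambda>\<phi>. complex_of_real (Im (B \<phi> - A \<phi>))) \<in> Ne \<and> ppos (\<lambda>\<phi>. Re (B \<phi>) - Re (A \<phi>))"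
proof -
  have "asym_less U (cls A) (cls B) \<longleftrightarrow> asym_pos U (cls (\<lambda>\<phi>. B \<phi> - A \<phi>))"
    unfolding asym_less_def minus_cls[OF assms(2,1)] ..
  also have "\<dots> \<longleftrightarrow> (\<lambda>\<phi>. complex_of_real (Im (B \<phi> - A \<phi>))) \<in> Ne \<and> ppos (\<lambda>\<phi>. Re (B \<phi> - A \<phi>))"
    by (rule pos_cls) (intro mod_diff assms)
  finally show ?thesis by simp
qed

lemma less_real_cls: assumes "A \<in> Mo" "B \<in> Mo" "realnet A" "realnet B"
  shows "asym_less U (cls A) (cls B) \<longleftrightarrow> ppos (\<lambda>\<phi>. Re (B \<phi>) - Re (A \<phi>))"
proof -
  have "AEU (\<lambda>\<phi>. complex_of_real (Im (B \<phi> - A \<phi>)) = 0)"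
    by (rule aeI) (simp add: realnet_Im[OF assms(3)] realnet_Im[OF assms(4)])
  then have "(\<lambda>\<phi>. complex_of_real (Im (B \<phi> - A \<phi>))) \<in> Ne" by (rule neg_ae0)
  then show ?thesis unfolding less_cls[OF assms(1,2)] by blast
qed

lemma approx0_cls: assumes C: "C \<in> Mo"
  shows "asym_approx0 U (cls C) \<longleftrightarrow> (\<forall>k::nat. k \<ge> 1 \<longrightarrow> AEU (\<lambda>\<phi>. cmod (C \<phi>) < 1 / real k))"
proof -
  let ?C' = "rep (cls C)"
  have C'm: "?C' \<in> Mo" by (rule rep_mod[OF C])
  have CC': "(\<lambda>\<phi>. C \<phi> - ?C' \<phi>) \<in> Ne" by (rule rep_neg[OF C])
  have absm: "(\<lambda>\<phi>. complex_of_real (cmod (?C' \<phi>))) \<in> Mo" by (rule mod_bound[OF C'm]) (rule aeI, simp)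
  have abs_eq: "asym_abs U (cls C) = cls (\<lambda>\<phi>. complex_of_real (cmod (?C' \<phi>)))"
    by (simp add: asym_abs_def norm_complex_def)
  have step: "asym_less U (asym_abs U (cls C)) (asym_const U (complex_of_real (1 / real n)))
      \<longleftrightarrow> ppos (\<lambda>\<phi>. 1 / real n - cmod (C \<phi>))" for n
  proof -
    have "asym_less U (asym_abs U (cls C)) (asym_const U (complex_of_real (1 / real n)))
      \<longleftrightarrow> ppos (\<lambda>\<phi>. 1 / real n - cmod (?C' \<phi>))"
      unfolding abs_eq asym_const_def
      by (subst less_real_cls[OF absm mod_const]) (auto simp: realnet_def)
    also have "\<dots> \<longleftrightarrow> ppos (\<lambda>\<phi>. 1 / real n - cmod (C \<phi>))"
    proof
      assume "ppos (\<lambda>\<phi>. 1 / real n - cmod (?C' \<phi>))"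
      then show "ppos (\<lambda>\<phi>. 1 / real n - cmod (C \<phi>))"
        by (rule ppos_neg[OF _ CC']) (rule aeI, smt (verit) norm_triangle_ineq2 norm_triangle_ineq3)
    next
      assume "ppos (\<lambda>\<phi>. 1 / real n - cmod (C \<phi>))"
      then show "ppos (\<lambda>\<phi>. 1 / real n - cmod (?C' \<phi>))"
        by (rule ppos_neg[OF _ CC']) (rule aeI, smt (verit) norm_triangle_ineq2 norm_triangle_ineq3)
    qed
    finally show ?thesis .
  qed
  have "asym_approx0 U (cls C) \<longleftrightarrow> (\<forall>n::nat. n \<ge> 1 \<longrightarrow> ppos (\<lambda>\<phi>. 1 / real n - cmod (C \<phi>)))"
    unfolding asym_approx0_def step ..
  also have "\<dots> \<longleftrightarrow> (\<forall>k::nat. k \<ge> 1 \<longrightarrow> AEU (\<lambda>\<phi>. cmod (C \<phi>) < 1 / real k))"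
  proof (intro iffI allI impI)
    fix k :: nat assume a: "\<forall>n::nat. n \<ge> 1 \<longrightarrow> ppos (\<lambda>\<phi>. 1 / real n - cmod (C \<phi>))" "k \<ge> 1"
    then have "AEU (\<lambda>\<phi>. 0 < 1 / real k - cmod (C \<phi>))" by (intro ppos_pos) blast
    then show "AEU (\<lambda>\<phi>. cmod (C \<phi>) < 1 / real k)" by (rule ae_mono) simp
  next
    fix n :: nat assume a: "\<forall>k::nat. k \<ge> 1 \<longrightarrow> AEU (\<lambda>\<phi>. cmod (C \<phi>) < 1 / real k)" "n \<ge> 1"
    have "2 * n \<ge> 1" using a(2) by simp
    then have c: "AEU (\<lambda>\<phi>. cmod (C \<phi>) < 1 / real (2 * n))" using a(1) by blast
    have "AEU (\<lambda>\<phi>. R \<phi> ^ 1 < 1 / real n - cmod (C \<phi>))"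
    proof (rule ae_mp2[OF c ae_R[of "4 * n"]])
      show "1 \<le> 4 * n" using a by simp
      fix \<phi> assume d: "cmod (C \<phi>) < 1 / real (2 * n)" "0 < R \<phi> \<and> R \<phi> \<le> 1 / real (4 * n)"
      have "1 / real (4 * n) < 1 / real (2 * n)" using a(2) by (simp add: divide_simps)
      moreover have "1 / real n - 1 / real (2 * n) = 1 / real (2 * n)" using a(2) by (simp add: divide_simps)
      ultimately show "R \<phi> ^ 1 < 1 / real n - cmod (C \<phi>)" using d by simp
    qed
    then show "ppos (\<lambda>\<phi>. 1 / real n - cmod (C \<phi>))" unfolding ppos_def by blast
  qed
  finally show ?thesis .
qed


end

lemma P1: assumes "0 < (r::real)" "r < 1" "0 < x" "s < ln x / ln r" shows "x < r powr s"
proof -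
  have l: "ln r < 0" using assms by simp
  then have "ln x < s * ln r" using assms(4) by (simp add: divide_simps mult.commute)
  then have "exp (ln x) < exp (s * ln r)" by simp
  then show ?thesis using assms by (simp add: powr_def)
qed

lemma P2: assumes "0 < (r::real)" "r < 1" "0 < x" "ln x / ln r < s" shows "r powr s < x"
proof -
  have l: "ln r < 0" using assms by simp
  then have "s * ln r < ln x" using assms(4) by (simp add: divide_simps mult.commute)
  then have "exp (s * ln r) < exp (ln x)" by simp
  then show ?thesis using assms by (simp add: powr_def)
qed

lemma P3: "0 < (r::real) \<Longrightarrow> r \<le> 1 \<Longrightarrow> s \<le> real k \<Longrightarrow> r ^ k \<le> r powr s"
  using powr_mono'[of s "real k" r] by (simp add: powr_realpow)

lemma SupQ_ge: assumes "\<And>q::rat. real_of_rat q < t \<Longrightarrow> P q"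
  shows "ereal t \<le> Sup {ereal (real_of_rat q) | q. P q}"
proof (rule ccontr)
  let ?S = "Sup {ereal (real_of_rat q) | q. P q}"
  assume "\<not> ereal t \<le> ?S"
  then have "?S < ereal t" by simp
  then obtain z where z: "?S < z" "z < ereal t" using dense by blast
  then have "z \<noteq> \<infinity>" "z \<noteq> -\<infinity>" by auto
  then obtain w where w: "z = ereal w" by (cases z) auto
  then have "w < t" using z by simp
  then obtain q where q: "q \<in> \<rat>" "w < q" "q < t" using Rats_dense_in_real by blast
  then obtain q' where q': "q = real_of_rat q'" by (auto elim: Rats_cases)
  have "P q'" using assms q q' by simp
  then have "ereal q \<le> ?S" using q' by (intro Sup_upper) blast
  then have "ereal q < z" using z(1) by (rule le_less_trans)
  then show False using w q by simp
qed

lemma SupQ_le: assumes "\<And>q::rat. P q \<Longrightarrow> real_of_rat q \<le> t"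
  shows "Sup {ereal (real_of_rat q) | q. P q} \<le> ereal t"
  by (rule Sup_least) (use assms in auto)

lemma SupQ_gt: assumes "ereal t < Sup {ereal (real_of_rat q) | q. P q}"
  obtains q where "P q" "t < real_of_rat q"
  using assms by (auto simp: less_Sup_iff)

context setting begin

lemma ae_small: assumes "0 < \<epsilon>" "0 < c" shows "AEU (\<lambda>\<phi>. R \<phi> powr \<epsilon> < c)"
proof -
  define N :: nat where "N = nat \<lceil>(1 / c) powr (1 / \<epsilon>)\<rceil> + 1"
  have N1: "N \<ge> 1" unfolding N_def by simp
  have Ngt: "(1 / c) powr (1 / \<epsilon>) < real N" unfolding N_def by linarith
  have key: "(1 / real N) powr \<epsilon> < c"
  proof -
    have pos: "0 < (1 / c) powr (1 / \<epsilon>)" using assms by simp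
    have "1 / real N < 1 / (1 / c) powr (1 / \<epsilon>)" using Ngt pos N1 by (intro divide_strict_left_mono mult_pos_pos) auto
    also have "\<dots> = c powr (1 / \<epsilon>)" using assms by (simp add: powr_divide)
    finally have "(1 / real N) powr \<epsilon> < (c powr (1 / \<epsilon>)) powr \<epsilon>"
      using assms N1 by (intro powr_less_mono2) auto
    also have "\<dots> = c" using assms by (simp add: powr_powr)
    finally show ?thesis .
  qed
  show ?thesis
  proof (rule ae_mono[OF ae_R[OF N1]])
    fix \<phi> assume "0 < R \<phi> \<and> R \<phi> \<le> 1 / real N"
    then have "R \<phi> powr \<epsilon> \<le> (1 / real N) powr \<epsilon>" using assms by (intro powr_mono2) auto
    then show "R \<phi> powr \<epsilon> < c" using key by linarith
  qed
qed

definition cond :: "'a net \<Rightarrow> real \<Rightarrow> bool" where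
  "cond B q \<longleftrightarrow> (\<forall>k::nat. k \<ge> 1 \<longrightarrow> AEU (\<lambda>\<phi>. cmod (B \<phi>) / R \<phi> powr q < 1 / real k))"

lemma mod_div_powr: assumes "B \<in> Mo" shows "(\<lambda>\<phi>. B \<phi> / complex_of_real (R \<phi> powr q)) \<in> Mo"
proof -
  obtain m where m: "AEU (\<lambda>\<phi>. cmod (B \<phi>) \<le> inverse (R \<phi> ^ m))" using assms unfolding mod_iff by blast
  define k where "k = nat \<lceil>q\<rceil>"
  have qk: "q \<le> real k" unfolding k_def by linarith
  have "AEU (\<lambda>\<phi>. cmod (B \<phi> / complex_of_real (R \<phi> powr q)) \<le> 1 * inverse (R \<phi> ^ (m + k)))"
  proof (rule ae_mp2[OF m ae_R2'])
    fix \<phi> assume c: "cmod (B \<phi>) \<le> inverse (R \<phi> ^ m)" "0 < R \<phi> \<and> R \<phi> \<le> 1"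
    have "R \<phi> ^ k \<le> R \<phi> powr q" using c qk by (intro P3) auto
    then have i: "inverse (R \<phi> powr q) \<le> inverse (R \<phi> ^ k)" using c by (intro le_imp_inverse_le) auto
    have "cmod (B \<phi> / complex_of_real (R \<phi> powr q)) = cmod (B \<phi>) * inverse (R \<phi> powr q)"
      unfolding norm_divide norm_of_real using c by (simp add: divide_inverse)
    also have "\<dots> \<le> inverse (R \<phi> ^ m) * inverse (R \<phi> ^ k)"
      using c i by (intro mult_mono) auto
    also have "\<dots> = 1 * inverse (R \<phi> ^ (m + k))" by (simp add: power_add)
    finally show "cmod (B \<phi> / complex_of_real (R \<phi> powr q)) \<le> 1 * inverse (R \<phi> ^ (m + k))" .
  qed
  then show ?thesis by (rule modI)
qed

lemma approx0_div: assumes "B \<in> Mo"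
  shows "asym_approx0 U (cls (\<lambda>\<phi>. B \<phi> / complex_of_real (R \<phi> powr q))) \<longleftrightarrow> cond B q"
proof -
  have "asym_approx0 U (cls (\<lambda>\<phi>. B \<phi> / complex_of_real (R \<phi> powr q))) \<longleftrightarrow>
     (\<forall>k::nat. k \<ge> 1 \<longrightarrow> AEU (\<lambda>\<phi>. cmod (B \<phi> / complex_of_real (R \<phi> powr q)) < 1 / real k))"
    by (rule approx0_cls[OF mod_div_powr[OF assms]])
  also have "\<dots> \<longleftrightarrow> cond B q"
    unfolding cond_def by (simp add: norm_divide)
  finally show ?thesis .
qed

lemma L1: assumes "AEU (\<lambda>\<phi>. cmod (B \<phi>) \<le> c * R \<phi> powr t)" "q < t" shows "cond B q"
  unfolding cond_def
proof (intro allI impI)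
  fix k :: nat assume k: "k \<ge> 1"
  have s: "AEU (\<lambda>\<phi>. R \<phi> powr (t - q) < 1 / (real k * (\<bar>c\<bar> + 1)))"
    using k assms(2) by (intro ae_small) auto
  show "AEU (\<lambda>\<phi>. cmod (B \<phi>) / R \<phi> powr q < 1 / real k)"
  proof (rule ae_mp3[OF assms(1) s ae_R2'])
    fix \<phi> assume d: "cmod (B \<phi>) \<le> c * R \<phi> powr t" "R \<phi> powr (t - q) < 1 / (real k * (\<bar>c\<bar> + 1))" "0 < R \<phi> \<and> R \<phi> \<le> 1"
    have pq: "0 < R \<phi> powr q" using d by simp
    have "cmod (B \<phi>) / R \<phi> powr q \<le> c * R \<phi> powr t / R \<phi> powr q" using d pq by (intro divide_right_mono) auto
    also have "\<dots> = c * R \<phi> powr (t - q)" by (simp add: powr_diff)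
    also have "\<dots> \<le> \<bar>c\<bar> * R \<phi> powr (t - q)" by (intro mult_right_mono) auto
    also have "\<dots> \<le> \<bar>c\<bar> * (1 / (real k * (\<bar>c\<bar> + 1)))" using d by (intro mult_left_mono) auto
    also have "\<dots> = (\<bar>c\<bar> / (\<bar>c\<bar> + 1)) * (1 / real k)" by (simp add: field_simps)
    also have "\<dots> < 1 * (1 / real k)" using k by (intro mult_strict_right_mono) auto
    finally show "cmod (B \<phi>) / R \<phi> powr q < 1 / real k" by simp
  qed
qed

lemma L2: "cond B q \<Longrightarrow> AEU (\<lambda>\<phi>. cmod (B \<phi>) < R \<phi> powr q)"
proof -
  assume "cond B q"
  then have a: "AEU (\<lambda>\<phi>. cmod (B \<phi>) / R \<phi> powr q < 1 / real (1::nat))" unfolding cond_def by blast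
  show ?thesis
  proof (rule ae_mp2[OF a ae_R2'])
    fix \<phi> assume "cmod (B \<phi>) / R \<phi> powr q < 1 / real (1::nat)" "0 < R \<phi> \<and> R \<phi> \<le> 1"
    then show "cmod (B \<phi>) < R \<phi> powr q" by (simp add: divide_less_eq)
  qed
qed

lemma L3: assumes "AEU (\<lambda>\<phi>. c * R \<phi> powr t \<le> cmod (B \<phi>))" "t < q" "0 < c" shows "\<not> cond B q"
proof
  assume "cond B q"
  define k :: nat where "k = nat \<lceil>1 / c\<rceil> + 1"
  have k: "k \<ge> 1" "1 / real k < c"
  proof -
    show "k \<ge> 1" unfolding k_def by simp
    have "1 / c < real k" unfolding k_def by linarith
    then have "1 < c * real k" using assms(3) by (simp add: divide_less_eq mult.commute)
    moreover have "0 < real k" unfolding k_def by simp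
    ultimately show "1 / real k < c" by (simp add: divide_less_eq)
  qed
  have a: "AEU (\<lambda>\<phi>. cmod (B \<phi>) / R \<phi> powr q < 1 / real k)" using \<open>cond B q\<close> k unfolding cond_def by blast
  have "AEU (\<lambda>_. False)"
  proof (rule ae_mp3[OF a assms(1) ae_R2'])
    fix \<phi> assume d: "cmod (B \<phi>) / R \<phi> powr q < 1 / real k" "c * R \<phi> powr t \<le> cmod (B \<phi>)" "0 < R \<phi> \<and> R \<phi> \<le> 1"
    have pq: "0 < R \<phi> powr q" using d by simp
    have "1 \<le> R \<phi> powr (t - q)" using d assms(2) powr_mono'[of "t - q" 0 "R \<phi>"] by auto
    then have "c \<le> c * R \<phi> powr (t - q)" using assms(3) by simp
    also have "\<dots> = c * R \<phi> powr t / R \<phi> powr q" by (simp add: powr_diff)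
    also have "\<dots> \<le> cmod (B \<phi>) / R \<phi> powr q" using d pq by (intro divide_right_mono) auto
    finally show False using d k by linarith
  qed
  then show False using ae_False by blast
qed

end

lemma abs_close: "\<bar>x - r1\<bar> < (e::real) \<Longrightarrow> \<bar>x - r2\<bar> < e \<Longrightarrow> \<bar>r1 - r2\<bar> < 2 * e"
  unfolding abs_less_iff by linarith

lemma abs_ltD: "\<bar>x - r\<bar> < (e::real) \<Longrightarrow> r - e < x \<and> x < r + e"
  unfolding abs_less_iff by linarith

lemma small_nat: assumes "0 < (\<delta>::real)" obtains n :: nat where "n \<ge> 1" "1 / real n < \<delta>"
proof -
  obtain n :: nat where n: "1 / \<delta> < real n" using reals_Archimedean2 by blast
  have pos: "0 < real n" using n assms by (smt (verit) divide_pos_pos)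
  then have "1 < \<delta> * real n" using n assms by (simp add: divide_less_eq mult.commute)
  then have "1 / real n < \<delta>" using pos by (simp add: divide_less_eq)
  moreover have "n \<ge> 1" using pos by simp
  ultimately show ?thesis using that by blast
qed

context setting begin

lemma asym_val_cls: assumes "A \<in> Mo" "A \<notin> Ne"
  shows "asym_val U (cls A) = Sup {ereal (real_of_rat q) | q. cond (rep (cls A)) (real_of_rat q)}"
proof -
  have "cls A \<noteq> asym_const U 0" using assms cls_zero_iff asym_const0 by auto
  then show ?thesis unfolding asym_val_def using approx0_div[OF rep_mod[OF assms(1)]] by simp
qed

lemma asym_val_zero: assumes "A \<in> Mo" "A \<in> Ne" shows "asym_val U (cls A) = \<infinity>"
proof -
  have "cls A = asym_const U 0" using assms cls_zero_iff asym_const0 by auto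
  then show ?thesis unfolding asym_val_def by simp
qed

lemma V1: assumes C: "C \<in> Mo" and b: "AEU (\<lambda>\<phi>. cmod (C \<phi>) \<le> R \<phi> ^ n)"
  shows "ereal (real n) \<le> asym_val U (cls C)"
proof (cases "C \<in> Ne")
  case True then show ?thesis using asym_val_zero C by simp
next
  case False
  let ?B = "rep (cls C)"
  have n: "AEU (\<lambda>\<phi>. cmod (C \<phi> - ?B \<phi>) < R \<phi> ^ n)" using rep_neg[OF C] unfolding neg_iff by blast
  have bB: "AEU (\<lambda>\<phi>. cmod (?B \<phi>) \<le> 2 * R \<phi> powr (real n))"
  proof (rule ae_mp3[OF b n ae_R2'])
    fix \<phi> assume c: "cmod (C \<phi>) \<le> R \<phi> ^ n" "cmod (C \<phi> - ?B \<phi>) < R \<phi> ^ n" "0 < R \<phi> \<and> R \<phi> \<le> 1"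
    have "cmod (?B \<phi>) \<le> cmod (C \<phi>) + cmod (C \<phi> - ?B \<phi>)" by (smt (verit) norm_triangle_ineq2 norm_minus_commute)
    then show "cmod (?B \<phi>) \<le> 2 * R \<phi> powr (real n)" using c by (simp add: powr_realpow)
  qed
  have "ereal (real n) \<le> Sup {ereal (real_of_rat q) | q. cond ?B (real_of_rat q)}"
    by (rule SupQ_ge) (rule L1[OF bB])
  then show ?thesis using asym_val_cls[OF C False] by simp
qed

lemma V2: assumes C: "C \<in> Mo" and v: "ereal (real n) < asym_val U (cls C)"
  shows "AEU (\<lambda>\<phi>. cmod (C \<phi>) < R \<phi> ^ n)"
proof (cases "C \<in> Ne")
  case True then show ?thesis unfolding neg_iff by blast
next
  case False
  let ?B = "rep (cls C)"
  have "ereal (real n) < Sup {ereal (real_of_rat q) | q. cond ?B (real_of_rat q)}"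
    using v asym_val_cls[OF C False] by simp
  then obtain q where q: "cond ?B (real_of_rat q)" "real n < real_of_rat q" by (rule SupQ_gt)
  have l: "AEU (\<lambda>\<phi>. cmod (?B \<phi>) < R \<phi> powr (real_of_rat q))" by (rule L2[OF q(1)])
  have sm: "AEU (\<lambda>\<phi>. R \<phi> powr (real_of_rat q - real n) < 1/2)" using q(2) by (intro ae_small) auto
  have n: "AEU (\<lambda>\<phi>. cmod (C \<phi> - ?B \<phi>) < R \<phi> ^ Suc n)" using rep_neg[OF C] unfolding neg_iff by blast
  show ?thesis
  proof (rule ae_mp4[OF l sm n ae_R2])
    fix \<phi> assume c: "cmod (?B \<phi>) < R \<phi> powr (real_of_rat q)" "R \<phi> powr (real_of_rat q - real n) < 1/2"
      "cmod (C \<phi> - ?B \<phi>) < R \<phi> ^ Suc n" "0 < R \<phi> \<and> R \<phi> \<le> 1 / 2"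
    have e: "R \<phi> powr (real_of_rat q) = R \<phi> ^ n * R \<phi> powr (real_of_rat q - real n)"
      using c(4) by (simp add: powr_realpow[symmetric] powr_add[symmetric])
    have pn: "0 < R \<phi> ^ n" using c(4) by simp
    have "R \<phi> ^ n * R \<phi> powr (real_of_rat q - real n) \<le> R \<phi> ^ n * (1/2)"
      using c(2) pn by (intro mult_left_mono) auto
    moreover have "R \<phi> ^ Suc n \<le> R \<phi> ^ n / 2" using c(4) pw_half by blast
    moreover have "cmod (C \<phi>) \<le> cmod (?B \<phi>) + cmod (C \<phi> - ?B \<phi>)" by (smt (verit) norm_triangle_ineq2)
    ultimately show "cmod (C \<phi>) < R \<phi> ^ n" using c e by linarith
  qed
qed

lemma st_star: "star_st U (sc (\<lambda>\<phi>. complex_of_real (L \<phi>))) = (THE r. \<forall>n::nat. n \<ge> 1 \<longrightarrow> AEU (\<lambda>\<phi>. \<bar>L \<phi> - r\<bar> < 1 / real n))"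
proof -
  have "star_less U (star_abs U (star_lift2 U (-) (sc (\<lambda>\<phi>. complex_of_real (L \<phi>))) (star_const U (complex_of_real r))))
       (star_const U (complex_of_real (1 / real n))) \<longleftrightarrow> AEU (\<lambda>\<phi>. \<bar>L \<phi> - r\<bar> < 1 / real n)" for r n
  proof -
    have "star_abs U (star_lift2 U (-) (sc (\<lambda>\<phi>. complex_of_real (L \<phi>))) (star_const U (complex_of_real r)))
       = sc (\<lambda>\<phi>. complex_of_real \<bar>L \<phi> - r\<bar>)"
      unfolding star_const_def lift2_star abs_star by (simp flip: of_real_diff)
    then show ?thesis using less_star_real[of "\<lambda>\<phi>. \<bar>L \<phi> - r\<bar>" "\<lambda>_. 1 / real n"]
      unfolding star_const_def by simp
  qed
  then show ?thesis unfolding star_st_def by simp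
qed

lemma st_exists: assumes "AEU (\<lambda>\<phi>. a \<le> L \<phi> \<and> L \<phi> \<le> b)"
  shows "\<exists>!r. \<forall>n::nat. n \<ge> 1 \<longrightarrow> AEU (\<lambda>\<phi>. \<bar>L \<phi> - r\<bar> < 1 / real n)"
proof (rule ex_ex1I)
  define S where "S = {s. AEU (\<lambda>\<phi>. s < L \<phi>)}"
  have aS: "a - 1 \<in> S" unfolding S_def mem_Collect_eq by (rule ae_mono[OF assms]) auto
  have bS: "s \<le> b" if "s \<in> S" for s
  proof (rule ccontr)
    assume "\<not> s \<le> b"
    have "AEU (\<lambda>_. False)" by (rule ae_mp2[OF assms that[unfolded S_def mem_Collect_eq]]) (use \<open>\<not> s \<le> b\<close> in auto)
    then show False using ae_False by blast
  qed
  have bdd: "bdd_above S" by (rule bdd_aboveI[of S b]) (rule bS)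
  have ne: "S \<noteq> {}" using aS by blast
  define r where "r = Sup S"
  have "\<forall>n::nat. n \<ge> 1 \<longrightarrow> AEU (\<lambda>\<phi>. \<bar>L \<phi> - r\<bar> < 1 / real n)"
  proof (intro allI impI)
    fix n :: nat assume n: "n \<ge> 1"
    have e: "0 < 1 / (2 * real n)" using n by simp
    have "r - 1 / (2 * real n) < Sup S" unfolding r_def using e by simp
    then obtain s where s: "s \<in> S" "r - 1 / (2 * real n) < s" using less_cSup_iff[OF ne bdd] by blast
    have lo: "AEU (\<lambda>\<phi>. r - 1 / (2 * real n) < L \<phi>)"
      by (rule ae_mono[OF s(1)[unfolded S_def mem_Collect_eq]]) (use s(2) in auto)
    have "r + 1 / (2 * real n) \<notin> S"
    proof
      assume "r + 1 / (2 * real n) \<in> S"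
      then have "r + 1 / (2 * real n) \<le> Sup S" using cSup_upper bdd by blast
      then show False unfolding r_def using e by simp
    qed
    then have "\<not> AEU (\<lambda>\<phi>. r + 1 / (2 * real n) < L \<phi>)" unfolding S_def by simp
    then have hi: "AEU (\<lambda>\<phi>. \<not> r + 1 / (2 * real n) < L \<phi>)" by (rule ae_not)
    have "1 / (2 * real n) < 1 / real n" using n by (simp add: divide_strict_left_mono)
    then show "AEU (\<lambda>\<phi>. \<bar>L \<phi> - r\<bar> < 1 / real n)"
      by (intro ae_mp2[OF lo hi]) auto
  qed
  then show "\<exists>r. \<forall>n::nat. n \<ge> 1 \<longrightarrow> AEU (\<lambda>\<phi>. \<bar>L \<phi> - r\<bar> < 1 / real n)" by blast
next
  fix r1 r2
  assume r1: "\<forall>n::nat. n \<ge> 1 \<longrightarrow> AEU (\<lambda>\<phi>. \<bar>L \<phi> - r1\<bar> < 1 / real n)"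
    and r2: "\<forall>n::nat. n \<ge> 1 \<longrightarrow> AEU (\<lambda>\<phi>. \<bar>L \<phi> - r2\<bar> < 1 / real n)"
  show "r1 = r2"
  proof (rule ccontr)
    assume "r1 \<noteq> r2"
    then have "0 < \<bar>r1 - r2\<bar> / 2" by simp
    then obtain n :: nat where n: "n \<ge> 1" "1 / real n < \<bar>r1 - r2\<bar> / 2" by (rule small_nat)
    have "AEU (\<lambda>_. False)"
    proof (rule ae_mp2[OF r1[rule_format, OF n(1)] r2[rule_format, OF n(1)]])
      fix \<phi> assume "\<bar>L \<phi> - r1\<bar> < 1 / real n" "\<bar>L \<phi> - r2\<bar> < 1 / real n"
      then have "\<bar>r1 - r2\<bar> < 2 * (1 / real n)" by (rule abs_close)
      then show False using n(2) by argo
    qed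
    then show False using ae_False by blast
  qed
qed

lemma star_ln_abs: "star_ln U (star_abs U (sc A)) = sc (\<lambda>\<phi>. complex_of_real (ln (cmod (A \<phi>))))"
  unfolding star_ln_def abs_star lift1_star by simp

lemma star_ln_rho: "star_ln U (star_rho U) = sc (\<lambda>\<phi>. complex_of_real (ln (R \<phi>)))"
  unfolding star_ln_def star_rho_eq lift1_star by simp

lemma rob_zero_eq: "rob_cls U (star_const U 0) = sc ` cls (\<lambda>_. 0)"
  unfolding star_const_def rob_star ..

lemma val_eq: assumes A: "A \<in> Mo" shows "rob_val U (Phi U (cls A)) = asym_val U (cls A)"
proof (cases "A \<in> Ne")
  case True
  then have "cls A = cls (\<lambda>_. 0)" using cls_zero_iff[OF A] by blast
  then have "Phi U (cls A) = rob_cls U (star_const U 0)" using Phi_cls[OF A] rob_zero_eq by simp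
  then show ?thesis using asym_val_zero[OF A True] by (simp add: rob_val_def)
next
  case False
  have nz: "Phi U (cls A) \<noteq> rob_cls U (star_const U 0)"
  proof
    assume "Phi U (cls A) = rob_cls U (star_const U 0)"
    then have "sc ` cls A = sc ` cls (\<lambda>_. 0)" using Phi_cls[OF A] rob_zero_eq by simp
    then have "cls A = cls (\<lambda>_. 0)" by (rule Phi_inj[OF A mod_const])
    then show False using cls_zero_iff[OF A] False by blast
  qed
  obtain A' where A': "A' \<in> cls A" "rep (sc ` cls A) = sc A'" by (rule rep_Phi[OF A])
  have A'm: "A' \<in> Mo" using A' mem_cls by blast
  have AA': "(\<lambda>\<phi>. A \<phi> - A' \<phi>) \<in> Ne" using A' mem_cls by blast
  have A'n: "A' \<notin> Ne"
  proof
    assume "A' \<in> Ne"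
    then have "(\<lambda>\<phi>. (A \<phi> - A' \<phi>) + A' \<phi>) \<in> Ne" using AA' by (intro neg_add)
    then have "A \<in> Ne" by (rule neg_cong) simp
    then show False using False by blast
  qed
  define L where "L = (\<lambda>\<phi>. ln (cmod (A' \<phi>)) / ln (R \<phi>))"
  have rv: "rob_val U (Phi U (cls A)) = ereal (THE r. \<forall>n::nat. n \<ge> 1 \<longrightarrow> AEU (\<lambda>\<phi>. \<bar>L \<phi> - r\<bar> < 1 / real n))"
  proof -
    have eq: "star_lift2 U (/) (star_ln U (star_abs U (rep (Phi U (cls A))))) (star_ln U (star_rho U))
        = sc (\<lambda>\<phi>. complex_of_real (L \<phi>))"
      unfolding Phi_cls[OF A] A'(2) star_ln_abs star_ln_rho lift2_star L_def by simp
    have "rob_val U (Phi U (cls A)) = ereal (star_st U (star_lift2 U (/) (star_ln U (star_abs U (rep (Phi U (cls A))))) (star_ln U (star_rho U))))"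
      using nz by (simp add: rob_val_def)
    also have "\<dots> = ereal (THE r. \<forall>n::nat. n \<ge> 1 \<longrightarrow> AEU (\<lambda>\<phi>. \<bar>L \<phi> - r\<bar> < 1 / real n))"
      unfolding eq st_star ..
    finally show ?thesis .
  qed
  obtain p where p: "AEU (\<lambda>\<phi>. R \<phi> ^ p \<le> cmod (A' \<phi>))" using nonneg_bound[OF A'n] by blast
  obtain m where m: "AEU (\<lambda>\<phi>. cmod (A' \<phi>) \<le> inverse (R \<phi> ^ m))" using A'm unfolding mod_iff by blast
  have posA: "AEU (\<lambda>\<phi>. 0 < cmod (A' \<phi>))"
  proof (rule ae_mp2[OF p ae_R2])
    fix \<phi> assume c: "R \<phi> ^ p \<le> cmod (A' \<phi>)" "0 < R \<phi> \<and> R \<phi> \<le> 1 / 2"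
    have "0 < R \<phi> ^ p" using c(2) by simp
    then show "0 < cmod (A' \<phi>)" using c(1) by linarith
  qed
  have bnd: "AEU (\<lambda>\<phi>. - real m \<le> L \<phi> \<and> L \<phi> \<le> real p)"
  proof (rule ae_mp3[OF p m ae_R2])
    fix \<phi> assume c: "R \<phi> ^ p \<le> cmod (A' \<phi>)" "cmod (A' \<phi>) \<le> inverse (R \<phi> ^ m)" "0 < R \<phi> \<and> R \<phi> \<le> 1 / 2"
    have lr: "ln (R \<phi>) < 0" using c(3) by simp
    have pp: "0 < R \<phi> ^ p" using c(3) by simp
    have cp: "0 < cmod (A' \<phi>)" using c(1) pp by linarith
    have "ln (R \<phi> ^ p) \<le> ln (cmod (A' \<phi>))" using c(1) pp cp by (subst ln_le_cancel_iff) auto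
    then have l1: "real p * ln (R \<phi>) \<le> ln (cmod (A' \<phi>))" using c(3) by (simp add: ln_realpow)
    have "ln (cmod (A' \<phi>)) \<le> ln (inverse (R \<phi> ^ m))" using c(2,3) cp by (subst ln_le_cancel_iff) auto
    then have l2: "ln (cmod (A' \<phi>)) \<le> - (real m * ln (R \<phi>))" using c(3) by (simp add: ln_inverse ln_realpow)
    show "- real m \<le> L \<phi> \<and> L \<phi> \<le> real p"
      unfolding L_def using l1 l2 lr by (simp add: divide_simps)
  qed
  obtain r0 where r0: "\<forall>n::nat. n \<ge> 1 \<longrightarrow> AEU (\<lambda>\<phi>. \<bar>L \<phi> - r0\<bar> < 1 / real n)"
    and r0u: "\<And>r. \<forall>n::nat. n \<ge> 1 \<longrightarrow> AEU (\<lambda>\<phi>. \<bar>L \<phi> - r\<bar> < 1 / real n) \<Longrightarrow> r = r0"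
    using st_exists[OF bnd] by blast
  have the: "(THE r. \<forall>n::nat. n \<ge> 1 \<longrightarrow> AEU (\<lambda>\<phi>. \<bar>L \<phi> - r\<bar> < 1 / real n)) = r0"
    using r0 r0u by (intro the_equality) blast+
  let ?B = "rep (cls A)"
  have BA': "(\<lambda>\<phi>. ?B \<phi> - A' \<phi>) \<in> Ne"
    using neg_trans[OF rep_neg'[OF A] AA'] .
  have lower: "cond ?B q" if q: "q < r0" for q
  proof -
    define \<delta> where "\<delta> = (r0 - q) / 2"
    have d: "0 < \<delta>" using q unfolding \<delta>_def by simp
    obtain n :: nat where n: "n \<ge> 1" "1 / real n < \<delta>" by (rule small_nat[OF d])
    define P :: nat where "P = nat \<lceil>q + \<delta>\<rceil>"
    have P: "q + \<delta> \<le> real P" unfolding P_def by linarith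
    have nb: "AEU (\<lambda>\<phi>. cmod (?B \<phi> - A' \<phi>) < R \<phi> ^ P)" using BA' unfolding neg_iff by blast
    have "AEU (\<lambda>\<phi>. cmod (?B \<phi>) \<le> 2 * R \<phi> powr (q + \<delta>))"
    proof (rule ae_mp4[OF r0[rule_format, OF n(1)] nb posA ae_R2])
      fix \<phi> assume c: "\<bar>L \<phi> - r0\<bar> < 1 / real n" "cmod (?B \<phi> - A' \<phi>) < R \<phi> ^ P" "0 < cmod (A' \<phi>)"
        "0 < R \<phi> \<and> R \<phi> \<le> 1 / 2"
      have "q + \<delta> < L \<phi>" using abs_ltD[OF c(1)] n(2) unfolding \<delta>_def by argo
      then have "cmod (A' \<phi>) < R \<phi> powr (q + \<delta>)" using c(3,4) unfolding L_def by (intro P1) auto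
      moreover have "R \<phi> ^ P \<le> R \<phi> powr (q + \<delta>)" using c(4) P by (intro P3) auto
      moreover have "cmod (?B \<phi>) \<le> cmod (A' \<phi>) + cmod (?B \<phi> - A' \<phi>)" by (smt (verit) norm_triangle_ineq2)
      ultimately show "cmod (?B \<phi>) \<le> 2 * R \<phi> powr (q + \<delta>)" using c(2) by linarith
    qed
    then show ?thesis by (rule L1) (use d in simp)
  qed
  have upper: "q \<le> r0" if cq: "cond ?B q" for q
  proof (rule ccontr)
    assume "\<not> q \<le> r0"
    define \<delta> where "\<delta> = (q - r0) / 2"
    have d: "0 < \<delta>" using \<open>\<not> q \<le> r0\<close> unfolding \<delta>_def by simp
    obtain n :: nat where n: "n \<ge> 1" "1 / real n < \<delta>" by (rule small_nat[OF d])
    define P :: nat where "P = nat \<lceil>q\<rceil>"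
    have P: "q \<le> real P" unfolding P_def by linarith
    have nb: "AEU (\<lambda>\<phi>. cmod (?B \<phi> - A' \<phi>) < R \<phi> ^ P)" using BA' unfolding neg_iff by blast
    have sm: "AEU (\<lambda>\<phi>. R \<phi> powr \<delta> < 1 / 2)" using d by (intro ae_small) auto
    have "AEU (\<lambda>\<phi>. 1 / 2 * R \<phi> powr (q - \<delta>) \<le> cmod (?B \<phi>))"
    proof (rule ae_mp4[OF r0[rule_format, OF n(1)] nb ae_conj[OF posA sm] ae_R2])
      fix \<phi> assume c: "\<bar>L \<phi> - r0\<bar> < 1 / real n" "cmod (?B \<phi> - A' \<phi>) < R \<phi> ^ P"
        "0 < cmod (A' \<phi>) \<and> R \<phi> powr \<delta> < 1 / 2" "0 < R \<phi> \<and> R \<phi> \<le> 1 / 2"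
      have "L \<phi> < q - \<delta>" using abs_ltD[OF c(1)] n(2) unfolding \<delta>_def by argo
      then have "R \<phi> powr (q - \<delta>) < cmod (A' \<phi>)" using c(3,4) unfolding L_def by (intro P2) auto
      moreover have "R \<phi> ^ P \<le> R \<phi> powr q" using c(4) P by (intro P3) auto
      moreover have "R \<phi> powr q = R \<phi> powr (q - \<delta>) * R \<phi> powr \<delta>" by (simp flip: powr_add)
      moreover have "R \<phi> powr (q - \<delta>) * R \<phi> powr \<delta> \<le> R \<phi> powr (q - \<delta>) * (1/2)"
        using c(3) by (intro mult_left_mono) auto
      moreover have "cmod (A' \<phi>) \<le> cmod (?B \<phi>) + cmod (?B \<phi> - A' \<phi>)" by (smt (verit) norm_triangle_ineq2 norm_minus_commute)
      ultimately show "1 / 2 * R \<phi> powr (q - \<delta>) \<le> cmod (?B \<phi>)" using c(2) by linarith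
    qed
    then have "\<not> cond ?B q" by (rule L3) (use d in auto)
    then show False using cq by blast
  qed
  have "Sup {ereal (real_of_rat q) | q. cond ?B (real_of_rat q)} = ereal r0"
  proof (rule antisym)
    show "Sup {ereal (real_of_rat q) | q. cond ?B (real_of_rat q)} \<le> ereal r0"
      by (rule SupQ_le) (rule upper)
    show "ereal r0 \<le> Sup {ereal (real_of_rat q) | q. cond ?B (real_of_rat q)}"
      by (rule SupQ_ge) (rule lower)
  qed
  then show ?thesis using rv the asym_val_cls[OF A False] by simp
qed

end



context setting begin

lemma cond_mono: assumes "cond B q" "q' \<le> q" shows "cond B q'"
  unfolding cond_def
proof (intro allI impI)
  fix k :: nat assume k: "k \<ge> 1"
  have a: "AEU (\<lambda>\<phi>. cmod (B \<phi>) / R \<phi> powr q < 1 / real k)" using assms(1) k unfolding cond_def by blast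
  show "AEU (\<lambda>\<phi>. cmod (B \<phi>) / R \<phi> powr q' < 1 / real k)"
  proof (rule ae_mp2[OF a ae_R2'])
    fix \<phi> assume c: "cmod (B \<phi>) / R \<phi> powr q < 1 / real k" "0 < R \<phi> \<and> R \<phi> \<le> 1"
    have "R \<phi> powr q \<le> R \<phi> powr q'" using c(2) assms(2) by (intro powr_mono') auto
    then have "cmod (B \<phi>) / R \<phi> powr q' \<le> cmod (B \<phi>) / R \<phi> powr q" using c(2)
      by (intro divide_left_mono) auto
    then show "cmod (B \<phi>) / R \<phi> powr q' < 1 / real k" using c(1) by linarith
  qed
qed

lemma cond_add: assumes "cond B1 q" "cond B2 q" shows "cond (\<lambda>\<phi>. B1 \<phi> + B2 \<phi>) q"
  unfolding cond_def
proof (intro allI impI)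
  fix k :: nat assume k: "k \<ge> 1"
  then have k2: "2 * k \<ge> 1" by simp
  have a: "AEU (\<lambda>\<phi>. cmod (B1 \<phi>) / R \<phi> powr q < 1 / real (2 * k))"
    "AEU (\<lambda>\<phi>. cmod (B2 \<phi>) / R \<phi> powr q < 1 / real (2 * k))"
    using assms k2 unfolding cond_def by blast+
  show "AEU (\<lambda>\<phi>. cmod (B1 \<phi> + B2 \<phi>) / R \<phi> powr q < 1 / real k)"
  proof (rule ae_mp3[OF a ae_R2'])
    fix \<phi> assume c: "cmod (B1 \<phi>) / R \<phi> powr q < 1 / real (2 * k)" "cmod (B2 \<phi>) / R \<phi> powr q < 1 / real (2 * k)"
      "0 < R \<phi> \<and> R \<phi> \<le> 1"
    have pq: "0 < R \<phi> powr q" using c by simp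
    have "cmod (B1 \<phi> + B2 \<phi>) / R \<phi> powr q \<le> (cmod (B1 \<phi>) + cmod (B2 \<phi>)) / R \<phi> powr q"
      using pq by (intro divide_right_mono norm_triangle_ineq) auto
    also have "\<dots> = cmod (B1 \<phi>) / R \<phi> powr q + cmod (B2 \<phi>) / R \<phi> powr q" by (simp add: add_divide_distrib)
    also have "\<dots> < 1 / real (2 * k) + 1 / real (2 * k)" using c by linarith
    also have "\<dots> = 1 / real k" by simp
    finally show "cmod (B1 \<phi> + B2 \<phi>) / R \<phi> powr q < 1 / real k" .
  qed
qed

lemma cond_ne: assumes "B \<in> Ne" shows "cond B q"
proof -
  define P :: nat where "P = nat \<lceil>q\<rceil> + 1"
  have P: "q < real P" unfolding P_def by linarith
  have b: "AEU (\<lambda>\<phi>. cmod (B \<phi>) \<le> 1 * R \<phi> powr real P)"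
  proof (rule ae_mp2[OF _ ae_R2'])
    show "AEU (\<lambda>\<phi>. cmod (B \<phi>) < R \<phi> ^ P)" using assms unfolding neg_iff by blast
    fix \<phi> assume "cmod (B \<phi>) < R \<phi> ^ P" "0 < R \<phi> \<and> R \<phi> \<le> 1"
    then show "cmod (B \<phi>) \<le> 1 * R \<phi> powr real P" by (simp add: powr_realpow)
  qed
  show ?thesis by (rule L1[OF b P])
qed

lemma cond_neg_inv: assumes "cond B q" "(\<lambda>\<phi>. B' \<phi> - B \<phi>) \<in> Ne" shows "cond B' q"
proof -
  have "cond (\<lambda>\<phi>. B \<phi> + (B' \<phi> - B \<phi>)) q" by (rule cond_add[OF assms(1) cond_ne[OF assms(2)]])
  then show ?thesis by simp
qed

lemma cond_uminus: "cond (\<lambda>\<phi>. - B \<phi>) q \<longleftrightarrow> cond B q"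
  unfolding cond_def by simp

lemma ereal_ge_all: "(\<And>t. ereal t \<le> x) \<Longrightarrow> x = \<infinity>"
proof -
  assume a: "\<And>t. ereal t \<le> x"
  show "x = \<infinity>"
  proof (cases x)
    case (real r) then show ?thesis using a[of "r + 1"] by simp
  next
    case MInf then show ?thesis using a[of 0] by simp
  qed simp
qed

lemma val_cond: assumes C: "C \<in> Mo"
  shows "asym_val U (cls C) = Sup {ereal (real_of_rat q) | q. cond C (real_of_rat q)}"
proof (cases "C \<in> Ne")
  case True
  have "Sup {ereal (real_of_rat q) | q. cond C (real_of_rat q)} = \<infinity>"
  proof (rule ereal_ge_all)
    fix t show "ereal t \<le> Sup {ereal (real_of_rat q) | q. cond C (real_of_rat q)}"
      by (rule SupQ_ge) (rule cond_ne[OF True])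
  qed
  then show ?thesis using asym_val_zero[OF C True] by simp
next
  case False
  have "cond (rep (cls C)) x \<longleftrightarrow> cond C x" for x
    using cond_neg_inv[OF _ rep_neg[OF C], of x] cond_neg_inv[OF _ rep_neg'[OF C], of x] by blast
  then show ?thesis using asym_val_cls[OF C False] by simp
qed

lemma val_gt: assumes C: "C \<in> Mo" and "ereal t < asym_val U (cls C)" shows "cond C t"
proof -
  obtain q where q: "cond C (real_of_rat q)" "t < real_of_rat q"
    using assms(2) unfolding val_cond[OF C] by (rule SupQ_gt)
  show ?thesis using cond_mono[OF q(1), of t] q(2) by simp
qed

lemma val_ge: assumes C: "C \<in> Mo" and "\<And>t. ereal t < x \<Longrightarrow> cond C t" shows "x \<le> asym_val U (cls C)"
proof (rule dense_le)
  fix y assume y: "y < x"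
  show "y \<le> asym_val U (cls C)"
  proof (cases y)
    case (real t)
    have "ereal t \<le> Sup {ereal (real_of_rat q) | q. cond C (real_of_rat q)}"
    proof (rule SupQ_ge)
      fix q :: rat assume "real_of_rat q < t"
      then have "ereal (real_of_rat q) < y" using real by simp
      then have "ereal (real_of_rat q) < x" using y by (rule less_trans)
      then show "cond C (real_of_rat q)" by (rule assms(2))
    qed
    then show ?thesis using real val_cond[OF C] by simp
  qed (use y in auto)
qed

lemma val_not_minf: assumes C: "C \<in> Mo" shows "asym_val U (cls C) \<noteq> -\<infinity>"
proof -
  obtain m where m: "AEU (\<lambda>\<phi>. cmod (C \<phi>) \<le> inverse (R \<phi> ^ m))" using C unfolding mod_iff by blast
  have b: "AEU (\<lambda>\<phi>. cmod (C \<phi>) \<le> 1 * R \<phi> powr (- real m))"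
  proof (rule ae_mp2[OF m ae_R2'])
    fix \<phi> assume "cmod (C \<phi>) \<le> inverse (R \<phi> ^ m)" "0 < R \<phi> \<and> R \<phi> \<le> 1"
    then show "cmod (C \<phi>) \<le> 1 * R \<phi> powr (- real m)" by (simp add: powr_minus powr_realpow)
  qed
  have "ereal (- real m - 1) \<le> asym_val U (cls C)"
  proof (rule val_ge[OF C])
    fix t assume "ereal t < ereal (- real m - 1)"
    then have "t < - real m" by simp
    then show "cond C t" by (rule L1[OF b])
  qed
  then show ?thesis by auto
qed

lemma val_finite: assumes C: "C \<in> Mo" and "C \<notin> Ne" shows "asym_val U (cls C) \<noteq> \<infinity>"
proof -
  have "Phi U (cls C) \<noteq> rob_cls U (star_const U 0)"
  proof
    assume "Phi U (cls C) = rob_cls U (star_const U 0)"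
    then have "sc ` cls C = sc ` cls (\<lambda>_. 0)" using Phi_cls[OF C] rob_zero_eq by simp
    then have "cls C = cls (\<lambda>_. 0)" by (rule Phi_inj[OF C mod_const])
    then show False using cls_zero_iff[OF C] assms(2) by blast
  qed
  then show ?thesis using val_eq[OF C] unfolding rob_val_def by auto
qed

lemma AsymC_rep: "z \<in> AsymC U \<Longrightarrow> rep z \<in> Mo \<and> z = cls (rep z)"
  by (auto elim!: AsymC_E simp: rep_mod cls_rep)

lemma dist_rep: "asym_dist U z w = unorm (asym_val U (cls (\<lambda>\<phi>. rep z \<phi> - rep w \<phi>)))"
  unfolding asym_dist_def asym_norm_def asym_minus_def ..

lemma unorm_anti: "a \<le> b \<Longrightarrow> a \<noteq> -\<infinity> \<Longrightarrow> unorm b \<le> unorm a"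
  by (cases a; cases b) (auto simp: unorm_def)

lemma unorm_nonneg: "0 \<le> unorm v"
  by (simp add: unorm_def)

lemma dist_sym: "asym_dist U x y = asym_dist U y x"
proof -
  let ?C = "\<lambda>\<phi>. rep x \<phi> - rep y \<phi>"
  have e: "(\<lambda>\<phi>. rep y \<phi> - rep x \<phi>) = (\<lambda>\<phi>. - ?C \<phi>)" by auto
  have "asym_val U (cls ?C) = asym_val U (cls (\<lambda>\<phi>. - ?C \<phi>))"
  proof (cases "?C \<in> Mo")
    case True
    have c: "cond (\<lambda>\<phi>. rep y \<phi> - rep x \<phi>) r \<longleftrightarrow> cond ?C r" for r using cond_uminus[of ?C r] by simp
    show ?thesis using val_cond[OF True] val_cond[OF mod_uminus[OF True]] c by simp
  next
    case False
    then have "(\<lambda>\<phi>. - ?C \<phi>) \<notin> Mo" using mod_uminus by fastforce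
    then show ?thesis using cls_empty False by metis
  qed
  then show ?thesis unfolding dist_rep e by simp
qed

lemma metric_space: "Metric_space (AsymC U) (asym_dist U)"
proof
  fix x y show "0 \<le> asym_dist U x y" unfolding dist_rep by (rule unorm_nonneg)
  show "asym_dist U x y = asym_dist U y x" by (rule dist_sym)
next
  fix x y assume xy: "x \<in> AsymC U" "y \<in> AsymC U"
  then have m: "rep x \<in> Mo" "rep y \<in> Mo" "x = cls (rep x)" "y = cls (rep y)" using AsymC_rep by blast+
  have mC: "(\<lambda>\<phi>. rep x \<phi> - rep y \<phi>) \<in> Mo" using m by (intro mod_diff)
  have "asym_dist U x y = 0 \<longleftrightarrow> asym_val U (cls (\<lambda>\<phi>. rep x \<phi> - rep y \<phi>)) = \<infinity>"
    unfolding dist_rep unorm_def by simp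
  also have "\<dots> \<longleftrightarrow> (\<lambda>\<phi>. rep x \<phi> - rep y \<phi>) \<in> Ne"
    using val_finite[OF mC] asym_val_zero[OF mC] by blast
  also have "\<dots> \<longleftrightarrow> x = y" using cls_eq_iff[OF m(1,2)] m(3,4) by metis
  finally show "asym_dist U x y = 0 \<longleftrightarrow> x = y" .
next
  fix x y z assume xyz: "x \<in> AsymC U" "y \<in> AsymC U" "z \<in> AsymC U"
  then have m: "rep x \<in> Mo" "rep y \<in> Mo" "rep z \<in> Mo" using AsymC_rep by blast+
  let ?C1 = "\<lambda>\<phi>. rep x \<phi> - rep y \<phi>" and ?C2 = "\<lambda>\<phi>. rep y \<phi> - rep z \<phi>" and ?C3 = "\<lambda>\<phi>. rep x \<phi> - rep z \<phi>"
  have mC: "?C1 \<in> Mo" "?C2 \<in> Mo" "?C3 \<in> Mo" using m by (auto intro: mod_diff)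
  let ?v1 = "asym_val U (cls ?C1)" and ?v2 = "asym_val U (cls ?C2)" and ?v3 = "asym_val U (cls ?C3)"
  have ge: "min ?v1 ?v2 \<le> ?v3"
  proof (rule val_ge[OF mC(3)])
    fix t assume "ereal t < min ?v1 ?v2"
    then have "cond ?C1 t" "cond ?C2 t" using val_gt mC by auto
    then have "cond (\<lambda>\<phi>. ?C1 \<phi> + ?C2 \<phi>) t" by (rule cond_add)
    then show "cond ?C3 t" by simp
  qed
  have "min ?v1 ?v2 \<noteq> -\<infinity>" using val_not_minf mC by (simp add: min_def)
  then have "unorm ?v3 \<le> unorm (min ?v1 ?v2)" using ge by (intro unorm_anti)
  also have "\<dots> \<le> unorm ?v1 + unorm ?v2" using unorm_nonneg[of ?v1] unorm_nonneg[of ?v2]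
    by (cases "?v1 \<le> ?v2") (auto simp: min_def)
  finally show "asym_dist U x z \<le> asym_dist U x y + asym_dist U y z" unfolding dist_rep .
qed

end

context setting begin

definition box :: "'a net set \<Rightarrow> nat \<Rightarrow> 'a net set set" where
  "box z n = {w \<in> AsymC U. AEU (\<lambda>\<phi>. cmod (rep w \<phi> - rep z \<phi>) < R \<phi> ^ n)}"

definition nopen :: "'a net set set \<Rightarrow> bool" where
  "nopen S \<longleftrightarrow> S \<subseteq> AsymC U \<and> (\<forall>z\<in>S. \<exists>n. box z n \<subseteq> S)"


lemma mball_box: assumes z: "z \<in> AsymC U"
  shows "Metric_space.mball (AsymC U) (asym_dist U) z (exp (- real n)) \<subseteq> box z n"
proof
  fix w assume "w \<in> Metric_space.mball (AsymC U) (asym_dist U) z (exp (- real n))"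
  then have w: "w \<in> AsymC U" and d: "asym_dist U z w < exp (- real n)"
    unfolding Metric_space.mball_def[OF metric_space] by auto
  have m: "(\<lambda>\<phi>. rep z \<phi> - rep w \<phi>) \<in> Mo" using AsymC_rep[OF z] AsymC_rep[OF w] by (intro mod_diff) auto
  let ?v = "asym_val U (cls (\<lambda>\<phi>. rep z \<phi> - rep w \<phi>))"
  have "ereal (real n) < ?v"
  proof (cases "?v = \<infinity>")
    case False
    then have "exp (- real_of_ereal ?v) < exp (- real n)" using d unfolding dist_rep unorm_def by simp
    then have lt: "real n < real_of_ereal ?v" by simp
    then have "?v \<noteq> -\<infinity>" by auto
    then show ?thesis using False lt by (cases ?v) auto
  qed simp
  then have "AEU (\<lambda>\<phi>. cmod (rep z \<phi> - rep w \<phi>) < R \<phi> ^ n)" by (rule V2[OF m])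
  then have "AEU (\<lambda>\<phi>. cmod (rep w \<phi> - rep z \<phi>) < R \<phi> ^ n)" by (rule ae_mono) (simp add: norm_minus_commute)
  then show "w \<in> box z n" unfolding box_def using w by blast
qed

lemma box_mball: assumes z: "z \<in> AsymC U" and r: "exp (- real n) < r"
  shows "box z n \<subseteq> Metric_space.mball (AsymC U) (asym_dist U) z r"
proof
  fix w assume "w \<in> box z n"
  then have w: "w \<in> AsymC U" and b: "AEU (\<lambda>\<phi>. cmod (rep w \<phi> - rep z \<phi>) < R \<phi> ^ n)"
    unfolding box_def by auto
  have m: "(\<lambda>\<phi>. rep z \<phi> - rep w \<phi>) \<in> Mo" using AsymC_rep[OF z] AsymC_rep[OF w] by (intro mod_diff) auto
  have "AEU (\<lambda>\<phi>. cmod (rep z \<phi> - rep w \<phi>) \<le> R \<phi> ^ n)" by (rule ae_mono[OF b]) (simp add: norm_minus_commute)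
  then have v: "ereal (real n) \<le> asym_val U (cls (\<lambda>\<phi>. rep z \<phi> - rep w \<phi>))" by (rule V1[OF m])
  let ?v = "asym_val U (cls (\<lambda>\<phi>. rep z \<phi> - rep w \<phi>))"
  have "asym_dist U z w < r"
  proof (cases "?v = \<infinity>")
    case True
    then show ?thesis unfolding dist_rep unorm_def using r by (smt (verit) exp_gt_zero)
  next
    case False
    then obtain x where x: "?v = ereal x" using v by (cases ?v) auto
    then have "real n \<le> x" using v by simp
    then have "exp (- x) \<le> exp (- real n)" by simp
    then have e: "exp (- x) < r" using r by linarith
    show ?thesis unfolding dist_rep unorm_def using False x e by simp
  qed
  then show "w \<in> Metric_space.mball (AsymC U) (asym_dist U) z r"
    unfolding Metric_space.mball_def[OF metric_space] using z w by simp
qed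

lemma exp_small: assumes "0 < (r::real)" obtains n :: nat where "exp (- real n) < r"
proof -
  obtain n :: nat where n: "- ln r < real n" using reals_Archimedean2 by blast
  then have "exp (- real n) < exp (ln r)" by simp
  then show ?thesis using that assms by simp
qed

lemma metric_open: "openin (metric_top_C U) S \<longleftrightarrow> nopen S"
proof -
  have "openin (metric_top_C U) S \<longleftrightarrow> Metric_space.mopen (AsymC U) (asym_dist U) S"
    unfolding metric_top_C_def Metric_space.openin_mtopology[OF metric_space] Metric_space.mopen_def[OF metric_space] ..
  also have "\<dots> \<longleftrightarrow> nopen S"
  proof
    assume a: "Metric_space.mopen (AsymC U) (asym_dist U) S"
    show "nopen S" unfolding nopen_def
    proof (intro conjI ballI)
      show "S \<subseteq> AsymC U" using a unfolding Metric_space.mopen_def[OF metric_space] by blast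
      fix z assume z: "z \<in> S"
      then obtain r where r: "r > 0" "Metric_space.mball (AsymC U) (asym_dist U) z r \<subseteq> S"
        using a unfolding Metric_space.mopen_def[OF metric_space] by blast
      obtain n where "exp (- real n) < r" using exp_small[OF r(1)] by blast
      then have "box z n \<subseteq> S" using box_mball r(2) z a unfolding Metric_space.mopen_def[OF metric_space] by blast
      then show "\<exists>n. box z n \<subseteq> S" by blast
    qed
  next
    assume a: "nopen S"
    show "Metric_space.mopen (AsymC U) (asym_dist U) S" unfolding Metric_space.mopen_def[OF metric_space]
    proof (intro conjI allI impI)
      show "S \<subseteq> AsymC U" using a unfolding nopen_def by blast
      fix z assume z: "z \<in> S"
      then obtain n where n: "box z n \<subseteq> S" using a unfolding nopen_def by blast
      have "Metric_space.mball (AsymC U) (asym_dist U) z (exp (- real n)) \<subseteq> S"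
        using mball_box n z a unfolding nopen_def by blast
      then show "\<exists>r>0. Metric_space.mball (AsymC U) (asym_dist U) z r \<subseteq> S" by (intro exI[of _ "exp (- real n)"]) auto
    qed
  qed
  finally show ?thesis .
qed

end


lemma cmod_of_real_diff: "cmod (complex_of_real a - complex_of_real b) = \<bar>a - b\<bar>"
  by (metis norm_of_real of_real_diff)

lemma re_close: "\<bar>t - Re w\<bar> \<le> cmod (w - complex_of_real t)"
  using abs_Re_le_cmod[of "w - complex_of_real t"] by (simp add: abs_minus_commute)

lemma re_close2: "\<bar>Re w - t\<bar> \<le> cmod (w - complex_of_real t)"
  using abs_Re_le_cmod[of "w - complex_of_real t"] by simp

lemma cmod_ri: "cmod (complex_of_real x + \<i> * complex_of_real y) \<le> \<bar>x\<bar> + \<bar>y\<bar>"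
proof -
  have "cmod (complex_of_real x + \<i> * complex_of_real y) \<le> cmod (complex_of_real x) + cmod (\<i> * complex_of_real y)"
    by (rule norm_triangle_ineq)
  also have "\<dots> = \<bar>x\<bar> + \<bar>y\<bar>" by (simp add: norm_mult)
  finally show ?thesis .
qed

context setting begin

definition Sub :: "'a net set set set" where
  "Sub = {{x \<in> AsymR U. asym_less U a x} | a. a \<in> AsymR U} \<union> {{x \<in> AsymR U. asym_less U x b} | b. b \<in> AsymR U}"

lemma ord_top_R_eq: "ord_top_R U = topology_generated_by Sub"
  unfolding ord_top_R_def Sub_def ..

lemma AsymR_rep: assumes "a \<in> AsymR U"
  shows "rep a \<in> Mo" "a = cls (rep a)" "(\<lambda>\<phi>. complex_of_real (Im (rep a \<phi>))) \<in> Ne"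
proof -
  obtain A where A: "A \<in> Mo" "realnet A" "a = cls A" using assms by (rule AsymR_E)
  show "rep a \<in> Mo" "a = cls (rep a)" using A rep_mod cls_rep by auto
  show "(\<lambda>\<phi>. complex_of_real (Im (rep a \<phi>))) \<in> Ne"
  proof (rule neg_bound[OF rep_neg[OF A(1)]])
    show "AEU (\<lambda>\<phi>. cmod (complex_of_real (Im (rep a \<phi>))) \<le> cmod (A \<phi> - rep (cls A) \<phi>))"
    proof (rule aeI)
      fix \<phi> assume "\<phi> \<in> T"
      then have "Im (A \<phi>) = 0" using realnet_Im[OF A(2)] by blast
      then show "cmod (complex_of_real (Im (rep a \<phi>))) \<le> cmod (A \<phi> - rep (cls A) \<phi>)"
        using abs_Im_le_cmod[of "A \<phi> - rep (cls A) \<phi>"] A(3) by simp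
    qed
  qed
qed

lemma R_less: assumes "a \<in> AsymR U" "x \<in> AsymR U"
  shows "asym_less U a x \<longleftrightarrow> ppos (\<lambda>\<phi>. Re (rep x \<phi>) - Re (rep a \<phi>))"
proof -
  have im: "(\<lambda>\<phi>. complex_of_real (Im (rep x \<phi> - rep a \<phi>))) \<in> Ne"
  proof (rule neg_bound2[OF AsymR_rep(3)[OF assms(2)] AsymR_rep(3)[OF assms(1)]])
    show "AEU (\<lambda>\<phi>. cmod (complex_of_real (Im (rep x \<phi> - rep a \<phi>)))
       \<le> cmod (complex_of_real (Im (rep x \<phi>))) + cmod (complex_of_real (Im (rep a \<phi>))))"
      by (rule aeI) (simp add: abs_triangle_ineq4 flip: of_real_diff)
  qed
  have "asym_less U a x \<longleftrightarrow> asym_less U (cls (rep a)) (cls (rep x))"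
    using AsymR_rep(2)[OF assms(1)] AsymR_rep(2)[OF assms(2)] by simp
  also have "\<dots> \<longleftrightarrow> ppos (\<lambda>\<phi>. Re (rep x \<phi>) - Re (rep a \<phi>))"
    using less_cls[OF AsymR_rep(1)[OF assms(1)] AsymR_rep(1)[OF assms(2)]] im by blast
  finally show ?thesis .
qed

lemma re_in: assumes "z \<in> AsymC U"
  shows "asym_re U z \<in> AsymR U" "(\<lambda>\<phi>. complex_of_real (Re (rep (asym_re U z) \<phi>) - Re (rep z \<phi>))) \<in> Ne"
proof -
  have m: "(\<lambda>\<phi>. complex_of_real (Re (rep z \<phi>))) \<in> Mo"
    by (rule mod_bound[OF AsymC_rep[OF assms, THEN conjunct1]]) (rule aeI, simp add: abs_Re_le_cmod)
  show "asym_re U z \<in> AsymR U" unfolding asym_re_def AsymR_def using m by (auto simp: realnet_def)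
  show "(\<lambda>\<phi>. complex_of_real (Re (rep (asym_re U z) \<phi>) - Re (rep z \<phi>))) \<in> Ne"
    unfolding asym_re_def
    by (rule neg_bound[OF rep_neg'[OF m]]) (rule aeI, metis abs_Re_le_cmod Re_complex_of_real minus_complex.sel(1) norm_of_real)
qed

lemma im_in: assumes "z \<in> AsymC U"
  shows "asym_im U z \<in> AsymR U" "(\<lambda>\<phi>. complex_of_real (Re (rep (asym_im U z) \<phi>) - Im (rep z \<phi>))) \<in> Ne"
proof -
  have m: "(\<lambda>\<phi>. complex_of_real (Im (rep z \<phi>))) \<in> Mo"
    by (rule mod_bound[OF AsymC_rep[OF assms, THEN conjunct1]]) (rule aeI, simp add: abs_Im_le_cmod)
  show "asym_im U z \<in> AsymR U" unfolding asym_im_def AsymR_def using m by (auto simp: realnet_def)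
  show "(\<lambda>\<phi>. complex_of_real (Re (rep (asym_im U z) \<phi>) - Im (rep z \<phi>))) \<in> Ne"
    unfolding asym_im_def
    by (rule neg_bound[OF rep_neg'[OF m]]) (rule aeI, metis abs_Re_le_cmod Re_complex_of_real minus_complex.sel(1) norm_of_real)
qed

lemma ppos_const1: "ppos (\<lambda>_. 1)"
proof -
  have "AEU (\<lambda>\<phi>. R \<phi> ^ 1 < 1)" by (rule ae_mono[OF ae_R2]) auto
  then show ?thesis unfolding ppos_def by blast
qed

lemma ppos_cong: "ppos D \<Longrightarrow> (\<And>\<phi>. D' \<phi> = D \<phi>) \<Longrightarrow> ppos D'"
proof -
  assume "ppos D" "\<And>\<phi>. D' \<phi> = D \<phi>"
  then have "D' = D" by (intro ext) auto
  then show ?thesis using \<open>ppos D\<close> by simp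
qed

definition good :: "'a net set set \<Rightarrow> 'a net set \<Rightarrow> bool" where
  "good W x \<longleftrightarrow> (\<exists>lo hi. ppos (\<lambda>\<phi>. Re (rep x \<phi>) - lo \<phi>) \<and> ppos (\<lambda>\<phi>. hi \<phi> - Re (rep x \<phi>)) \<and>
     (\<forall>y\<in>AsymR U. ppos (\<lambda>\<phi>. Re (rep y \<phi>) - lo \<phi>) \<and> ppos (\<lambda>\<phi>. hi \<phi> - Re (rep y \<phi>)) \<longrightarrow> y \<in> W))"

lemma gen_good: "generate_topology_on Sub W \<Longrightarrow> W \<subseteq> AsymR U \<and> (\<forall>x\<in>W. good W x)"
proof (induction rule: generate_topology_on.induct)
  case Empty
  then show ?case by simp
next
  case (Int a b)
  show ?case
  proof (intro conjI ballI)
    show "a \<inter> b \<subseteq> AsymR U" using Int by blast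
    fix x assume x: "x \<in> a \<inter> b"
    obtain lo1 hi1 where g1: "ppos (\<lambda>\<phi>. Re (rep x \<phi>) - lo1 \<phi>)" "ppos (\<lambda>\<phi>. hi1 \<phi> - Re (rep x \<phi>))"
      "\<forall>y\<in>AsymR U. ppos (\<lambda>\<phi>. Re (rep y \<phi>) - lo1 \<phi>) \<and> ppos (\<lambda>\<phi>. hi1 \<phi> - Re (rep y \<phi>)) \<longrightarrow> y \<in> a"
      using Int x unfolding good_def by blast
    obtain lo2 hi2 where g2: "ppos (\<lambda>\<phi>. Re (rep x \<phi>) - lo2 \<phi>)" "ppos (\<lambda>\<phi>. hi2 \<phi> - Re (rep x \<phi>))"
      "\<forall>y\<in>AsymR U. ppos (\<lambda>\<phi>. Re (rep y \<phi>) - lo2 \<phi>) \<and> ppos (\<lambda>\<phi>. hi2 \<phi> - Re (rep y \<phi>)) \<longrightarrow> y \<in> b"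
      using Int x unfolding good_def by blast
    let ?lo = "\<lambda>\<phi>. max (lo1 \<phi>) (lo2 \<phi>)" and ?hi = "\<lambda>\<phi>. min (hi1 \<phi>) (hi2 \<phi>)"
    have g: "ppos (\<lambda>\<phi>. Re (rep x \<phi>) - ?lo \<phi>)"
      by (rule ppos_cong[OF ppos_min[OF g1(1) g2(1)]]) simp
    have h: "ppos (\<lambda>\<phi>. ?hi \<phi> - Re (rep x \<phi>))"
      by (rule ppos_cong[OF ppos_min[OF g1(2) g2(2)]]) simp
    have w: "y \<in> a \<inter> b" if y: "y \<in> AsymR U" "ppos (\<lambda>\<phi>. Re (rep y \<phi>) - ?lo \<phi>)" "ppos (\<lambda>\<phi>. ?hi \<phi> - Re (rep y \<phi>))" for y
    proof -
      have "ppos (\<lambda>\<phi>. Re (rep y \<phi>) - lo1 \<phi>)" by (rule ppos_mono[OF y(2)]) (rule aeI, simp)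
      moreover have "ppos (\<lambda>\<phi>. hi1 \<phi> - Re (rep y \<phi>))" by (rule ppos_mono[OF y(3)]) (rule aeI, simp)
      moreover have "ppos (\<lambda>\<phi>. Re (rep y \<phi>) - lo2 \<phi>)" by (rule ppos_mono[OF y(2)]) (rule aeI, simp)
      moreover have "ppos (\<lambda>\<phi>. hi2 \<phi> - Re (rep y \<phi>))" by (rule ppos_mono[OF y(3)]) (rule aeI, simp)
      ultimately show ?thesis using g1(3) g2(3) y(1) by blast
    qed
    show "good (a \<inter> b) x" unfolding good_def
      by (rule exI[of _ ?lo], rule exI[of _ ?hi]) (use g h w in blast)
  qed
next
  case (UN K)
  show ?case
  proof (intro conjI ballI)
    show "\<Union> K \<subseteq> AsymR U" using UN by blast
    fix x assume "x \<in> \<Union> K"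
    then obtain k where k: "k \<in> K" "x \<in> k" by blast
    then have "good k x" using UN by blast
    then show "good (\<Union> K) x" unfolding good_def using k by blast
  qed
next
  case (Basis s)
  then consider (L) a where "a \<in> AsymR U" "s = {x \<in> AsymR U. asym_less U a x}"
    | (H) b where "b \<in> AsymR U" "s = {x \<in> AsymR U. asym_less U x b}"
    unfolding Sub_def by blast
  then show ?case
  proof cases
    case L
    show ?thesis
    proof (intro conjI ballI)
      show "s \<subseteq> AsymR U" using L by blast
      fix x assume x: "x \<in> s"
      then have xa: "x \<in> AsymR U" "asym_less U a x" using L by auto
      have g: "ppos (\<lambda>\<phi>. Re (rep x \<phi>) - Re (rep a \<phi>))" using R_less[OF L(1) xa(1)] xa(2) by blast
      have h: "ppos (\<lambda>\<phi>. (Re (rep x \<phi>) + 1) - Re (rep x \<phi>))" by (rule ppos_cong[OF ppos_const1]) simp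
      have w: "y \<in> s" if "y \<in> AsymR U" "ppos (\<lambda>\<phi>. Re (rep y \<phi>) - Re (rep a \<phi>))" for y
        using R_less[OF L(1) that(1)] that L by blast
      show "good s x" unfolding good_def
        by (rule exI[of _ "\<lambda>\<phi>. Re (rep a \<phi>)"], rule exI[of _ "\<lambda>\<phi>. Re (rep x \<phi>) + 1"]) (use g h w in blast)
    qed
  next
    case H
    show ?thesis
    proof (intro conjI ballI)
      show "s \<subseteq> AsymR U" using H by blast
      fix x assume x: "x \<in> s"
      then have xb: "x \<in> AsymR U" "asym_less U x b" using H by auto
      have h: "ppos (\<lambda>\<phi>. Re (rep b \<phi>) - Re (rep x \<phi>))" using R_less[OF xb(1) H(1)] xb(2) by blast
      have g: "ppos (\<lambda>\<phi>. Re (rep x \<phi>) - (Re (rep x \<phi>) - 1))" by (rule ppos_cong[OF ppos_const1]) simp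
      have w: "y \<in> s" if "y \<in> AsymR U" "ppos (\<lambda>\<phi>. Re (rep b \<phi>) - Re (rep y \<phi>))" for y
        using R_less[OF that(1) H(1)] that H by blast
      show "good s x" unfolding good_def
        by (rule exI[of _ "\<lambda>\<phi>. Re (rep x \<phi>) - 1"], rule exI[of _ "\<lambda>\<phi>. Re (rep b \<phi>)"]) (use g h w in blast)
    qed
  qed
qed

end


context setting begin

lemma close_ppos:
  assumes "AEU (\<lambda>\<phi>. R \<phi> ^ p < D \<phi>)" "AEU (\<lambda>\<phi>. \<bar>E \<phi>\<bar> < R \<phi> ^ Suc (Suc p))"
    "AEU (\<lambda>\<phi>. \<bar>E' \<phi>\<bar> < R \<phi> ^ Suc (Suc p))" "AEU (\<lambda>\<phi>. \<bar>D' \<phi> - D \<phi>\<bar> \<le> \<bar>E \<phi>\<bar> + \<bar>E' \<phi>\<bar>)"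
  shows "ppos D'"
proof -
  have "AEU (\<lambda>\<phi>. R \<phi> ^ Suc p < D' \<phi>)"
  proof (rule ae_mp4[OF assms(1) assms(2) assms(3) ae_conj[OF assms(4) ae_R2]])
    fix \<phi> assume c: "R \<phi> ^ p < D \<phi>" "\<bar>E \<phi>\<bar> < R \<phi> ^ Suc (Suc p)" "\<bar>E' \<phi>\<bar> < R \<phi> ^ Suc (Suc p)"
      "\<bar>D' \<phi> - D \<phi>\<bar> \<le> \<bar>E \<phi>\<bar> + \<bar>E' \<phi>\<bar> \<and> 0 < R \<phi> \<and> R \<phi> \<le> 1 / 2"
    have h1: "R \<phi> ^ Suc (Suc p) \<le> R \<phi> ^ Suc p / 2" using c(4) pw_half by blast
    have h2: "R \<phi> ^ Suc p \<le> R \<phi> ^ p / 2" using c(4) pw_half by blast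
    show "R \<phi> ^ Suc p < D' \<phi>" using c h1 h2 by linarith
  qed
  then show ?thesis unfolding ppos_def by blast
qed

lemma neg_bound_p: "(\<lambda>\<phi>. complex_of_real (f \<phi>)) \<in> Ne \<Longrightarrow> AEU (\<lambda>\<phi>. \<bar>f \<phi>\<bar> < R \<phi> ^ k)"
  unfolding neg_iff by simp

lemma coord:
  assumes g: "good W x" and n: "(\<lambda>\<phi>. complex_of_real (Re (rep x \<phi>) - c \<phi>)) \<in> Ne"
  shows "\<exists>p. \<forall>y\<in>AsymR U. \<forall>e. AEU (\<lambda>\<phi>. \<bar>Re (rep y \<phi>) - e \<phi>\<bar> < R \<phi> ^ Suc (Suc p)) \<longrightarrow>
            AEU (\<lambda>\<phi>. \<bar>e \<phi> - c \<phi>\<bar> < R \<phi> ^ Suc (Suc p)) \<longrightarrow> y \<in> W"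
proof -
  obtain lo hi where l: "ppos (\<lambda>\<phi>. Re (rep x \<phi>) - lo \<phi>)" "ppos (\<lambda>\<phi>. hi \<phi> - Re (rep x \<phi>))"
    "\<forall>y\<in>AsymR U. ppos (\<lambda>\<phi>. Re (rep y \<phi>) - lo \<phi>) \<and> ppos (\<lambda>\<phi>. hi \<phi> - Re (rep y \<phi>)) \<longrightarrow> y \<in> W"
    using g unfolding good_def by blast
  have d1: "ppos (\<lambda>\<phi>. c \<phi> - lo \<phi>)"
    by (rule ppos_neg[OF l(1) n]) (rule aeI, simp add: cmod_of_real_diff abs_minus_commute)
  have d2: "ppos (\<lambda>\<phi>. hi \<phi> - c \<phi>)"
    by (rule ppos_neg[OF l(2) n]) (rule aeI, simp add: cmod_of_real_diff abs_minus_commute)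
  obtain p where p: "AEU (\<lambda>\<phi>. R \<phi> ^ p < min (c \<phi> - lo \<phi>) (hi \<phi> - c \<phi>))"
    using ppos_min[OF d1 d2] unfolding ppos_def by blast
  have p1: "AEU (\<lambda>\<phi>. R \<phi> ^ p < c \<phi> - lo \<phi>)" by (rule ae_mono[OF p]) simp
  have p2: "AEU (\<lambda>\<phi>. R \<phi> ^ p < hi \<phi> - c \<phi>)" by (rule ae_mono[OF p]) simp
  show ?thesis
  proof (intro exI ballI allI impI)
    fix y e assume y: "y \<in> AsymR U" and e1: "AEU (\<lambda>\<phi>. \<bar>Re (rep y \<phi>) - e \<phi>\<bar> < R \<phi> ^ Suc (Suc p))"
      and e2: "AEU (\<lambda>\<phi>. \<bar>e \<phi> - c \<phi>\<bar> < R \<phi> ^ Suc (Suc p))"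
    have "ppos (\<lambda>\<phi>. Re (rep y \<phi>) - lo \<phi>)"
      by (rule close_ppos[OF p1 e1 e2]) (rule aeI, simp)
    moreover have "ppos (\<lambda>\<phi>. hi \<phi> - Re (rep y \<phi>))"
      by (rule close_ppos[OF p2 e1 e2]) (rule aeI, simp)
    ultimately show "y \<in> W" using l(3) y by blast
  qed
qed

lemma gen_open_R: "openin (ord_top_R U) W \<Longrightarrow> W \<subseteq> AsymR U \<and> (\<forall>x\<in>W. good W x)"
  unfolding ord_top_R_eq openin_topology_generated_by_iff by (rule gen_good)

lemma pw_mono_R: "0 < r \<Longrightarrow> (r::real) \<le> 1 \<Longrightarrow> k \<le> n \<Longrightarrow> r ^ n \<le> r ^ k"
  by (rule power_decreasing) auto

lemma ord_to_nopen: assumes "openin (ord_top_C U) S" shows "nopen S"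
proof -
  have "\<exists>V. openin (prod_topology (ord_top_R U) (ord_top_R U)) V \<and>
    S = (\<lambda>z. (asym_re U z, asym_im U z)) -` V \<inter> AsymC U"
    using assms unfolding ord_top_C_def openin_pullback_topology .
  then obtain V where V: "openin (prod_topology (ord_top_R U) (ord_top_R U)) V"
    "S = (\<lambda>z. (asym_re U z, asym_im U z)) -` V \<inter> AsymC U" by (elim exE conjE)
  show ?thesis unfolding nopen_def
  proof (intro conjI ballI)
    show "S \<subseteq> AsymC U" unfolding V(2) by (rule Int_lower2)
    fix z assume z: "z \<in> S"
    then have zC: "z \<in> AsymC U" and zV: "(asym_re U z, asym_im U z) \<in> V" unfolding V(2) by auto
    from V(1)[unfolded openin_prod_topology_alt, rule_format, OF zV]
    obtain U1 U2 where U12: "openin (ord_top_R U) U1" "openin (ord_top_R U) U2"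
      "asym_re U z \<in> U1" "asym_im U z \<in> U2" "U1 \<times> U2 \<subseteq> V" by (elim exE conjE)
    have g1: "good U1 (asym_re U z)" using gen_open_R[OF U12(1)] U12(3) by blast
    have g2: "good U2 (asym_im U z)" using gen_open_R[OF U12(2)] U12(4) by blast
    obtain p1 where p1: "\<forall>y\<in>AsymR U. \<forall>e. AEU (\<lambda>\<phi>. \<bar>Re (rep y \<phi>) - e \<phi>\<bar> < R \<phi> ^ Suc (Suc p1)) \<longrightarrow>
            AEU (\<lambda>\<phi>. \<bar>e \<phi> - Re (rep z \<phi>)\<bar> < R \<phi> ^ Suc (Suc p1)) \<longrightarrow> y \<in> U1"
      using coord[OF g1 re_in(2)[OF zC]] by (elim exE)
    obtain p2 where p2: "\<forall>y\<in>AsymR U. \<forall>e. AEU (\<lambda>\<phi>. \<bar>Re (rep y \<phi>) - e \<phi>\<bar> < R \<phi> ^ Suc (Suc p2)) \<longrightarrow>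
            AEU (\<lambda>\<phi>. \<bar>e \<phi> - Im (rep z \<phi>)\<bar> < R \<phi> ^ Suc (Suc p2)) \<longrightarrow> y \<in> U2"
      using coord[OF g2 im_in(2)[OF zC]] by (elim exE)
    define n where "n = Suc (Suc (max p1 p2))"
    have "box z n \<subseteq> S"
    proof
      fix w assume "w \<in> box z n"
      then have wC: "w \<in> AsymC U" and b: "AEU (\<lambda>\<phi>. cmod (rep w \<phi> - rep z \<phi>) < R \<phi> ^ n)"
        unfolding box_def by auto
      have "asym_re U w \<in> U1"
      proof (rule p1[rule_format, OF re_in(1)[OF wC]])
        show "AEU (\<lambda>\<phi>. \<bar>Re (rep (asym_re U w) \<phi>) - Re (rep w \<phi>)\<bar> < R \<phi> ^ Suc (Suc p1))"
          by (rule neg_bound_p[OF re_in(2)[OF wC]])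
        show "AEU (\<lambda>\<phi>. \<bar>Re (rep w \<phi>) - Re (rep z \<phi>)\<bar> < R \<phi> ^ Suc (Suc p1))"
        proof (rule ae_mp2[OF b ae_R2'])
          fix \<phi> assume c: "cmod (rep w \<phi> - rep z \<phi>) < R \<phi> ^ n" "0 < R \<phi> \<and> R \<phi> \<le> 1"
          have "R \<phi> ^ n \<le> R \<phi> ^ Suc (Suc p1)" using c(2) unfolding n_def by (intro pw_mono_R) auto
          moreover have "\<bar>Re (rep w \<phi>) - Re (rep z \<phi>)\<bar> \<le> cmod (rep w \<phi> - rep z \<phi>)"
            using abs_Re_le_cmod[of "rep w \<phi> - rep z \<phi>"] by simp
          ultimately show "\<bar>Re (rep w \<phi>) - Re (rep z \<phi>)\<bar> < R \<phi> ^ Suc (Suc p1)" using c(1) by linarith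
        qed
      qed
      moreover have "asym_im U w \<in> U2"
      proof (rule p2[rule_format, OF im_in(1)[OF wC]])
        show "AEU (\<lambda>\<phi>. \<bar>Re (rep (asym_im U w) \<phi>) - Im (rep w \<phi>)\<bar> < R \<phi> ^ Suc (Suc p2))"
          by (rule neg_bound_p[OF im_in(2)[OF wC]])
        show "AEU (\<lambda>\<phi>. \<bar>Im (rep w \<phi>) - Im (rep z \<phi>)\<bar> < R \<phi> ^ Suc (Suc p2))"
        proof (rule ae_mp2[OF b ae_R2'])
          fix \<phi> assume c: "cmod (rep w \<phi> - rep z \<phi>) < R \<phi> ^ n" "0 < R \<phi> \<and> R \<phi> \<le> 1"
          have "R \<phi> ^ n \<le> R \<phi> ^ Suc (Suc p2)" using c(2) unfolding n_def by (intro pw_mono_R) auto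
          moreover have "\<bar>Im (rep w \<phi>) - Im (rep z \<phi>)\<bar> \<le> cmod (rep w \<phi> - rep z \<phi>)"
            using abs_Im_le_cmod[of "rep w \<phi> - rep z \<phi>"] by simp
          ultimately show "\<bar>Im (rep w \<phi>) - Im (rep z \<phi>)\<bar> < R \<phi> ^ Suc (Suc p2)" using c(1) by linarith
        qed
      qed
      ultimately have "(asym_re U w, asym_im U w) \<in> U1 \<times> U2" by (rule SigmaI)
      then have "(asym_re U w, asym_im U w) \<in> V" using U12(5) by (rule rev_subsetD)
      then show "w \<in> S" unfolding V(2) using wC by simp
    qed
    then show "\<exists>n. box z n \<subseteq> S" by blast
  qed
qed

end


context setting begin

definition mkc :: "'a net set \<Rightarrow> 'a net set \<Rightarrow> 'a net" where
  "mkc a b = (\<lambda>\<phi>. complex_of_real (Re (rep a \<phi>)) + \<i> * complex_of_real (Re (rep b \<phi>)))"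

lemma mkc_mod: assumes "a \<in> AsymR U" "b \<in> AsymR U" shows "mkc a b \<in> Mo"
proof (rule mod_bound2[OF AsymR_rep(1)[OF assms(1)] AsymR_rep(1)[OF assms(2)]])
  show "AEU (\<lambda>\<phi>. cmod (mkc a b \<phi>) \<le> cmod (rep a \<phi>) + cmod (rep b \<phi>))"
  proof (rule aeI)
    fix \<phi>
    have "cmod (mkc a b \<phi>) \<le> \<bar>Re (rep a \<phi>)\<bar> + \<bar>Re (rep b \<phi>)\<bar>" unfolding mkc_def by (rule cmod_ri)
    then show "cmod (mkc a b \<phi>) \<le> cmod (rep a \<phi>) + cmod (rep b \<phi>)"
      using abs_Re_le_cmod[of "rep a \<phi>"] abs_Re_le_cmod[of "rep b \<phi>"] by linarith
  qed
qed

lemma mk_re_im: assumes z: "z \<in> AsymC U" shows "cls (mkc (asym_re U z) (asym_im U z)) = z"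
proof -
  have "cls (mkc (asym_re U z) (asym_im U z)) = cls (rep z)"
  proof (rule cls_eqI)
    show "(\<lambda>\<phi>. mkc (asym_re U z) (asym_im U z) \<phi> - rep z \<phi>) \<in> Ne"
    proof (rule neg_bound2[OF re_in(2)[OF z] im_in(2)[OF z]])
      show "AEU (\<lambda>\<phi>. cmod (mkc (asym_re U z) (asym_im U z) \<phi> - rep z \<phi>)
          \<le> cmod (complex_of_real (Re (rep (asym_re U z) \<phi>) - Re (rep z \<phi>)))
           + cmod (complex_of_real (Re (rep (asym_im U z) \<phi>) - Im (rep z \<phi>))))"
      proof (rule aeI)
        fix \<phi>
        have e: "mkc (asym_re U z) (asym_im U z) \<phi> - rep z \<phi> =
          complex_of_real (Re (rep (asym_re U z) \<phi>) - Re (rep z \<phi>)) + \<i> * complex_of_real (Re (rep (asym_im U z) \<phi>) - Im (rep z \<phi>))"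
          unfolding mkc_def by (simp add: complex_eq_iff)
        show "cmod (mkc (asym_re U z) (asym_im U z) \<phi> - rep z \<phi>)
          \<le> cmod (complex_of_real (Re (rep (asym_re U z) \<phi>) - Re (rep z \<phi>)))
           + cmod (complex_of_real (Re (rep (asym_im U z) \<phi>) - Im (rep z \<phi>)))"
          unfolding e norm_of_real by (rule cmod_ri)
      qed
    qed
  qed
  then show ?thesis using AsymC_rep[OF z] by simp
qed

definition lo_of :: "'a net set \<Rightarrow> nat \<Rightarrow> 'a net set" where
  "lo_of a k = cls (\<lambda>\<phi>. complex_of_real (Re (rep a \<phi>) - R \<phi> ^ k))"

definition hi_of :: "'a net set \<Rightarrow> nat \<Rightarrow> 'a net set" where
  "hi_of a k = cls (\<lambda>\<phi>. complex_of_real (Re (rep a \<phi>) + R \<phi> ^ k))"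

lemma mod_shift: assumes "a \<in> AsymR U" and that: "\<bar>s\<bar> \<le> 1"
  shows "(\<lambda>\<phi>. complex_of_real (Re (rep a \<phi>) + s * R \<phi> ^ k)) \<in> Mo"
proof (rule mod_bound2[OF AsymR_rep(1)[OF assms(1)] mod_const[of 1]])
  show "AEU (\<lambda>\<phi>. cmod (complex_of_real (Re (rep a \<phi>) + s * R \<phi> ^ k)) \<le> cmod (rep a \<phi>) + cmod (1::complex))"
  proof (rule ae_mono[OF ae_R2'])
    fix \<phi> assume c: "0 < R \<phi> \<and> R \<phi> \<le> 1"
    have "R \<phi> ^ k \<le> 1" using c by (simp add: power_le_one)
    moreover have "\<bar>s * R \<phi> ^ k\<bar> \<le> \<bar>s\<bar> * R \<phi> ^ k" using c by (simp add: abs_mult)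
    moreover have "\<bar>s\<bar> * R \<phi> ^ k \<le> 1 * 1" using that \<open>R \<phi> ^ k \<le> 1\<close> c by (intro mult_mono) auto
    moreover have "cmod (complex_of_real (Re (rep a \<phi>) + s * R \<phi> ^ k)) = \<bar>Re (rep a \<phi>) + s * R \<phi> ^ k\<bar>"
      by (rule norm_of_real)
    moreover have "\<bar>Re (rep a \<phi>) + s * R \<phi> ^ k\<bar> \<le> \<bar>Re (rep a \<phi>)\<bar> + \<bar>s * R \<phi> ^ k\<bar>" by (rule abs_triangle_ineq)
    moreover have "cmod (1::complex) = 1" by simp
    ultimately show "cmod (complex_of_real (Re (rep a \<phi>) + s * R \<phi> ^ k)) \<le> cmod (rep a \<phi>) + cmod (1::complex)"
      using abs_Re_le_cmod[of "rep a \<phi>"] by linarith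
  qed
qed

lemma lo_mod: "a \<in> AsymR U \<Longrightarrow> (\<lambda>\<phi>. complex_of_real (Re (rep a \<phi>) - R \<phi> ^ k)) \<in> Mo"
  using mod_shift[of a "-1" k] by simp

lemma hi_mod: "a \<in> AsymR U \<Longrightarrow> (\<lambda>\<phi>. complex_of_real (Re (rep a \<phi>) + R \<phi> ^ k)) \<in> Mo"
  using mod_shift[of a 1 k] by simp

lemma lo_in: assumes "a \<in> AsymR U" shows "lo_of a k \<in> AsymR U"
  unfolding lo_of_def AsymR_def by (rule imageI, rule IntI, rule lo_mod[OF assms], simp add: realnet_def)

lemma hi_in: assumes "a \<in> AsymR U" shows "hi_of a k \<in> AsymR U"
  unfolding hi_of_def AsymR_def by (rule imageI, rule IntI, rule hi_mod[OF assms], simp add: realnet_def)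

lemma lo_rep: "a \<in> AsymR U \<Longrightarrow> AEU (\<lambda>\<phi>. \<bar>Re (rep (lo_of a k) \<phi>) - (Re (rep a \<phi>) - R \<phi> ^ k)\<bar> < R \<phi> ^ j)"
proof -
  assume a: "a \<in> AsymR U"
  have "AEU (\<lambda>\<phi>. cmod (rep (lo_of a k) \<phi> - complex_of_real (Re (rep a \<phi>) - R \<phi> ^ k)) < R \<phi> ^ j)"
    using rep_neg'[OF lo_mod[OF a, of k]] unfolding neg_iff lo_of_def by blast
  then show ?thesis by (rule ae_mono) (use re_close2 in \<open>smt (verit)\<close>)
qed

lemma hi_rep: "a \<in> AsymR U \<Longrightarrow> AEU (\<lambda>\<phi>. \<bar>Re (rep (hi_of a k) \<phi>) - (Re (rep a \<phi>) + R \<phi> ^ k)\<bar> < R \<phi> ^ j)"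
proof -
  assume a: "a \<in> AsymR U"
  have "AEU (\<lambda>\<phi>. cmod (rep (hi_of a k) \<phi> - complex_of_real (Re (rep a \<phi>) + R \<phi> ^ k)) < R \<phi> ^ j)"
    using rep_neg'[OF hi_mod[OF a, of k]] unfolding neg_iff hi_of_def by blast
  then show ?thesis by (rule ae_mono) (use re_close2 in \<open>smt (verit)\<close>)
qed

definition Ivl :: "'a net set \<Rightarrow> nat \<Rightarrow> 'a net set set" where
  "Ivl a k = {x \<in> AsymR U. asym_less U (lo_of a k) x} \<inter> {x \<in> AsymR U. asym_less U x (hi_of a k)}"

lemma Ivl_open: "a \<in> AsymR U \<Longrightarrow> openin (ord_top_R U) (Ivl a k)"
  unfolding ord_top_R_eq openin_topology_generated_by_iff Ivl_def
  by (intro generate_topology_on.Int generate_topology_on.Basis)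
     (auto simp: Sub_def intro: lo_in hi_in)

lemma Ivl_mem: assumes a: "a \<in> AsymR U" shows "a \<in> Ivl a k"
proof -
  have pk: "ppos (\<lambda>\<phi>. R \<phi> ^ k)"
  proof -
    have "AEU (\<lambda>\<phi>. R \<phi> ^ Suc k < R \<phi> ^ k)"
    proof (rule ae_mono[OF ae_R2])
      fix \<phi> assume c: "0 < R \<phi> \<and> R \<phi> \<le> 1 / 2"
      then have "R \<phi> ^ Suc k \<le> R \<phi> ^ k / 2" using pw_half by blast
      moreover have "0 < R \<phi> ^ k" using c by simp
      ultimately show "R \<phi> ^ Suc k < R \<phi> ^ k" by linarith
    qed
    then show ?thesis unfolding ppos_def by blast
  qed
  have l: "ppos (\<lambda>\<phi>. Re (rep a \<phi>) - Re (rep (lo_of a k) \<phi>))"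
  proof (rule ppos_neg[OF pk rep_neg'[OF lo_mod[OF a, of k]]])
    show "AEU (\<lambda>\<phi>. \<bar>Re (rep a \<phi>) - Re (rep (lo_of a k) \<phi>) - R \<phi> ^ k\<bar>
        \<le> cmod (rep (cls (\<lambda>\<phi>. complex_of_real (Re (rep a \<phi>) - R \<phi> ^ k))) \<phi> - complex_of_real (Re (rep a \<phi>) - R \<phi> ^ k)))"
    proof (rule aeI)
      fix \<phi>
      let ?w = "rep (cls (\<lambda>\<phi>. complex_of_real (Re (rep a \<phi>) - R \<phi> ^ k))) \<phi>" and ?t = "Re (rep a \<phi>) - R \<phi> ^ k"
      have "\<bar>Re (rep a \<phi>) - Re ?w - R \<phi> ^ k\<bar> = \<bar>?t - Re ?w\<bar>" by argo
      also have "\<dots> \<le> cmod (?w - complex_of_real ?t)" by (rule re_close)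
      finally show "\<bar>Re (rep a \<phi>) - Re (rep (lo_of a k) \<phi>) - R \<phi> ^ k\<bar> \<le> cmod (?w - complex_of_real ?t)"
        unfolding lo_of_def .
    qed
  qed
  have h: "ppos (\<lambda>\<phi>. Re (rep (hi_of a k) \<phi>) - Re (rep a \<phi>))"
  proof (rule ppos_neg[OF pk rep_neg'[OF hi_mod[OF a, of k]]])
    show "AEU (\<lambda>\<phi>. \<bar>Re (rep (hi_of a k) \<phi>) - Re (rep a \<phi>) - R \<phi> ^ k\<bar>
        \<le> cmod (rep (cls (\<lambda>\<phi>. complex_of_real (Re (rep a \<phi>) + R \<phi> ^ k))) \<phi> - complex_of_real (Re (rep a \<phi>) + R \<phi> ^ k)))"
    proof (rule aeI)
      fix \<phi>
      let ?w = "rep (cls (\<lambda>\<phi>. complex_of_real (Re (rep a \<phi>) + R \<phi> ^ k))) \<phi>" and ?t = "Re (rep a \<phi>) + R \<phi> ^ k"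
      have "\<bar>Re ?w - Re (rep a \<phi>) - R \<phi> ^ k\<bar> = \<bar>Re ?w - ?t\<bar>" by argo
      also have "\<dots> \<le> cmod (?w - complex_of_real ?t)" by (rule re_close2)
      finally show "\<bar>Re (rep (hi_of a k) \<phi>) - Re (rep a \<phi>) - R \<phi> ^ k\<bar> \<le> cmod (?w - complex_of_real ?t)"
        unfolding hi_of_def .
    qed
  qed
  show ?thesis unfolding Ivl_def using R_less[OF lo_in[OF a] a] R_less[OF a hi_in[OF a]] l h a by blast
qed

lemma Ivl_close: assumes a: "a \<in> AsymR U" and x: "x \<in> Ivl a k"
  shows "AEU (\<lambda>\<phi>. \<bar>Re (rep x \<phi>) - Re (rep a \<phi>)\<bar> < 2 * R \<phi> ^ k)"
proof -
  have xR: "x \<in> AsymR U" using x unfolding Ivl_def by blast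
  have l: "ppos (\<lambda>\<phi>. Re (rep x \<phi>) - Re (rep (lo_of a k) \<phi>))"
    using x R_less[OF lo_in[OF a] xR] unfolding Ivl_def by blast
  have h: "ppos (\<lambda>\<phi>. Re (rep (hi_of a k) \<phi>) - Re (rep x \<phi>))"
    using x R_less[OF xR hi_in[OF a]] unfolding Ivl_def by blast
  show ?thesis
  proof (rule ae_mp4[OF ppos_pos[OF l] ppos_pos[OF h] lo_rep[OF a, of k k] hi_rep[OF a, of k k]])
    fix \<phi> assume "0 < Re (rep x \<phi>) - Re (rep (lo_of a k) \<phi>)" "0 < Re (rep (hi_of a k) \<phi>) - Re (rep x \<phi>)"
      "\<bar>Re (rep (lo_of a k) \<phi>) - (Re (rep a \<phi>) - R \<phi> ^ k)\<bar> < R \<phi> ^ k"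
      "\<bar>Re (rep (hi_of a k) \<phi>) - (Re (rep a \<phi>) + R \<phi> ^ k)\<bar> < R \<phi> ^ k"
    then show "\<bar>Re (rep x \<phi>) - Re (rep a \<phi>)\<bar> < 2 * R \<phi> ^ k" unfolding abs_less_iff by linarith
  qed
qed

lemma nopen_to_ord: assumes S: "nopen S" shows "openin (ord_top_C U) S"
  unfolding ord_top_C_def openin_pullback_topology
proof (intro exI conjI)
  let ?V = "{(a, b). a \<in> AsymR U \<and> b \<in> AsymR U \<and> cls (mkc a b) \<in> S}"
  have SC: "S \<subseteq> AsymC U" using S unfolding nopen_def by blast
  show "S = (\<lambda>z. (asym_re U z, asym_im U z)) -` ?V \<inter> AsymC U"
  proof (intro Set.set_eqI iffI)
    fix z assume z: "z \<in> S"
    then have zC: "z \<in> AsymC U" using SC by blast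
    then show "z \<in> (\<lambda>z. (asym_re U z, asym_im U z)) -` ?V \<inter> AsymC U"
      using z re_in(1)[OF zC] im_in(1)[OF zC] mk_re_im[OF zC] by simp
  next
    fix z assume "z \<in> (\<lambda>z. (asym_re U z, asym_im U z)) -` ?V \<inter> AsymC U"
    then have zC: "z \<in> AsymC U" and "cls (mkc (asym_re U z) (asym_im U z)) \<in> S" by auto
    then show "z \<in> S" using mk_re_im[OF zC] by simp
  qed
  show "openin (prod_topology (ord_top_R U) (ord_top_R U)) ?V"
    unfolding openin_prod_topology_alt
  proof (intro allI impI)
    fix a b assume ab: "(a, b) \<in> ?V"
    then have aR: "a \<in> AsymR U" and bR: "b \<in> AsymR U" and zS: "cls (mkc a b) \<in> S" by auto
    let ?z = "cls (mkc a b)"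
    obtain n where n: "box ?z n \<subseteq> S" using S zS unfolding nopen_def by blast
    let ?k = "n + 3"
    have sub: "Ivl a ?k \<times> Ivl b ?k \<subseteq> ?V"
    proof (intro subsetI, elim SigmaE)
      fix p a' b' assume p: "p = (a', b')" and a': "a' \<in> Ivl a ?k" and b': "b' \<in> Ivl b ?k"
      have a'R: "a' \<in> AsymR U" and b'R: "b' \<in> AsymR U" using a' b' unfolding Ivl_def by auto
      have m': "mkc a' b' \<in> Mo" by (rule mkc_mod[OF a'R b'R])
      have m: "mkc a b \<in> Mo" by (rule mkc_mod[OF aR bR])
      have n1: "AEU (\<lambda>\<phi>. cmod (rep (cls (mkc a' b')) \<phi> - mkc a' b' \<phi>) < R \<phi> ^ ?k)"
        using rep_neg'[OF m'] unfolding neg_iff by blast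
      have n2: "AEU (\<lambda>\<phi>. cmod (rep (cls (mkc a b)) \<phi> - mkc a b \<phi>) < R \<phi> ^ ?k)"
        using rep_neg'[OF m] unfolding neg_iff by blast
      have ca: "AEU (\<lambda>\<phi>. \<bar>Re (rep a' \<phi>) - Re (rep a \<phi>)\<bar> < 2 * R \<phi> ^ ?k)" by (rule Ivl_close[OF aR a'])
      have cb: "AEU (\<lambda>\<phi>. \<bar>Re (rep b' \<phi>) - Re (rep b \<phi>)\<bar> < 2 * R \<phi> ^ ?k)" by (rule Ivl_close[OF bR b'])
      have "AEU (\<lambda>\<phi>. cmod (rep (cls (mkc a' b')) \<phi> - rep (cls (mkc a b)) \<phi>) < R \<phi> ^ n)"
      proof (rule ae_mp4[OF n1 n2 ca ae_conj[OF cb ae_R2]])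
        fix \<phi> assume c: "cmod (rep (cls (mkc a' b')) \<phi> - mkc a' b' \<phi>) < R \<phi> ^ ?k"
          "cmod (rep (cls (mkc a b)) \<phi> - mkc a b \<phi>) < R \<phi> ^ ?k"
          "\<bar>Re (rep a' \<phi>) - Re (rep a \<phi>)\<bar> < 2 * R \<phi> ^ ?k"
          "\<bar>Re (rep b' \<phi>) - Re (rep b \<phi>)\<bar> < 2 * R \<phi> ^ ?k \<and> 0 < R \<phi> \<and> R \<phi> \<le> 1 / 2"
        have e: "mkc a' b' \<phi> - mkc a b \<phi> = complex_of_real (Re (rep a' \<phi>) - Re (rep a \<phi>)) + \<i> * complex_of_real (Re (rep b' \<phi>) - Re (rep b \<phi>))"
          unfolding mkc_def by (simp add: complex_eq_iff)
        have d: "cmod (mkc a' b' \<phi> - mkc a b \<phi>) \<le> \<bar>Re (rep a' \<phi>) - Re (rep a \<phi>)\<bar> + \<bar>Re (rep b' \<phi>) - Re (rep b \<phi>)\<bar>"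
          unfolding e by (rule cmod_ri)
        have tri: "cmod (rep (cls (mkc a' b')) \<phi> - rep (cls (mkc a b)) \<phi>) \<le>
            cmod (rep (cls (mkc a' b')) \<phi> - mkc a' b' \<phi>) + cmod (mkc a' b' \<phi> - mkc a b \<phi>) + cmod (rep (cls (mkc a b)) \<phi> - mkc a b \<phi>)"
        proof -
          let ?X = "rep (cls (mkc a' b')) \<phi>" and ?M' = "mkc a' b' \<phi>" and ?Y = "rep (cls (mkc a b)) \<phi>" and ?M = "mkc a b \<phi>"
          have eq: "?X - ?Y = ((?X - ?M') + (?M' - ?M)) + (- (?Y - ?M))" by simp
          have "cmod (?X - ?Y) \<le> cmod ((?X - ?M') + (?M' - ?M)) + cmod (- (?Y - ?M))"
            unfolding eq by (rule norm_triangle_ineq)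
          also have "\<dots> \<le> cmod (?X - ?M') + cmod (?M' - ?M) + cmod (?Y - ?M)"
            using norm_triangle_ineq[of "?X - ?M'" "?M' - ?M"] norm_minus_cancel[of "?Y - ?M"] by linarith
          finally show ?thesis .
        qed
        have r3: "R \<phi> ^ ?k = R \<phi> ^ n * R \<phi> ^ 3" by (simp add: power_add)
        have "R \<phi> ^ 3 \<le> (1/2) ^ 3" using c(4) by (intro power_mono) auto
        moreover have "(1/2::real) ^ 3 = 1/8" by (simp add: power3_eq_cube)
        ultimately have "6 * R \<phi> ^ 3 < 1" by linarith
        moreover have "0 < R \<phi> ^ n" using c(4) by simp
        ultimately have "6 * R \<phi> ^ ?k < R \<phi> ^ n" unfolding r3 by (simp add: mult.commute mult.left_commute)
        moreover have "\<bar>Re (rep b' \<phi>) - Re (rep b \<phi>)\<bar> < 2 * R \<phi> ^ ?k" using c(4) by blast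
        ultimately show "cmod (rep (cls (mkc a' b')) \<phi> - rep (cls (mkc a b)) \<phi>) < R \<phi> ^ n"
          using c(1,2,3) tri d by linarith
      qed
      moreover have "cls (mkc a' b') \<in> AsymC U" by (rule AsymC_I[OF m'])
      ultimately have "cls (mkc a' b') \<in> box ?z n" unfolding box_def by blast
      then have "cls (mkc a' b') \<in> S" using n by (rule rev_subsetD)
      then show "p \<in> ?V" unfolding p using a'R b'R by simp
    qed
    show "\<exists>U1 U2. openin (ord_top_R U) U1 \<and> openin (ord_top_R U) U2 \<and> a \<in> U1 \<and> b \<in> U2 \<and> U1 \<times> U2 \<subseteq> ?V"
      by (intro exI[of _ "Ivl a ?k"] exI[of _ "Ivl b ?k"] conjI Ivl_open Ivl_mem aR bR sub)
  qed
qed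

lemma ord_open: "openin (ord_top_C U) S \<longleftrightarrow> nopen S"
  using ord_to_nopen nopen_to_ord by blast

end

context setting begin

lemma norm_eq: "A \<in> Mo \<Longrightarrow> rob_norm U (Phi U (cls A)) = asym_norm U (cls A)"
  unfolding rob_norm_def asym_norm_def by (simp add: val_eq)

lemma dist_eq: assumes "A \<in> Mo" "B \<in> Mo"
  shows "rob_dist U (Phi U (cls A)) (Phi U (cls B)) = asym_dist U (cls A) (cls B)"
proof -
  have "rob_minus U (Phi U (cls A)) (Phi U (cls B)) = sc ` cls (\<lambda>\<phi>. A \<phi> - B \<phi>)"
    unfolding rob_minus_def Phi_cls[OF assms(1)] Phi_cls[OF assms(2)]
    by (rule rob_op[where F = "asym_minus U", OF assms minus_cls])
  also have "\<dots> = Phi U (cls (\<lambda>\<phi>. A \<phi> - B \<phi>))" using Phi_cls[OF mod_diff[OF assms]] by simp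
  finally have e: "rob_minus U (Phi U (cls A)) (Phi U (cls B)) = Phi U (cls (\<lambda>\<phi>. A \<phi> - B \<phi>))" .
  show ?thesis unfolding rob_dist_def asym_dist_def e minus_cls[OF assms] norm_eq[OF mod_diff[OF assms]] ..
qed

lemma top_eq: "ord_top_C U = metric_top_C U"
  unfolding topology_eq ord_open metric_open by simp

end

theorem theorem7p4:
  fixes U :: "('a::euclidean_space \<Rightarrow> complex) set set"
  assumes free: "free_ultrafilter_on test_fns U"
    and Dn_in: "\<And>n::nat. n \<ge> 1 \<Longrightarrow> Dn n \<in> U"
    and good: "cplus_good U"
  shows
    "(\<forall>A::'a net. A \<in> moderate U \<longleftrightarrow> star_cls U A \<in> M_rho U)
     \<and> ((\<forall>A\<in>moderate U. \<forall>B\<in>moderate U.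
            asym_cls U A = asym_cls U B \<longrightarrow> rob_cls U (star_cls U A) = rob_cls U (star_cls U B))
        \<and> field (asym_ring U) \<and> field (rob_ring U)
        \<and> Phi U \<in> ring_iso (asym_ring U) (rob_ring U)
        \<and> bij_betw (Phi U) (AsymR U) (RobR U)
        \<and> (\<forall>X\<in>AsymC U. rob_val U (Phi U X) = asym_val U X)
        \<and> (\<forall>X\<in>AsymC U. rob_norm U (Phi U X) = asym_norm U X)
        \<and> (\<forall>X\<in>AsymC U. \<forall>Y\<in>AsymC U. rob_dist U (Phi U X) (Phi U Y) = asym_dist U X Y))
     \<and> ord_top_C U = metric_top_C U"
proof -
  have uf: "ultrafilter_on test_fns U" using free by (simp add: free_ultrafilter_on_def)
  interpret S: setting U by (rule setting.intro[OF uf Dn_in])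
  have p1: "\<forall>A::'a net. A \<in> moderate U \<longleftrightarrow> star_cls U A \<in> M_rho U" using S.M_rho_iff by blast
  have p2: "\<forall>A\<in>moderate U. \<forall>B\<in>moderate U.
            asym_cls U A = asym_cls U B \<longrightarrow> rob_cls U (star_cls U A) = rob_cls U (star_cls U B)"
    using S.rob_star by simp
  have p3: "bij_betw (Phi U) (AsymR U) (RobR U)"
    unfolding bij_betw_def S.RobR_eq using inj_on_subset[OF S.inj_Phi S.AsymR_sub] by blast
  have p4: "\<forall>X\<in>AsymC U. rob_val U (Phi U X) = asym_val U X"
    by (auto elim!: S.AsymC_E simp: S.val_eq)
  have p5: "\<forall>X\<in>AsymC U. rob_norm U (Phi U X) = asym_norm U X"
    by (auto elim!: S.AsymC_E simp: S.norm_eq)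
  have p6: "\<forall>X\<in>AsymC U. \<forall>Y\<in>AsymC U. rob_dist U (Phi U X) (Phi U Y) = asym_dist U X Y"
    by (auto elim!: S.AsymC_E simp: S.dist_eq)
  show ?thesis using p1 p2 p3 p4 p5 p6 S.field_asym S.field_rob S.Phi_iso S.top_eq by blast
qed

end
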